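(* Let $K$ be a closed subset of $G$. Then for any $f\in\mathcal{L}(\mathcal{X}_K)$, any $x_{P(K)}\in\mathcal{X}_{P(K)}$ and any $g\in\mathcal{L}(\mathcal{X}_{N'(K)})$ with $g\geq 0$, writing $a:=\underline{E}^{\mathrm{irr}}_{K\mid x_{P(K)}}(f(X_K))$ and $\phi:=g(X_{N'(K)})\mathbb{I}_{x_{P(K)}}(X_{P(K)})$: $$\underline{E}^{\mathrm{irr}}_G\big(\phi\, f(X_K)\big)=\begin{cases} a\,\underline{E}^{\mathrm{irr}}_{N(K)}(\phi) & \text{if } a\geq 0,\\ a\,\overline{E}^{\mathrm{irr}}_{N(K)}(\phi) & \text{if } a\leq 0.\end{cases}$$
   Context: Setting: $G$ is a finite set of nodes forming a DAG; node $s$ carries a variable $X_s$ with finite nonempty state space $\mathcal{X}_s$; $\mathcal{X}_S=\times_{s\in S}\mathcal{X}_s$; $\mathcal{L}(\mathcal{X}_S)$: real-valued functions on $\mathcal{X}_S$; $\mathbb{I}_{x_{P(K)}}$: indicator of $\{x_{P(K)}\}$. $P(s)$: parents; $s\sqsubseteq v$: directed path (possibly trivial) from $s$ to $v$; $s\sqsubset v$: additionally $s\neq v$; $D(s)=\{v:s\sqsubset v\}$; $N(s)=G\setminus(\{s\}\cup D(s))$. For $K\subseteq G$: $P(K)=(\bigcup_{s\in K}P(s))\setminus K$, $D(K)=(\bigcup_{s\in K}D(s))\setminus K$, $N(K)=G\setminus(K\cup D(K))$, $N'(K)=N(K)\setminus P(K)$; $K$ closed if $s\sqsubseteq k\sqsubseteq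 t$, $s,t\in K$ implies $k\in K$. Local models: nonempty closed convex sets $\mathcal{M}_{s\mid x_{P(s)}}$ of probability mass functions on $\mathcal{X}_s$. Full conditional probability measure: $(A,B)\mapsto P(A\mid B)$ ($B\ne\emptyset$) with (F1) $P(\cdot\mid B)$ a probability measure, $P(B\mid B)=1$; (F2) $P(A\cap C\mid B)=P(A\mid C\cap B)P(C\mid B)$ if $C\cap B\ne\emptyset$. Irrelevant natural extension $\mathcal{F}^{\mathrm{irr}}_G$: all full conditional probability measures $P$ on $\mathcal{X}_G$ with $P(X_s\mid x_{N(s)})\in\mathcal{M}_{s\mid x_{P(s)}}$ for all $s,x_{N(s)}$. $\underline{E}^{\mathrm{irr}}_G(f)=\inf\{\sum_{z_G}f(z_G)P(z_G):P\in\mathcal{F}^{\mathrm{irr}}_G\}$, $\overline{E}(f)=-\underline{E}(-f)$. Sub-network: for $K\subseteq G$ and fixed $x_{P(K)}$, the credal network on the DAG restricted to $K$ with local credal sets $\mathcal{M}_{s\mid(z_{P(s)\cap K},x_{P(s)\setminus K})}$; lower expectation of its irrelevant natural extension: $\underline{E}^{\mathrm{irr}}_{K\mid x_{P(K)}}$ (written $\underline{E}^{\mathrm{irr}}_K$ if $P(K)=\emptyset$, e.g. $\underline{E}^{\mathrm{irr}}_{N(K)}$). *)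

theory Defs
  imports "HOL-Analysis.Analysis"
begin

(* A network is given by a node set S, a parent function pa (pa s = parents of s),
   state spaces X s, and local models M s xp (a set of pmfs on X s, for
   each assignment xp of the parents).
   An assignment to a node set S (an element of X_S) is an extensional function
   in PiE S X (values undefined outside S). *)

definition edges :: "'n set \<Rightarrow> ('n \<Rightarrow> 'n set) \<Rightarrow> ('n \<times> 'n) set" where
  "edges S pa = {(t, s). s \<in> S \<and> t \<in> pa s}"

definition path_le :: "'n set \<Rightarrow> ('n \<Rightarrow> 'n set) \<Rightarrow> 'n \<Rightarrow> 'n \<Rightarrow> bool" where
  "path_le S pa s v \<longleftrightarrow> (s, v) \<in> (edges S pa)\<^sup>*"

definition is_dag :: "'n set \<Rightarrow> ('n \<Rightarrow> 'n set) \<Rightarrow> bool" where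
  "is_dag S pa \<longleftrightarrow> finite S \<and> (\<forall>s\<in>S. pa s \<subseteq> S) \<and> acyclic (edges S pa)"

definition desc :: "'n set \<Rightarrow> ('n \<Rightarrow> 'n set) \<Rightarrow> 'n \<Rightarrow> 'n set" where
  "desc S pa s = {v \<in> S. path_le S pa s v \<and> s \<noteq> v}"

definition nondesc :: "'n set \<Rightarrow> ('n \<Rightarrow> 'n set) \<Rightarrow> 'n \<Rightarrow> 'n set" where
  "nondesc S pa s = S - ({s} \<union> desc S pa s)"

definition parK :: "'n set \<Rightarrow> ('n \<Rightarrow> 'n set) \<Rightarrow> 'n set \<Rightarrow> 'n set" where
  "parK S pa K = (\<Union>s\<in>K. pa s) - K"

definition descK :: "'n set \<Rightarrow> ('n \<Rightarrow> 'n set) \<Rightarrow> 'n set \<Rightarrow> 'n set" where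
  "descK S pa K = (\<Union>s\<in>K. desc S pa s) - K"

definition nondescK :: "'n set \<Rightarrow> ('n \<Rightarrow> 'n set) \<Rightarrow> 'n set \<Rightarrow> 'n set" where
  "nondescK S pa K = S - (K \<union> descK S pa K)"

definition nondescK' :: "'n set \<Rightarrow> ('n \<Rightarrow> 'n set) \<Rightarrow> 'n set \<Rightarrow> 'n set" where
  "nondescK' S pa K = nondescK S pa K - parK S pa K"

definition closed_set :: "'n set \<Rightarrow> ('n \<Rightarrow> 'n set) \<Rightarrow> 'n set \<Rightarrow> bool" where
  "closed_set S pa K \<longleftrightarrow> K \<subseteq> S \<and>
     (\<forall>s\<in>K. \<forall>k\<in>S. \<forall>t\<in>K. path_le S pa s k \<and> path_le S pa k t \<longrightarrow> k \<in> K)"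

definition is_pmf_on :: "'v set \<Rightarrow> ('v \<Rightarrow> real) \<Rightarrow> bool" where
  "is_pmf_on A p \<longleftrightarrow> (\<forall>v\<in>A. p v \<ge> 0) \<and> (\<forall>v. v \<notin> A \<longrightarrow> p v = 0) \<and> (\<Sum>v\<in>A. p v) = 1"

definition convex_fun_set :: "('v \<Rightarrow> real) set \<Rightarrow> bool" where
  "convex_fun_set C \<longleftrightarrow>
     (\<forall>p\<in>C. \<forall>q\<in>C. \<forall>t::real. 0 \<le> t \<and> t \<le> 1 \<longrightarrow> (\<lambda>v. t * p v + (1 - t) * q v) \<in> C)"

definition credal_network ::
  "'n set \<Rightarrow> ('n \<Rightarrow> 'n set) \<Rightarrow> ('n \<Rightarrow> 'v set) \<Rightarrow> ('n \<Rightarrow> ('n \<Rightarrow> 'v) \<Rightarrow> ('v \<Rightarrow> real) set) \<Rightarrow> bool" where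
  "credal_network S pa X M \<longleftrightarrow> is_dag S pa \<and>
     (\<forall>s\<in>S. finite (X s) \<and> X s \<noteq> {}) \<and>
     (\<forall>s\<in>S. \<forall>xp\<in>PiE (pa s) X. M s xp \<noteq> {} \<and> closed (M s xp) \<and> convex_fun_set (M s xp) \<and>
        (\<forall>p\<in>M s xp. is_pmf_on (X s) p))"

definition full_cond_prob :: "'a set \<Rightarrow> ('a set \<Rightarrow> 'a set \<Rightarrow> real) \<Rightarrow> bool" where
  "full_cond_prob Om P \<longleftrightarrow>
     (\<forall>B. B \<subseteq> Om \<and> B \<noteq> {} \<longrightarrow>
        (\<forall>A. A \<subseteq> Om \<longrightarrow> P A B \<ge> 0) \<and> P Om B = 1 \<and>
        (\<forall>A C. A \<subseteq> Om \<and> C \<subseteq> Om \<and> A \<inter> C = {} \<longrightarrow> P (A \<union> C) B = P A B + P C B) \<and>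
        P B B = 1) \<and>
     (\<forall>A B C. A \<subseteq> Om \<and> B \<subseteq> Om \<and> C \<subseteq> Om \<and> B \<noteq> {} \<and> C \<inter> B \<noteq> {} \<longrightarrow>
        P (A \<inter> C) B = P A (C \<inter> B) * P C B)"

definition irr_ext ::
  "'n set \<Rightarrow> ('n \<Rightarrow> 'n set) \<Rightarrow> ('n \<Rightarrow> 'v set) \<Rightarrow> ('n \<Rightarrow> ('n \<Rightarrow> 'v) \<Rightarrow> ('v \<Rightarrow> real) set)
     \<Rightarrow> (('n \<Rightarrow> 'v) set \<Rightarrow> ('n \<Rightarrow> 'v) set \<Rightarrow> real) set" where
  "irr_ext S pa X M = {P. full_cond_prob (PiE S X) P \<and>
     (\<forall>s\<in>S. \<forall>xN\<in>PiE (nondesc S pa s) X.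
        (\<lambda>v. if v \<in> X s then
               P {z\<in>PiE S X. z s = v} {z\<in>PiE S X. restrict z (nondesc S pa s) = xN}
             else 0) \<in> M s (restrict xN (pa s)))}"

definition lowE_irr ::
  "'n set \<Rightarrow> ('n \<Rightarrow> 'n set) \<Rightarrow> ('n \<Rightarrow> 'v set) \<Rightarrow> ('n \<Rightarrow> ('n \<Rightarrow> 'v) \<Rightarrow> ('v \<Rightarrow> real) set)
     \<Rightarrow> (('n \<Rightarrow> 'v) \<Rightarrow> real) \<Rightarrow> real" where
  "lowE_irr S pa X M f = Inf {(\<Sum>z\<in>PiE S X. f z * P {z} (PiE S X)) | P. P \<in> irr_ext S pa X M}"

definition upE_irr ::
  "'n set \<Rightarrow> ('n \<Rightarrow> 'n set) \<Rightarrow> ('n \<Rightarrow> 'v set) \<Rightarrow> ('n \<Rightarrow> ('n \<Rightarrow> 'v) \<Rightarrow> ('v \<Rightarrow> real) set)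
     \<Rightarrow> (('n \<Rightarrow> 'v) \<Rightarrow> real) \<Rightarrow> real" where
  "upE_irr S pa X M f = - lowE_irr S pa X M (\<lambda>z. - f z)"

(* sub-network on K with parents outside K fixed to xP:
   DAG restricted to K, local credal sets M_{s | (z_{P(s) \<inter> K}, x_{P(s) \<setminus> K})} *)
definition sub_pa :: "('n \<Rightarrow> 'n set) \<Rightarrow> 'n set \<Rightarrow> 'n \<Rightarrow> 'n set" where
  "sub_pa pa K = (\<lambda>s. pa s \<inter> K)"

definition sub_M ::
  "('n \<Rightarrow> 'n set) \<Rightarrow> ('n \<Rightarrow> ('n \<Rightarrow> 'v) \<Rightarrow> ('v \<Rightarrow> real) set) \<Rightarrow> 'n set \<Rightarrow> ('n \<Rightarrow> 'v)
     \<Rightarrow> 'n \<Rightarrow> ('n \<Rightarrow> 'v) \<Rightarrow> ('v \<Rightarrow> real) set" where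
  "sub_M pa M K xP = (\<lambda>s z. M s (restrict (\<lambda>t. if t \<in> K then z t else xP t) (pa s)))"

definition lowE_sub ::
  "'n set \<Rightarrow> ('n \<Rightarrow> 'n set) \<Rightarrow> ('n \<Rightarrow> 'v set) \<Rightarrow> ('n \<Rightarrow> ('n \<Rightarrow> 'v) \<Rightarrow> ('v \<Rightarrow> real) set)
     \<Rightarrow> ('n \<Rightarrow> 'v) \<Rightarrow> (('n \<Rightarrow> 'v) \<Rightarrow> real) \<Rightarrow> real" where
  "lowE_sub K pa X M xP f = lowE_irr K (sub_pa pa K) X (sub_M pa M K xP) f"

(* \<underline>E^irr_K for a node set K with P(K) = {} (e.g. K = N(K')): the
   local credal sets are just M_{s | z_{P(s)}} *)
definition lowE_sub0 ::
  "'n set \<Rightarrow> ('n \<Rightarrow> 'n set) \<Rightarrow> ('n \<Rightarrow> 'v set) \<Rightarrow> ('n \<Rightarrow> ('n \<Rightarrow> 'v) \<Rightarrow> ('v \<Rightarrow> real) set)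
     \<Rightarrow> (('n \<Rightarrow> 'v) \<Rightarrow> real) \<Rightarrow> real" where
  "lowE_sub0 K pa X M f = lowE_irr K (sub_pa pa K) X (\<lambda>s z. M s (restrict z (pa s))) f"

definition upE_sub0 ::
  "'n set \<Rightarrow> ('n \<Rightarrow> 'n set) \<Rightarrow> ('n \<Rightarrow> 'v set) \<Rightarrow> ('n \<Rightarrow> ('n \<Rightarrow> 'v) \<Rightarrow> ('v \<Rightarrow> real) set)
     \<Rightarrow> (('n \<Rightarrow> 'v) \<Rightarrow> real) \<Rightarrow> real" where
  "upE_sub0 K pa X M f = - lowE_sub0 K pa X M (\<lambda>z. - f z)"

end

theory Submission
  imports Defs
begin

definition fib :: "'n set \<Rightarrow> ('n \<Rightarrow> 'v set) \<Rightarrow> 'n set \<Rightarrow> ('n \<Rightarrow> 'v) \<Rightarrow> ('n \<Rightarrow> 'v) set" where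
  "fib S X W z = {y \<in> PiE S X. \<forall>t\<in>S - W. y t = z t}"

definition cyl :: "'n set \<Rightarrow> ('n \<Rightarrow> 'v set) \<Rightarrow> 'n set \<Rightarrow> ('n \<Rightarrow> 'v) \<Rightarrow> ('n \<Rightarrow> 'v) set" where
  "cyl S X C z = {y \<in> PiE S X. \<forall>t\<in>C. y t = z t}"

lemma fib_sub: "fib S X W z \<subseteq> PiE S X" unfolding fib_def by auto
lemma cyl_sub: "cyl S X C z \<subseteq> PiE S X" unfolding cyl_def by auto

lemma finite_PiE': "finite S \<Longrightarrow> \<forall>s\<in>S. finite (X s) \<Longrightarrow> finite (PiE S X)"
  by (rule finite_PiE) auto

lemma finite_fib: "finite S \<Longrightarrow> \<forall>s\<in>S. finite (X s) \<Longrightarrow> finite (fib S X W z)"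
  using finite_PiE' fib_sub finite_subset by metis

lemma finite_cyl: "finite S \<Longrightarrow> \<forall>s\<in>S. finite (X s) \<Longrightarrow> finite (cyl S X C z)"
  using finite_PiE' cyl_sub finite_subset by metis

lemma fib_self: "z \<in> PiE S X \<Longrightarrow> z \<in> fib S X W z"
  unfolding fib_def by auto

lemma fib_empty: "z \<in> PiE S X \<Longrightarrow> fib S X {} z = {z}"
  unfolding fib_def using PiE_ext[of _ S X z] by auto

lemma fib_split_set:
  assumes "W1 \<inter> W2 = {}" "z \<in> PiE S X"
  shows "fib S X (W1 \<union> W2) z = (\<Union>y1\<in>fib S X W1 z. fib S X W2 y1)"
proof
  show "fib S X (W1 \<union> W2) z \<subseteq> (\<Union>y1\<in>fib S X W1 z. fib S X W2 y1)"
  proof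
    fix y assume y: "y \<in> fib S X (W1 \<union> W2) z"
    define y1 where "y1 = (\<lambda>t. if t \<in> W1 then y t else z t)"
    have "y1 \<in> PiE S X" using y assms(2) unfolding y1_def fib_def
      by (auto simp: PiE_def Pi_def extensional_def)
    hence "y1 \<in> fib S X W1 z" unfolding fib_def y1_def by auto
    moreover have "y \<in> fib S X W2 y1" using y unfolding fib_def y1_def by auto
    ultimately show "y \<in> (\<Union>y1\<in>fib S X W1 z. fib S X W2 y1)" by auto
  qed
  show "(\<Union>y1\<in>fib S X W1 z. fib S X W2 y1) \<subseteq> fib S X (W1 \<union> W2) z"
    unfolding fib_def by auto
qed

lemma fib_split:
  assumes "finite S" "\<forall>s\<in>S. finite (X s)" "W1 \<inter> W2 = {}" "z \<in> PiE S X"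
  shows "sum F (fib S X (W1 \<union> W2) z) = (\<Sum>y1\<in>fib S X W1 z. sum F (fib S X W2 y1))"
proof -
  have "sum F (fib S X (W1 \<union> W2) z) = sum F (\<Union>y1\<in>fib S X W1 z. fib S X W2 y1)"
    using fib_split_set[OF assms(3,4)] by simp
  also have "\<dots> = (\<Sum>y1\<in>fib S X W1 z. sum F (fib S X W2 y1))"
  proof (rule sum.UNION_disjoint)
    show "finite (fib S X W1 z)" using finite_fib assms by metis
    show "\<forall>i\<in>fib S X W1 z. finite (fib S X W2 i)" using finite_fib assms by metis
    show "\<forall>i\<in>fib S X W1 z. \<forall>j\<in>fib S X W1 z. i \<noteq> j \<longrightarrow> fib S X W2 i \<inter> fib S X W2 j = {}"
    proof (intro ballI impI)
      fix i j assume i: "i \<in> fib S X W1 z" and j: "j \<in> fib S X W1 z" and ij: "i \<noteq> j"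
      then obtain t where t: "i t \<noteq> j t" by auto
      have tS: "t \<in> S"
      proof (rule ccontr)
        assume "t \<notin> S"
        hence "i t = undefined" "j t = undefined" using i j unfolding fib_def by (auto simp: PiE_def extensional_def)
        thus False using t by simp
      qed
      have tW1: "t \<in> W1"
      proof (rule ccontr)
        assume "t \<notin> W1"
        thus False using i j t tS unfolding fib_def by auto
      qed
      hence "t \<notin> W2" using assms(3) by auto
      thus "fib S X W2 i \<inter> fib S X W2 j = {}" using t tS unfolding fib_def by auto
    qed
  qed
  finally show ?thesis .
qed

lemma upd_PiE: "z \<in> PiE S X \<Longrightarrow> w \<in> S \<Longrightarrow> v \<in> X w \<Longrightarrow> z(w:=v) \<in> PiE S X"
  by (auto simp: PiE_def Pi_def extensional_def)

lemma fib_single: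
  assumes "w \<in> S" "z \<in> PiE S X"
  shows "fib S X {w} z = (\<lambda>v. z(w:=v)) ` X w" and "inj_on (\<lambda>v. z(w:=v)) (X w)"
proof -
  show "fib S X {w} z = (\<lambda>v. z(w:=v)) ` X w"
  proof
    show "fib S X {w} z \<subseteq> (\<lambda>v. z(w := v)) ` X w"
    proof
      fix y assume y: "y \<in> fib S X {w} z"
      have "y = z(w := y w)"
      proof
        fix t show "y t = (z(w := y w)) t"
          using y assms unfolding fib_def by (cases "t \<in> S") (auto simp: PiE_def extensional_def)
      qed
      moreover have "y w \<in> X w" using y assms(1) unfolding fib_def by auto
      ultimately show "y \<in> (\<lambda>v. z(w := v)) ` X w" by auto
    qed
    show "(\<lambda>v. z(w := v)) ` X w \<subseteq> fib S X {w} z"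
    proof
      fix y assume "y \<in> (\<lambda>v. z(w:=v)) ` X w"
      then obtain v where v: "v \<in> X w" "y = z(w:=v)" by auto
      thus "y \<in> fib S X {w} z" unfolding fib_def using upd_PiE[OF assms(2) assms(1) v(1)] by auto
    qed
  qed
  show "inj_on (\<lambda>v. z(w:=v)) (X w)" by (auto simp: inj_on_def fun_eq_iff)
qed

lemma sum_fib_single:
  assumes "w \<in> S" "z \<in> PiE S X"
  shows "sum F (fib S X {w} z) = (\<Sum>v\<in>X w. F (z(w:=v)))"
  using fib_single[OF assms] by (simp add: sum.reindex)

lemma gml:
  fixes c :: "'n \<Rightarrow> ('n \<Rightarrow> 'v) \<Rightarrow> real"
  assumes fin: "finite S" "\<forall>s\<in>S. finite (X s)"
    and sink: "\<forall>W'. W' \<subseteq> W \<longrightarrow> W' \<noteq> {} \<longrightarrow> (\<exists>w\<in>W'. \<forall>u\<in>W'. w \<notin> pa u)"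
    and WS: "W \<subseteq> S"
    and loc: "\<forall>w\<in>W. \<forall>y\<in>PiE S X. \<forall>y'\<in>PiE S X. y w = y' w \<and> (\<forall>t\<in>pa w. y t = y' t) \<longrightarrow> c w y = c w y'"
    and norm: "\<forall>w\<in>W. \<forall>y\<in>PiE S X. (\<Sum>v\<in>X w. c w (y(w:=v))) = 1"
    and z: "z \<in> PiE S X"
  shows "(\<Sum>y\<in>fib S X W z. \<Prod>w\<in>W. c w y) = 1"
  using sink WS loc norm z
proof (induction "card W" arbitrary: W z rule: less_induct)
  case less
  have finW: "finite W" using less.prems(2) fin(1) finite_subset by auto
  show ?case
  proof (cases "W = {}")
    case True thus ?thesis using fib_empty[OF less.prems(5)] by simp
  next
    case False
    then obtain w where w: "w \<in> W" "\<forall>u\<in>W. w \<notin> pa u" using less.prems(1) by blast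
    define W0 where "W0 = W - {w}"
    have W: "W = W0 \<union> {w}" "W0 \<inter> {w} = {}" using w unfolding W0_def by auto
    have wS: "w \<in> S" using w less.prems(2) by auto
    have c: "card W0 < card W" using card_Diff1_less[OF finW w(1)] unfolding W0_def .
    have s1: "\<forall>W'. W' \<subseteq> W0 \<longrightarrow> W' \<noteq> {} \<longrightarrow> (\<exists>w\<in>W'. \<forall>u\<in>W'. w \<notin> pa u)"
      using less.prems(1) unfolding W0_def by auto
    have s2: "W0 \<subseteq> S" using less.prems(2) unfolding W0_def by auto
    have s3: "\<forall>w\<in>W0. \<forall>y\<in>PiE S X. \<forall>y'\<in>PiE S X. y w = y' w \<and> (\<forall>t\<in>pa w. y t = y' t) \<longrightarrow> c w y = c w y'"
      using less.prems(3) unfolding W0_def by (meson DiffD1)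
    have s4: "\<forall>w\<in>W0. \<forall>y\<in>PiE S X. (\<Sum>v\<in>X w. c w (y(w:=v))) = 1"
      using less.prems(4) unfolding W0_def by (meson DiffD1)
    have IH: "(\<Sum>y\<in>fib S X W0 z. \<Prod>w\<in>W0. c w y) = 1" if z: "z \<in> PiE S X" for z
      using less.hyps[OF c s1 s2 s3 s4 z] .
    have "(\<Sum>y\<in>fib S X W z. \<Prod>w\<in>W. c w y)
        = (\<Sum>y1\<in>fib S X W0 z. \<Sum>y\<in>fib S X {w} y1. \<Prod>w\<in>W. c w y)"
      using fib_split[OF fin W(2) less.prems(5)] W(1) by simp
    also have "\<dots> = (\<Sum>y1\<in>fib S X W0 z. \<Prod>w\<in>W0. c w y1)"
    proof (rule sum.cong[OF refl])
      fix y1 assume y1: "y1 \<in> fib S X W0 z"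
      hence y1P: "y1 \<in> PiE S X" using fib_sub by blast
      have "(\<Sum>y\<in>fib S X {w} y1. \<Prod>w\<in>W. c w y) = (\<Sum>v\<in>X w. \<Prod>u\<in>W. c u (y1(w:=v)))"
        by (rule sum_fib_single[OF wS y1P])
      also have "\<dots> = (\<Sum>v\<in>X w. c w (y1(w:=v)) * (\<Prod>u\<in>W0. c u y1))"
      proof (rule sum.cong[OF refl])
        fix v assume v: "v \<in> X w"
        have "(\<Prod>u\<in>W. c u (y1(w:=v))) = c w (y1(w:=v)) * (\<Prod>u\<in>W0. c u (y1(w:=v)))"
          using finW w unfolding W0_def by (simp add: prod.remove)
        also have "(\<Prod>u\<in>W0. c u (y1(w:=v))) = (\<Prod>u\<in>W0. c u y1)"
        proof (rule prod.cong[OF refl])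
          fix u assume u: "u \<in> W0"
          have "w \<notin> pa u" "u \<noteq> w" using u w unfolding W0_def by auto
          thus "c u (y1(w:=v)) = c u y1"
            using s3[rule_format, OF u upd_PiE[OF y1P wS v] y1P] by auto
        qed
        finally show "(\<Prod>u\<in>W. c u (y1(w:=v))) = c w (y1(w:=v)) * (\<Prod>u\<in>W0. c u y1)" .
      qed
      also have "\<dots> = (\<Sum>v\<in>X w. c w (y1(w:=v))) * (\<Prod>u\<in>W0. c u y1)"
        by (rule sum_distrib_right[symmetric])
      also have "\<dots> = (\<Prod>u\<in>W0. c u y1)" using less.prems(4) w y1P by simp
      finally show "(\<Sum>y\<in>fib S X {w} y1. \<Prod>w\<in>W. c w y) = (\<Prod>u\<in>W0. c u y1)" .
    qed
    also have "\<dots> = 1" using IH[OF less.prems(5)] .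
    finally show ?thesis .
  qed
qed

lemma dag_sink:
  assumes "is_dag S pa" "W \<subseteq> S"
  shows "\<forall>W'. W' \<subseteq> W \<longrightarrow> W' \<noteq> {} \<longrightarrow> (\<exists>w\<in>W'. \<forall>u\<in>W'. w \<notin> pa u)"
proof (intro allI impI)
  fix W' assume W': "W' \<subseteq> W" "W' \<noteq> {}"
  have fin: "finite (edges S pa)"
  proof -
    have "edges S pa \<subseteq> S \<times> S" using assms(1) unfolding is_dag_def edges_def by auto
    thus ?thesis using assms(1) unfolding is_dag_def by (meson finite_SigmaI finite_subset)
  qed
  have "wf ((edges S pa)\<inverse>)"
    using finite_acyclic_wf_converse[OF fin] assms(1) unfolding is_dag_def by auto
  then obtain w where w: "w \<in> W'" "\<forall>y. (y, w) \<in> (edges S pa)\<inverse> \<longrightarrow> y \<notin> W'"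
    using W'(2) wf_eq_minimal by (metis ex_in_conv)
  have "\<forall>u\<in>W'. w \<notin> pa u"
  proof
    fix u assume u: "u \<in> W'"
    hence uS: "u \<in> S" using W' assms(2) by auto
    show "w \<notin> pa u"
    proof
      assume "w \<in> pa u"
      hence "(u, w) \<in> (edges S pa)\<inverse>" using uS unfolding edges_def by auto
      thus False using w(2) u by blast
    qed
  qed
  thus "\<exists>w\<in>W'. \<forall>u\<in>W'. w \<notin> pa u" using w(1) by blast
qed

lemma fcp_F1:
  assumes "full_cond_prob Om P" "B \<subseteq> Om" "B \<noteq> {}"
  shows "\<And>A. A \<subseteq> Om \<Longrightarrow> P A B \<ge> 0" "P Om B = 1"
    "\<And>A C. A \<subseteq> Om \<Longrightarrow> C \<subseteq> Om \<Longrightarrow> A \<inter> C = {} \<Longrightarrow> P (A \<union> C) B = P A B + P C B"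
    "P B B = 1"
  using assms unfolding full_cond_prob_def by blast+

lemma fcp_F2:
  assumes "full_cond_prob Om P" "A \<subseteq> Om" "B \<subseteq> Om" "C \<subseteq> Om" "B \<noteq> {}" "C \<inter> B \<noteq> {}"
  shows "P (A \<inter> C) B = P A (C \<inter> B) * P C B"
proof -
  have "\<forall>A B C. A \<subseteq> Om \<and> B \<subseteq> Om \<and> C \<subseteq> Om \<and> B \<noteq> {} \<and> C \<inter> B \<noteq> {} \<longrightarrow> P (A \<inter> C) B = P A (C \<inter> B) * P C B"
    using assms(1) unfolding full_cond_prob_def by (rule conjunct2)
  thus ?thesis using assms(2-6) by simp
qed

lemma fcp_empty:
  assumes "full_cond_prob Om P" "B \<subseteq> Om" "B \<noteq> {}"
  shows "P {} B = 0"
  using fcp_F1(3)[OF assms, of "{}" "{}"] by simp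

lemma fcp_sum:
  assumes "full_cond_prob Om P" "B \<subseteq> Om" "B \<noteq> {}" "finite A" "A \<subseteq> Om"
  shows "P A B = (\<Sum>w\<in>A. P {w} B)"
  using assms(4,5)
proof (induction A rule: finite_induct)
  case empty thus ?case using fcp_empty[OF assms(1-3)] by simp
next
  case (insert x F)
  have "P (insert x F) B = P ({x} \<union> F) B" by simp
  also have "\<dots> = P {x} B + P F B" by (rule fcp_F1(3)[OF assms(1-3)]) (use insert in auto)
  finally show ?case using insert by simp
qed

lemma fcp_inter:
  assumes "full_cond_prob Om P" "A \<subseteq> Om" "B \<subseteq> Om" "B \<noteq> {}"
  shows "P A B = P (A \<inter> B) B"
  using fcp_F2[OF assms(1,2,3,3,4)] fcp_F1(4)[OF assms(1,3,4)] assms(4) by simp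

lemma fcp_mono:
  assumes "full_cond_prob Om P" "B \<subseteq> Om" "B \<noteq> {}" "A \<subseteq> A'" "A' \<subseteq> Om"
  shows "P A B \<le> P A' B"
proof -
  have "A' = A \<union> (A' - A)" using assms by auto
  hence "P A' B = P A B + P (A' - A) B" using fcp_F1(3)[OF assms(1-3), of A "A' - A"] assms by auto
  thus ?thesis using fcp_F1(1)[OF assms(1-3), of "A' - A"] assms by auto
qed

lemma fcp_sum_one:
  assumes "full_cond_prob Om P" "B \<subseteq> Om" "B \<noteq> {}" "finite Om"
  shows "(\<Sum>w\<in>B. P {w} B) = 1"
  using fcp_sum[OF assms(1-3) _ assms(2)] fcp_F1(4)[OF assms(1-3)] assms(4) finite_subset assms(2)
  by metis

lemma convex_fun_sum:
  assumes "convex_fun_set C" "finite I"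
  shows "(\<forall>i\<in>I. l i \<ge> 0) \<Longrightarrow> sum l I = 1 \<Longrightarrow> (\<forall>i\<in>I. F i \<in> C)
          \<Longrightarrow> (\<lambda>v. \<Sum>i\<in>I. l i * F i v) \<in> C"
  using assms(2)
proof (induction I arbitrary: l rule: finite_induct)
  case empty thus ?case by simp
next
  case (insert i I)
  define s where "s = sum l I"
  have s0: "s \<ge> 0" unfolding s_def using insert by (auto intro: sum_nonneg)
  have li: "l i = 1 - s" using insert unfolding s_def by simp
  show ?case
  proof (cases "s = 0")
    case True
    hence "\<forall>j\<in>I. l j = 0" using insert unfolding s_def by (simp add: sum_nonneg_eq_0_iff)
    hence "(\<lambda>v. \<Sum>j\<in>insert i I. l j * F j v) = F i" using insert li True by auto
    thus ?thesis using insert by simp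
  next
    case False
    hence sp: "s > 0" using s0 by simp
    define G where "G = (\<lambda>v. \<Sum>j\<in>I. (l j / s) * F j v)"
    have "G \<in> C" unfolding G_def
      apply (rule insert.IH)
      using insert sp by (auto simp: s_def sum_divide_distrib[symmetric])
    have conv: "\<forall>p\<in>C. \<forall>q\<in>C. \<forall>t::real. 0 \<le> t \<and> t \<le> 1 \<longrightarrow> (\<lambda>v. t * p v + (1 - t) * q v) \<in> C"
      using assms(1) unfolding convex_fun_set_def .
    have "(\<lambda>v. l i * F i v + (1 - l i) * G v) \<in> C"
      apply (rule conv[rule_format])
      using insert li s0 \<open>G \<in> C\<close> by auto
    moreover have "(\<lambda>v. l i * F i v + (1 - l i) * G v) = (\<lambda>v. \<Sum>j\<in>insert i I. l j * F j v)"
      using insert sp li unfolding G_def by (auto simp: sum_distrib_left)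
    ultimately show ?thesis by simp
  qed
qed


locale dagnet =
  fixes G :: "'n set" and par :: "'n \<Rightarrow> 'n set"
  assumes dag: "is_dag G par"
begin

abbreviation "pl \<equiv> path_le G par"

lemma finG: "finite G" using dag unfolding is_dag_def by auto

lemma pa_sub: "s \<in> G \<Longrightarrow> par s \<subseteq> G" using dag unfolding is_dag_def by auto

lemma acyc: "acyclic (edges G par)" using dag unfolding is_dag_def by auto

lemma pl_refl: "pl s s" unfolding path_le_def by auto

lemma pl_trans: "pl s t \<Longrightarrow> pl t u \<Longrightarrow> pl s u" unfolding path_le_def by auto

lemma pl_edge: "s \<in> G \<Longrightarrow> t \<in> par s \<Longrightarrow> pl t s"
  unfolding path_le_def edges_def by auto

lemma edges_sub: "edges G par \<subseteq> G \<times> G" using pa_sub unfolding edges_def by auto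

lemma pl_in: "pl s v \<Longrightarrow> s \<noteq> v \<Longrightarrow> s \<in> G \<and> v \<in> G"
proof -
  assume a: "pl s v" "s \<noteq> v"
  hence "(s, v) \<in> (edges G par)\<^sup>+" unfolding path_le_def by (metis rtranclD)
  hence "(s, v) \<in> G \<times> G" using trancl_mono[OF _ edges_sub] trancl_subset_Sigma[OF edges_sub] by blast
  thus ?thesis by auto
qed

lemma pl_antisym: "pl s v \<Longrightarrow> pl v s \<Longrightarrow> s = v"
proof (rule ccontr)
  assume a: "pl s v" "pl v s" "s \<noteq> v"
  hence "(s, v) \<in> (edges G par)\<^sup>+" "(v, s) \<in> (edges G par)\<^sup>+" unfolding path_le_def by (metis rtranclD)+
  hence "(s, s) \<in> (edges G par)\<^sup>+" by auto
  thus False using acyc unfolding acyclic_def by auto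
qed

lemma desc_iff: "v \<in> desc G par s \<longleftrightarrow> v \<in> G \<and> pl s v \<and> s \<noteq> v"
  unfolding desc_def by auto

lemma nondesc_iff: "v \<in> nondesc G par s \<longleftrightarrow> v \<in> G \<and> v \<noteq> s \<and> \<not> pl s v"
  unfolding nondesc_def desc_def by auto

lemma par_nondesc: "s \<in> G \<Longrightarrow> par s \<subseteq> nondesc G par s"
proof
  fix t assume s: "s \<in> G" and t: "t \<in> par s"
  have tG: "t \<in> G" using pa_sub s t by auto
  have e: "pl t s" using pl_edge s t .
  have "t \<noteq> s"
  proof
    assume "t = s"
    hence "(s, s) \<in> edges G par" using s t unfolding edges_def by auto
    thus False using acyc unfolding acyclic_def by auto
  qed
  moreover have "\<not> pl s t" using pl_antisym e \<open>t \<noteq> s\<close> by auto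
  ultimately show "t \<in> nondesc G par s" using tG unfolding nondesc_iff by auto
qed

lemma child_desc:
  assumes "u \<in> G" "t \<in> par u" "pl s t"
  shows "u \<in> desc G par s"
proof -
  have "pl s u" using pl_trans[OF assms(3) pl_edge[OF assms(1,2)]] .
  moreover have "s \<noteq> u"
  proof
    assume "s = u"
    hence "t \<in> nondesc G par s" using par_nondesc[of s] assms by auto
    thus False using assms(3) unfolding nondesc_iff by auto
  qed
  ultimately show ?thesis using assms(1) unfolding desc_iff by auto
qed

lemma par_of_nondesc: "s \<in> G \<Longrightarrow> u \<in> nondesc G par s \<Longrightarrow> par u \<subseteq> nondesc G par s"
proof
  fix t assume s: "s \<in> G" and u: "u \<in> nondesc G par s" and t: "t \<in> par u"
  have uG: "u \<in> G" using u unfolding nondesc_iff by auto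
  have tG: "t \<in> G" using pa_sub uG t by auto
  have "\<not> pl s t"
  proof
    assume "pl s t"
    hence "u \<in> desc G par s" using child_desc uG t by auto
    thus False using u unfolding nondesc_def by auto
  qed
  moreover hence "t \<noteq> s" using pl_refl by auto
  ultimately show "t \<in> nondesc G par s" using tG unfolding nondesc_iff by auto
qed

lemma desc_sub: "desc G par s \<subseteq> G" unfolding desc_def by auto
lemma nondesc_sub: "nondesc G par s \<subseteq> G" unfolding nondesc_def by auto

lemma s_notin_desc: "s \<notin> desc G par s" unfolding desc_def by auto

lemma partition_s: "s \<in> G \<Longrightarrow> G = {s} \<union> desc G par s \<union> nondesc G par s"
  unfolding nondesc_def desc_def by auto

lemma desc_nondesc_disj: "desc G par s \<inter> nondesc G par s = {}"
  unfolding nondesc_def by auto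

lemma desc_trans: "v \<in> desc G par u \<Longrightarrow> u \<in> desc G par s \<Longrightarrow> v \<in> desc G par s"
  unfolding desc_iff using pl_trans pl_antisym by metis

lemma sub_edges: "A \<subseteq> G \<Longrightarrow> edges A (sub_pa par A) \<subseteq> edges G par"
  unfolding edges_def sub_pa_def by auto

lemma sub_path1: "A \<subseteq> G \<Longrightarrow> path_le A (sub_pa par A) s v \<Longrightarrow> pl s v"
  unfolding path_le_def using rtrancl_mono[OF sub_edges] by blast

lemma sub_path2:
  assumes cl: "closed_set G par A" and s: "s \<in> A" and v: "v \<in> A" and p: "pl s v"
  shows "path_le A (sub_pa par A) s v"
proof -
  have "(s, v) \<in> (edges G par)\<^sup>*" using p unfolding path_le_def .
  thus ?thesis using s
  proof (induction rule: converse_rtrancl_induct)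
    case base thus ?case unfolding path_le_def by auto
  next
    case (step y z)
    have zG: "z \<in> G" and yz: "y \<in> par z" using step(1) unfolding edges_def by auto
    have "pl y z" using step(1) unfolding path_le_def by auto
    moreover have "pl z v" using step(2) unfolding path_le_def by auto
    ultimately have zA: "z \<in> A" using cl step(4) v zG unfolding closed_set_def by blast
    have "(y, z) \<in> edges A (sub_pa par A)" using zA yz step(4) unfolding edges_def sub_pa_def by auto
    moreover have "path_le A (sub_pa par A) z v" using step(3)[OF zA] .
    ultimately show ?case unfolding path_le_def by (meson converse_rtrancl_into_rtrancl)
  qed
qed

lemma sub_desc:
  assumes "closed_set G par A" "s \<in> A"
  shows "desc A (sub_pa par A) s = desc G par s \<inter> A"
proof -
  have AG: "A \<subseteq> G" using assms(1) unfolding closed_set_def by auto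
  show ?thesis
    unfolding desc_def using sub_path1[OF AG] sub_path2[OF assms(1) assms(2)] AG by blast
qed

lemma sub_nondesc:
  assumes "closed_set G par A" "s \<in> A"
  shows "nondesc A (sub_pa par A) s = nondesc G par s \<inter> A"
  using sub_desc[OF assms] assms(1) unfolding nondesc_def closed_set_def by auto

end

locale Kset = dagnet +
  fixes K
  assumes closedK: "closed_set G par K"
begin

abbreviation "N \<equiv> nondescK G par K"
abbreviation "D \<equiv> descK G par K"
abbreviation "PK \<equiv> parK G par K"

lemma KG: "K \<subseteq> G" using closedK unfolding closed_set_def by auto

lemma D_iff: "v \<in> D \<longleftrightarrow> v \<in> G \<and> v \<notin> K \<and> (\<exists>k\<in>K. v \<in> desc G par k)"
  unfolding descK_def desc_def by auto

lemma N_iff: "v \<in> N \<longleftrightarrow> v \<in> G \<and> v \<notin> K \<and> v \<notin> D"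
  unfolding nondescK_def by auto

lemma DG: "D \<subseteq> G" using D_iff by auto
lemma NG: "N \<subseteq> G" using N_iff by auto
lemma KD: "K \<inter> D = {}" using D_iff by auto
lemma KN: "K \<inter> N = {}" using N_iff by auto
lemma DN: "D \<inter> N = {}" using N_iff by auto
lemma GKDN: "G = K \<union> D \<union> N" using N_iff KG DG by auto

lemma anc_N: "v \<in> N \<Longrightarrow> pl u v \<Longrightarrow> u \<in> G \<Longrightarrow> u \<in> N"
proof -
  assume v: "v \<in> N" and p: "pl u v" and uG: "u \<in> G"
  show "u \<in> N"
  proof (rule ccontr)
    assume "u \<notin> N"
    hence "u \<in> K \<or> u \<in> D" using uG N_iff by auto
    then obtain k where k: "k \<in> K" "pl k u" using D_iff pl_refl unfolding desc_iff by blast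
    have "u \<noteq> v" using v \<open>u \<notin> N\<close> by auto
    have "pl k v" using pl_trans[OF k(2) p] .
    moreover have "k \<noteq> v" using k(1) v KN by auto
    ultimately have "v \<in> D" using k(1) v N_iff unfolding D_iff desc_iff by auto
    thus False using v DN by auto
  qed
qed

lemma par_N: "u \<in> N \<Longrightarrow> par u \<subseteq> N"
  using anc_N pl_edge pa_sub NG by blast

lemma closed_N: "closed_set G par N"
  unfolding closed_set_def using NG anc_N by blast

lemma PK_iff: "t \<in> PK \<longleftrightarrow> t \<notin> K \<and> (\<exists>k\<in>K. t \<in> par k)"
  unfolding parK_def by auto

lemma PK_N: "PK \<subseteq> N"
proof
  fix t assume t: "t \<in> PK"
  then obtain k where k: "k \<in> K" "t \<in> par k" "t \<notin> K" unfolding PK_iff by auto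
  have tG: "t \<in> G" using pa_sub k KG by auto
  have "t \<notin> D"
  proof
    assume "t \<in> D"
    then obtain k2 where k2: "k2 \<in> K" "pl k2 t" unfolding D_iff desc_iff by auto
    have "pl t k" using pl_edge k KG by auto
    hence "t \<in> K" using closedK k2 k(1) tG unfolding closed_set_def by blast
    thus False using k by auto
  qed
  thus "t \<in> N" using tG k N_iff by auto
qed

lemma par_K: "k \<in> K \<Longrightarrow> par k \<subseteq> K \<union> PK"
  unfolding parK_def by auto

lemma desc_K: "k \<in> K \<Longrightarrow> desc G par k \<subseteq> K \<union> D"
  unfolding descK_def by auto

lemma desc_D: "d \<in> D \<Longrightarrow> desc G par d \<subseteq> D"
proof
  fix v assume d: "d \<in> D" and v: "v \<in> desc G par d"
  then obtain k where k: "k \<in> K" "d \<in> desc G par k" "d \<notin> K" unfolding D_iff by auto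
  have vk: "v \<in> desc G par k" using desc_trans[OF v k(2)] .
  have "v \<notin> K"
  proof
    assume "v \<in> K"
    hence "d \<in> K" using closedK k v desc_sub unfolding closed_set_def desc_iff by blast
    thus False using k by auto
  qed
  thus "v \<in> D" using vk k desc_sub unfolding D_iff by auto
qed

lemma N_nondesc_K: "k \<in> K \<Longrightarrow> N \<subseteq> nondesc G par k"
proof
  fix v assume k: "k \<in> K" and v: "v \<in> N"
  have "v \<notin> desc G par k" using desc_K[OF k] v KN DN by auto
  moreover have "v \<noteq> k" using k v KN by auto
  ultimately show "v \<in> nondesc G par k" using v NG unfolding nondesc_def by auto
qed

lemma NK_nondesc_D: "d \<in> D \<Longrightarrow> N \<union> K \<subseteq> nondesc G par d"
proof
  fix v assume d: "d \<in> D" and v: "v \<in> N \<union> K"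
  have "v \<notin> desc G par d" using desc_D[OF d] v KD DN by auto
  moreover have "v \<noteq> d" using d v KD DN by auto
  ultimately show "v \<in> nondesc G par d" using v NG KG unfolding nondesc_def by auto
qed

lemma PK_G: "PK \<subseteq> G" using PK_N NG by auto

end


lemma PiE_diff_in: "i \<in> PiE S X \<Longrightarrow> j \<in> PiE S X \<Longrightarrow> i t \<noteq> j t \<Longrightarrow> t \<in> S"
  by (metis PiE_arb)

lemma fcp_union:
  assumes fcp: "full_cond_prob Om P" and B: "B \<subseteq> Om" "B \<noteq> {}" and fin: "finite Om" "finite I"
    and A: "\<forall>i\<in>I. A i \<subseteq> Om" and dj: "\<forall>i\<in>I. \<forall>j\<in>I. i \<noteq> j \<longrightarrow> A i \<inter> A j = {}"
  shows "P (\<Union>i\<in>I. A i) B = (\<Sum>i\<in>I. P (A i) B)"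
proof -
  have fA: "\<forall>i\<in>I. finite (A i)" using A fin finite_subset by blast
  have "P (\<Union>i\<in>I. A i) B = (\<Sum>w\<in>(\<Union>i\<in>I. A i). P {w} B)"
    by (rule fcp_sum[OF fcp B]) (use A fA fin in auto)
  also have "\<dots> = (\<Sum>i\<in>I. \<Sum>w\<in>A i. P {w} B)"
    by (rule sum.UNION_disjoint[OF fin(2) fA dj])
  also have "\<dots> = (\<Sum>i\<in>I. P (A i) B)"
    by (rule sum.cong[OF refl], rule fcp_sum[OF fcp B, symmetric]) (use A fA in auto)
  finally show ?thesis .
qed

lemma restr_cyl: "xN \<in> PiE Nd X \<Longrightarrow> {z \<in> PiE S X. restrict z Nd = xN} = cyl S X Nd xN"
  unfolding cyl_def by (auto simp: PiE_def extensional_def fun_eq_iff)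

definition ext :: "'n set \<Rightarrow> ('n \<Rightarrow> 'v set) \<Rightarrow> 'n set \<Rightarrow> ('n \<Rightarrow> 'v) \<Rightarrow> ('n \<Rightarrow> 'v)" where
  "ext S X C w = (\<lambda>t. if t \<in> S then (if t \<in> C then w t else (SOME x. x \<in> X t)) else undefined)"

lemma ext_in:
  assumes "\<forall>t\<in>S. X t \<noteq> {}" "\<forall>t\<in>C \<inter> S. w t \<in> X t"
  shows "ext S X C w \<in> PiE S X" "\<forall>t\<in>C \<inter> S. ext S X C w t = w t"
  using assms unfolding ext_def by (auto simp: PiE_def Pi_def extensional_def some_in_eq)

lemma cyl_ne:
  assumes "\<forall>t\<in>S. X t \<noteq> {}" "\<forall>t\<in>C \<inter> S. w t \<in> X t" "C \<subseteq> S"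
  shows "cyl S X C w \<noteq> {}"
  using ext_in[OF assms(1,2)] assms(3) unfolding cyl_def by blast

lemma coarsen:
  fixes P :: "('n \<Rightarrow> 'v) set \<Rightarrow> ('n \<Rightarrow> 'v) set \<Rightarrow> real"
  assumes fin: "finite S" "\<forall>t\<in>S. finite (X t)" and ne: "\<forall>t\<in>S. X t \<noteq> {}"
    and fcp: "full_cond_prob (PiE S X) P"
    and NdS: "Nd \<subseteq> S" and CNd: "C \<subseteq> Nd"
    and w: "\<forall>t\<in>C. w t \<in> X t"
    and H: "\<forall>xN\<in>PiE Nd X. (\<lambda>v. if v \<in> X s then P {z\<in>PiE S X. z s = v} {z\<in>PiE S X. restrict z Nd = xN} else 0) \<in> Mf xN"
    and Mf: "\<forall>xN\<in>PiE Nd X. (\<forall>t\<in>C. xN t = w t) \<longrightarrow> Mf xN = Mw"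
    and cvx: "convex_fun_set Mw"
  shows "(\<lambda>v. if v \<in> X s then P {z\<in>PiE S X. z s = v} (cyl S X C w) else 0) \<in> Mw"
proof -
  define Y where "Y = {xN \<in> PiE Nd X. \<forall>t\<in>C. xN t = w t}"
  define B where "B = cyl S X C w"
  have finO: "finite (PiE S X)" using finite_PiE' fin by blast
  have "finite Nd" using NdS fin(1) finite_subset by auto
  hence "finite (PiE Nd X)" using finite_PiE'[of Nd X] fin NdS by auto
  hence finY: "finite Y" unfolding Y_def by (rule finite_subset[rotated]) auto
  have BO: "B \<subseteq> PiE S X" unfolding B_def by (rule cyl_sub)
  have Bne: "B \<noteq> {}" unfolding B_def by (rule cyl_ne) (use ne w CNd NdS in auto)
  have BU: "B = (\<Union>xN\<in>Y. cyl S X Nd xN)"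
  proof
    show "B \<subseteq> (\<Union>xN\<in>Y. cyl S X Nd xN)"
    proof
      fix z assume z: "z \<in> B"
      have zP: "z \<in> PiE S X" using z BO by auto
      have "restrict z Nd \<in> Y" using z zP NdS CNd unfolding Y_def B_def cyl_def by (auto simp: PiE_def Pi_def)
      moreover have "z \<in> cyl S X Nd (restrict z Nd)" using zP unfolding cyl_def by auto
      ultimately show "z \<in> (\<Union>xN\<in>Y. cyl S X Nd xN)" by auto
    qed
    show "(\<Union>xN\<in>Y. cyl S X Nd xN) \<subseteq> B"
      unfolding B_def Y_def cyl_def using CNd by auto
  qed
  have dj: "\<forall>i\<in>Y. \<forall>j\<in>Y. i \<noteq> j \<longrightarrow> cyl S X Nd i \<inter> cyl S X Nd j = {}"
  proof (intro ballI impI)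
    fix i j assume i: "i \<in> Y" and j: "j \<in> Y" and ij: "i \<noteq> j"
    then obtain t where t: "i t \<noteq> j t" by auto
    have "t \<in> Nd" using i j t PiE_diff_in unfolding Y_def by fastforce
    thus "cyl S X Nd i \<inter> cyl S X Nd j = {}" using t unfolding cyl_def by auto
  qed
  have cylO: "\<forall>i\<in>Y. cyl S X Nd i \<subseteq> PiE S X" using cyl_sub by blast
  have cylne: "\<forall>i\<in>Y. cyl S X Nd i \<noteq> {}"
    using cyl_ne[OF ne] NdS unfolding Y_def by (auto simp: PiE_def Pi_def)
  define l where "l xN = P (cyl S X Nd xN) B" for xN
  have l0: "\<forall>i\<in>Y. l i \<ge> 0" unfolding l_def using fcp_F1(1)[OF fcp BO Bne] cylO by auto
  have l1: "sum l Y = 1"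
  proof -
    have "sum l Y = P (\<Union>xN\<in>Y. cyl S X Nd xN) B"
      unfolding l_def by (rule fcp_union[OF fcp BO Bne finO finY cylO dj, symmetric])
    also have "\<dots> = 1" using BU fcp_F1(4)[OF fcp BO Bne] by simp
    finally show ?thesis .
  qed
  define F where "F xN = (\<lambda>v. if v \<in> X s then P {z\<in>PiE S X. z s = v} {z\<in>PiE S X. restrict z Nd = xN} else 0)" for xN
  have FM: "\<forall>i\<in>Y. F i \<in> Mw" unfolding F_def using H Mf unfolding Y_def by auto
  have "(\<lambda>v. \<Sum>i\<in>Y. l i * F i v) \<in> Mw" by (rule convex_fun_sum[OF cvx finY l0 l1 FM])
  moreover have "(\<lambda>v. if v \<in> X s then P {z\<in>PiE S X. z s = v} B else 0) = (\<lambda>v. \<Sum>i\<in>Y. l i * F i v)"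
  proof
    fix v
    show "(if v \<in> X s then P {z\<in>PiE S X. z s = v} B else 0) = (\<Sum>i\<in>Y. l i * F i v)"
    proof (cases "v \<in> X s")
      case False thus ?thesis unfolding F_def by simp
    next
      case True
      define E where "E = {z\<in>PiE S X. z s = v}"
      have EO: "E \<subseteq> PiE S X" unfolding E_def by auto
      have "P E B = P (E \<inter> B) B" by (rule fcp_inter[OF fcp EO BO Bne])
      also have "E \<inter> B = (\<Union>i\<in>Y. E \<inter> cyl S X Nd i)" using BU by auto
      also have "P (\<Union>i\<in>Y. E \<inter> cyl S X Nd i) B = (\<Sum>i\<in>Y. P (E \<inter> cyl S X Nd i) B)"
        by (rule fcp_union[OF fcp BO Bne finO finY]) (use EO dj in blast)+
      also have "\<dots> = (\<Sum>i\<in>Y. l i * F i v)"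
      proof (rule sum.cong[OF refl])
        fix i assume i: "i \<in> Y"
        have sub: "cyl S X Nd i \<subseteq> B" using BU i by auto
        have "P (E \<inter> cyl S X Nd i) B = P E (cyl S X Nd i \<inter> B) * P (cyl S X Nd i) B"
          by (rule fcp_F2[OF fcp EO BO cylO[rule_format, OF i] Bne]) (use sub cylne i in auto)
        also have "cyl S X Nd i \<inter> B = cyl S X Nd i" using sub by auto
        also have "cyl S X Nd i = {z\<in>PiE S X. restrict z Nd = i}"
          using restr_cyl[of i Nd X S] i unfolding Y_def by auto
        finally show "P (E \<inter> cyl S X Nd i) B = l i * F i v"
          unfolding l_def F_def E_def using True restr_cyl[of i Nd X S] i unfolding Y_def by auto
      qed
      finally show ?thesis using True unfolding E_def by simp
    qed
  qed
  ultimately show ?thesis unfolding B_def by simp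
qed


definition pre :: "'n set \<Rightarrow> ('n \<Rightarrow> 'v set) \<Rightarrow> 'n set \<Rightarrow> ('n \<Rightarrow> 'v) set \<Rightarrow> ('n \<Rightarrow> 'v) set" where
  "pre S X T A = {z \<in> PiE S X. restrict z T \<in> A}"

lemma pre_sub: "pre S X T A \<subseteq> PiE S X" unfolding pre_def by auto
lemma pre_Int: "pre S X T (A \<inter> C) = pre S X T A \<inter> pre S X T C" unfolding pre_def by auto
lemma pre_Un: "pre S X T (A \<union> C) = pre S X T A \<union> pre S X T C" unfolding pre_def by auto
lemma pre_disj: "A \<inter> C = {} \<Longrightarrow> pre S X T A \<inter> pre S X T C = {}" unfolding pre_def by auto
lemma pre_all: "T \<subseteq> S \<Longrightarrow> pre S X T (PiE T X) = PiE S X"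
  unfolding pre_def by (auto simp: PiE_def Pi_def)

lemma restrict_ext_fun:
  assumes "\<forall>t\<in>S. X t \<noteq> {}" "b \<in> PiE T X" "T \<subseteq> S"
  shows "restrict (ext S X T b) T = b"
  using assms unfolding ext_def by (auto simp: PiE_def extensional_def fun_eq_iff)

lemma pre_ne:
  assumes "\<forall>t\<in>S. X t \<noteq> {}" "T \<subseteq> S" "B \<subseteq> PiE T X" "B \<noteq> {}"
  shows "pre S X T B \<noteq> {}"
proof -
  obtain b where b: "b \<in> B" using assms by auto
  have bP: "b \<in> PiE T X" using b assms by auto
  have "ext S X T b \<in> PiE S X" by (rule ext_in(1)) (use assms bP in auto)
  moreover have "restrict (ext S X T b) T = b" by (rule restrict_ext_fun[OF assms(1) bP assms(2)])
  ultimately show ?thesis using b unfolding pre_def by auto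
qed

lemma marg_fcp:
  assumes ne: "\<forall>t\<in>S. X t \<noteq> {}" and fcp: "full_cond_prob (PiE S X) P" and TS: "T \<subseteq> S"
  shows "full_cond_prob (PiE T X) (\<lambda>A B. P (pre S X T A) (pre S X T B))"
  unfolding full_cond_prob_def
proof (intro conjI allI impI)
  fix B assume B: "B \<subseteq> PiE T X \<and> B \<noteq> {}"
  have B1: "pre S X T B \<subseteq> PiE S X" "pre S X T B \<noteq> {}" using pre_sub[of S X T B] pre_ne[OF ne TS, of B] B by auto
  note F1 = fcp_F1[OF fcp B1]
  show "0 \<le> P (pre S X T A) (pre S X T B)" if "A \<subseteq> PiE T X" for A by (rule F1(1)[OF pre_sub])
  show "P (pre S X T (PiE T X)) (pre S X T B) = 1" using F1(2) pre_all[OF TS, of X] by metis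
  show "P (pre S X T (A \<union> C)) (pre S X T B) = P (pre S X T A) (pre S X T B) + P (pre S X T C) (pre S X T B)"
    if a: "A \<subseteq> PiE T X \<and> C \<subseteq> PiE T X \<and> A \<inter> C = {}" for A C
  proof -
    show "P (pre S X T (A \<union> C)) (pre S X T B) = P (pre S X T A) (pre S X T B) + P (pre S X T C) (pre S X T B)"
      unfolding pre_Un by (rule F1(3)[OF pre_sub pre_sub]) (use a pre_disj[of A C S X T] in auto)
  qed
  show "P (pre S X T B) (pre S X T B) = 1" using F1(4) .
next
  fix A B C assume a: "A \<subseteq> PiE T X \<and> B \<subseteq> PiE T X \<and> C \<subseteq> PiE T X \<and> B \<noteq> {} \<and> C \<inter> B \<noteq> {}"
  have "pre S X T B \<noteq> {}" "pre S X T (C \<inter> B) \<noteq> {}" using pre_ne[OF ne TS, of B] pre_ne[OF ne TS, of "C \<inter> B"] a by auto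
  thus "P (pre S X T (A \<inter> C)) (pre S X T B) = P (pre S X T A) (pre S X T (C \<inter> B)) * P (pre S X T C) (pre S X T B)"
  proof -
    have "P (pre S X T A \<inter> pre S X T C) (pre S X T B) = P (pre S X T A) (pre S X T C \<inter> pre S X T B) * P (pre S X T C) (pre S X T B)"
      by (rule fcp_F2[OF fcp pre_sub pre_sub pre_sub]) (use \<open>pre S X T B \<noteq> {}\<close> \<open>pre S X T (C \<inter> B) \<noteq> {}\<close> pre_Int[of S X T C B] in auto)
    thus ?thesis using pre_Int by metis
  qed
qed

lemma fcp_cond_sub:
  assumes fcp: "full_cond_prob Om P" "A \<subseteq> Om" "B \<subseteq> Om" "B \<noteq> {}" "B \<subseteq> C0" "C0 \<subseteq> Om"
  shows "P (A \<inter> C0) B = P A B"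
proof -
  have "P (A \<inter> C0) B = P A (C0 \<inter> B) * P C0 B"
    by (rule fcp_F2) (use assms in auto)
  moreover have "C0 \<inter> B = B" using assms by auto
  moreover have "P C0 B = 1"
  proof -
    have "P B B \<le> P C0 B" by (rule fcp_mono) (use assms in auto)
    moreover have "P C0 B \<le> P Om B" by (rule fcp_mono) (use assms in auto)
    ultimately show ?thesis using fcp_F1(2,4)[OF assms(1,3,4)] by auto
  qed
  ultimately show ?thesis by simp
qed

lemma ext2_in:
  assumes ne: "\<forall>t\<in>S. X t \<noteq> {}" and T: "T1 \<subseteq> S" "T2 \<subseteq> S" "T1 \<inter> T2 = {}"
    and c: "c \<in> PiE T1 X" and b: "b \<in> PiE T2 X"
  shows "ext S X (T1 \<union> T2) (\<lambda>t. if t \<in> T1 then c t else b t) \<in> cyl S X T1 c \<inter> pre S X T2 {b}"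
proof -
  define z where "z = ext S X (T1 \<union> T2) (\<lambda>t. if t \<in> T1 then c t else b t)"
  have zP: "z \<in> PiE S X" unfolding z_def by (rule ext_in(1)) (use ne c b in \<open>auto simp: PiE_def Pi_def\<close>)
  have zv: "\<forall>t\<in>(T1 \<union> T2) \<inter> S. z t = (if t \<in> T1 then c t else b t)"
    unfolding z_def by (rule ext_in(2)) (use ne c b in \<open>auto simp: PiE_def Pi_def\<close>)
  have "z \<in> cyl S X T1 c" using zP zv T unfolding cyl_def by auto
  moreover have "\<forall>t\<in>T2. z t = b t"
  proof
    fix t assume t: "t \<in> T2"
    hence "t \<in> (T1 \<union> T2) \<inter> S" "t \<notin> T1" using T by auto
    thus "z t = b t" using zv by auto
  qed
  hence "restrict z T2 = b" using b by (auto simp: restrict_def PiE_def extensional_def fun_eq_iff)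
  ultimately show ?thesis using zP unfolding z_def pre_def by auto
qed

lemma cond_fcp:
  assumes ne: "\<forall>t\<in>S. X t \<noteq> {}" and fcp: "full_cond_prob (PiE S X) P"
    and T: "T1 \<subseteq> S" "T2 \<subseteq> S" "T1 \<inter> T2 = {}" and c: "c \<in> PiE T1 X"
  shows "full_cond_prob (PiE T2 X) (\<lambda>A B. P (pre S X T2 A \<inter> cyl S X T1 c) (pre S X T2 B \<inter> cyl S X T1 c))"
proof -
  define C0 where "C0 = cyl S X T1 c"
  have C0O: "C0 \<subseteq> PiE S X" unfolding C0_def by (rule cyl_sub)
  have ne2: "\<And>B. B \<subseteq> PiE T2 X \<Longrightarrow> B \<noteq> {} \<Longrightarrow> pre S X T2 B \<inter> C0 \<noteq> {}"
  proof -
    fix B assume "B \<subseteq> PiE T2 X" "B \<noteq> {}"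
    then obtain b where b: "b \<in> B" "b \<in> PiE T2 X" by auto
    have "ext S X (T1 \<union> T2) (\<lambda>t. if t \<in> T1 then c t else b t) \<in> C0 \<inter> pre S X T2 {b}"
      unfolding C0_def by (rule ext2_in[OF ne T c b(2)])
    thus "pre S X T2 B \<inter> C0 \<noteq> {}" using b unfolding pre_def by auto
  qed
  have sub: "\<And>A. pre S X T2 A \<inter> C0 \<subseteq> PiE S X" using pre_sub by blast
  show ?thesis
    unfolding C0_def[symmetric] full_cond_prob_def
  proof (intro conjI allI impI)
    fix B assume B: "B \<subseteq> PiE T2 X \<and> B \<noteq> {}"
    have B1: "pre S X T2 B \<inter> C0 \<subseteq> PiE S X" "pre S X T2 B \<inter> C0 \<noteq> {}" using sub ne2 B by auto
    note F1 = fcp_F1[OF fcp B1]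
    show "0 \<le> P (pre S X T2 A \<inter> C0) (pre S X T2 B \<inter> C0)" if "A \<subseteq> PiE T2 X" for A by (rule F1(1)[OF sub])
    have "P (PiE S X \<inter> C0) (pre S X T2 B \<inter> C0) = P (PiE S X) (pre S X T2 B \<inter> C0)"
      by (rule fcp_cond_sub[OF fcp]) (use B1 C0O in auto)
    hence "P (pre S X T2 (PiE T2 X) \<inter> C0) (pre S X T2 B \<inter> C0) = P (PiE S X) (pre S X T2 B \<inter> C0)"
      using pre_all[OF T(2), of X] by metis
    thus "P (pre S X T2 (PiE T2 X) \<inter> C0) (pre S X T2 B \<inter> C0) = 1" using F1(2) by simp
    show "P (pre S X T2 (A \<union> C) \<inter> C0) (pre S X T2 B \<inter> C0) = P (pre S X T2 A \<inter> C0) (pre S X T2 B \<inter> C0) + P (pre S X T2 C \<inter> C0) (pre S X T2 B \<inter> C0)"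
      if a: "A \<subseteq> PiE T2 X \<and> C \<subseteq> PiE T2 X \<and> A \<inter> C = {}" for A C
    proof -
      have "pre S X T2 (A \<union> C) \<inter> C0 = (pre S X T2 A \<inter> C0) \<union> (pre S X T2 C \<inter> C0)" using pre_Un by blast
      moreover have "(pre S X T2 A \<inter> C0) \<inter> (pre S X T2 C \<inter> C0) = {}" using pre_disj a by blast
      ultimately show "P (pre S X T2 (A \<union> C) \<inter> C0) (pre S X T2 B \<inter> C0) = P (pre S X T2 A \<inter> C0) (pre S X T2 B \<inter> C0) + P (pre S X T2 C \<inter> C0) (pre S X T2 B \<inter> C0)"
        using F1(3)[OF sub sub] by simp
    qed
    show "P (pre S X T2 B \<inter> C0) (pre S X T2 B \<inter> C0) = 1" using F1(4) .
  next
    fix A B C assume a: "A \<subseteq> PiE T2 X \<and> B \<subseteq> PiE T2 X \<and> C \<subseteq> PiE T2 X \<and> B \<noteq> {} \<and> C \<inter> B \<noteq> {}"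
    have n1: "pre S X T2 B \<inter> C0 \<noteq> {}" "pre S X T2 (C \<inter> B) \<inter> C0 \<noteq> {}"
      using ne2[of B] ne2[of "C \<inter> B"] a by auto
    have e1: "(pre S X T2 A \<inter> C0) \<inter> (pre S X T2 C \<inter> C0) = pre S X T2 (A \<inter> C) \<inter> C0" using pre_Int by blast
    have e2: "(pre S X T2 C \<inter> C0) \<inter> (pre S X T2 B \<inter> C0) = pre S X T2 (C \<inter> B) \<inter> C0" using pre_Int by blast
    have "P ((pre S X T2 A \<inter> C0) \<inter> (pre S X T2 C \<inter> C0)) (pre S X T2 B \<inter> C0)
       = P (pre S X T2 A \<inter> C0) ((pre S X T2 C \<inter> C0) \<inter> (pre S X T2 B \<inter> C0)) * P (pre S X T2 C \<inter> C0) (pre S X T2 B \<inter> C0)"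
      by (rule fcp_F2[OF fcp sub sub sub n1(1)]) (use e2 n1 in auto)
    thus "P (pre S X T2 (A \<inter> C) \<inter> C0) (pre S X T2 B \<inter> C0) = P (pre S X T2 A \<inter> C0) (pre S X T2 (C \<inter> B) \<inter> C0) * P (pre S X T2 C \<inter> C0) (pre S X T2 B \<inter> C0)"
      using e1 e2 by simp
  qed
qed


lemma fcp_single_bounds:
  assumes "full_cond_prob Om P" "Om \<noteq> {}" "z \<in> Om"
  shows "0 \<le> P {z} Om" "P {z} Om \<le> 1"
proof -
  show "0 \<le> P {z} Om" using fcp_F1(1)[OF assms(1) _ assms(2)] assms(3) by auto
  have "P {z} Om \<le> P Om Om" by (rule fcp_mono) (use assms in auto)
  thus "P {z} Om \<le> 1" using fcp_F1(2)[OF assms(1) _ assms(2)] by auto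
qed

lemma expect_lower:
  assumes "full_cond_prob Om P" "Om \<noteq> {}" "finite Om"
  shows "- (\<Sum>z\<in>Om. \<bar>f z\<bar>) \<le> (\<Sum>z\<in>Om. f z * P {z} Om)"
proof -
  have "(\<Sum>z\<in>Om. - \<bar>f z\<bar>) \<le> (\<Sum>z\<in>Om. f z * P {z} Om)"
  proof (rule sum_mono)
    fix z assume z: "z \<in> Om"
    note b = fcp_single_bounds[OF assms(1,2) z]
    show "- \<bar>f z\<bar> \<le> f z * P {z} Om"
    proof (cases "f z \<ge> 0")
      case True thus ?thesis using b by (smt (verit) mult_nonneg_nonneg)
    next
      case False
      have "f z * P {z} Om \<ge> f z * 1" using b False by (intro mult_left_mono_neg) auto
      thus ?thesis using False by auto
    qed
  qed
  thus ?thesis by (simp add: sum_negf)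
qed

lemma expect_upper:
  assumes "full_cond_prob Om P" "Om \<noteq> {}" "finite Om"
  shows "(\<Sum>z\<in>Om. f z * P {z} Om) \<le> (\<Sum>z\<in>Om. \<bar>f z\<bar>)"
  using expect_lower[OF assms, of "\<lambda>z. - f z"] by (simp add: sum_negf)

lemma bdd_below_expect:
  assumes "\<forall>P\<in>Ps. full_cond_prob Om P" "Om \<noteq> {}" "finite Om"
  shows "bdd_below {(\<Sum>z\<in>Om. f z * P {z} Om) | P. P \<in> Ps}"
  unfolding bdd_below_def using expect_lower[OF _ assms(2,3)] assms(1) by blast

lemma bdd_above_expect:
  assumes "\<forall>P\<in>Ps. full_cond_prob Om P" "Om \<noteq> {}" "finite Om"
  shows "bdd_above {(\<Sum>z\<in>Om. f z * P {z} Om) | P. P \<in> Ps}"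
  unfolding bdd_above_def using expect_upper[OF _ assms(2,3)] assms(1) by blast

locale cnet = Kset +
  fixes X :: "'a \<Rightarrow> 'v set" and M :: "'a \<Rightarrow> ('a \<Rightarrow> 'v) \<Rightarrow> ('v \<Rightarrow> real) set"
  assumes net: "credal_network G par X M"
begin

lemma finX: "\<forall>t\<in>G. finite (X t)" using net unfolding credal_network_def by auto
lemma neX: "\<forall>t\<in>G. X t \<noteq> {}" using net unfolding credal_network_def by auto
lemma Mprops: "s \<in> G \<Longrightarrow> xp \<in> PiE (par s) X \<Longrightarrow> M s xp \<noteq> {} \<and> convex_fun_set (M s xp) \<and> (\<forall>p\<in>M s xp. is_pmf_on (X s) p)"
  using net unfolding credal_network_def by auto

lemma finO: "finite (PiE G X)" using finite_PiE' finG finX by blast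
lemma finOT: "T \<subseteq> G \<Longrightarrow> finite (PiE T X)" using finite_PiE'[of T X] finG finX finite_subset by blast
lemma neOT: "T \<subseteq> G \<Longrightarrow> PiE T X \<noteq> {}" using neX by (auto simp: PiE_eq_empty_iff)

definition Qof :: "(('a \<Rightarrow> 'v) set \<Rightarrow> ('a \<Rightarrow> 'v) set \<Rightarrow> real) \<Rightarrow> ('a \<Rightarrow> 'v) set \<Rightarrow> ('a \<Rightarrow> 'v) set \<Rightarrow> real" where
  "Qof P = (\<lambda>A B. P (pre G X N A) (pre G X N B))"

definition Rof :: "(('a \<Rightarrow> 'v) set \<Rightarrow> ('a \<Rightarrow> 'v) set \<Rightarrow> real) \<Rightarrow> ('a \<Rightarrow> 'v) \<Rightarrow> ('a \<Rightarrow> 'v) set \<Rightarrow> ('a \<Rightarrow> 'v) set \<Rightarrow> real" where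
  "Rof P w = (\<lambda>A B. P (pre G X K A \<inter> cyl G X N w) (pre G X K B \<inter> cyl G X N w))"

lemma irr_fcp: "P \<in> irr_ext S pa X' M' \<Longrightarrow> full_cond_prob (PiE S X') P"
  unfolding irr_ext_def by auto

lemma irr_loc: "P \<in> irr_ext S pa X' M' \<Longrightarrow> s \<in> S \<Longrightarrow> xN \<in> PiE (nondesc S pa s) X' \<Longrightarrow>
   (\<lambda>v. if v \<in> X' s then P {z\<in>PiE S X'. z s = v} {z\<in>PiE S X'. restrict z (nondesc S pa s) = xN} else 0) \<in> M' s (restrict xN (pa s))"
  unfolding irr_ext_def by auto

lemma pre_point: "s \<in> T \<Longrightarrow> T \<subseteq> S \<Longrightarrow> pre S X T {w \<in> PiE T X. w s = v} = {z \<in> PiE S X. z s = v}"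
  unfolding pre_def by (auto simp: PiE_def Pi_def)

lemma pre_restr: "C \<subseteq> T \<Longrightarrow> T \<subseteq> S \<Longrightarrow> xN \<in> PiE C X \<Longrightarrow>
    pre S X T {w \<in> PiE T X. restrict w C = xN} = cyl S X C xN"
  unfolding pre_def cyl_def by (auto simp: PiE_def Pi_def extensional_def fun_eq_iff)

lemma Q_irr:
  assumes P: "P \<in> irr_ext G par X M"
  shows "Qof P \<in> irr_ext N (sub_pa par N) X (\<lambda>s z. M s (restrict z (par s)))"
proof -
  have fcpP: "full_cond_prob (PiE G X) P" using irr_fcp[OF P] .
  have fcpQ: "full_cond_prob (PiE N X) (Qof P)"
    unfolding Qof_def by (rule marg_fcp[OF neX fcpP NG])
  have loc: "(\<lambda>v. if v \<in> X s then Qof P {z\<in>PiE N X. z s = v} {z\<in>PiE N X. restrict z (nondesc N (sub_pa par N) s) = xN} else 0)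
      \<in> M s (restrict (restrict xN (sub_pa par N s)) (par s))"
    if s: "s \<in> N" and xN: "xN \<in> PiE (nondesc N (sub_pa par N) s) X" for s xN
  proof -
    define Nn where "Nn = nondesc N (sub_pa par N) s"
    have Nn: "Nn = nondesc G par s \<inter> N" unfolding Nn_def by (rule sub_nondesc[OF closed_N s])
    have sG: "s \<in> G" using s NG by auto
    have parsN: "par s \<subseteq> N" using par_N[OF s] .
    have parsNn: "par s \<subseteq> Nn" using Nn parsN par_nondesc[OF sG] by auto
    have e1: "restrict (restrict xN (sub_pa par N s)) (par s) = restrict xN (par s)"
      using parsN unfolding sub_pa_def by (auto simp: restrict_def fun_eq_iff)
    have xpP: "restrict xN (par s) \<in> PiE (par s) X" using xN parsNn unfolding Nn_def by (auto simp: PiE_def Pi_def)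
    have cvx: "convex_fun_set (M s (restrict xN (par s)))" using Mprops[OF sG xpP] by auto
    have co: "(\<lambda>v. if v \<in> X s then P {z\<in>PiE G X. z s = v} (cyl G X Nn xN) else 0) \<in> M s (restrict xN (par s))"
    proof (rule coarsen[OF finG finX neX fcpP, of "nondesc G par s" Nn xN s "\<lambda>xN'. M s (restrict xN' (par s))"])
      show "nondesc G par s \<subseteq> G" by (rule nondesc_sub)
      show "Nn \<subseteq> nondesc G par s" using Nn by auto
      show "\<forall>t\<in>Nn. xN t \<in> X t" using xN unfolding Nn_def by auto
      show "\<forall>xN'\<in>PiE (nondesc G par s) X. (\<lambda>v. if v \<in> X s then P {z\<in>PiE G X. z s = v} {z\<in>PiE G X. restrict z (nondesc G par s) = xN'} else 0) \<in> M s (restrict xN' (par s))"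
        using irr_loc[OF P sG] by auto
      show "\<forall>xN'\<in>PiE (nondesc G par s) X. (\<forall>t\<in>Nn. xN' t = xN t) \<longrightarrow> M s (restrict xN' (par s)) = M s (restrict xN (par s))"
      proof (intro ballI impI)
        fix xN' assume "\<forall>t\<in>Nn. xN' t = xN t"
        hence "restrict xN' (par s) = restrict xN (par s)" using parsNn by (intro restrict_ext) auto
        thus "M s (restrict xN' (par s)) = M s (restrict xN (par s))" by simp
      qed
      show "convex_fun_set (M s (restrict xN (par s)))" by (rule cvx)
    qed
    have "(\<lambda>v. if v \<in> X s then Qof P {z\<in>PiE N X. z s = v} {z\<in>PiE N X. restrict z Nn = xN} else 0)
        = (\<lambda>v. if v \<in> X s then P {z\<in>PiE G X. z s = v} (cyl G X Nn xN) else 0)"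
      unfolding Qof_def using pre_point[OF s NG] pre_restr[OF _ NG, of Nn xN] Nn xN unfolding Nn_def by auto
    thus ?thesis using co e1 unfolding Nn_def by simp
  qed
  show ?thesis unfolding irr_ext_def using fcpQ loc by auto
qed

lemma R_irr:
  assumes P: "P \<in> irr_ext G par X M" and w: "w \<in> PiE N X"
  shows "Rof P w \<in> irr_ext K (sub_pa par K) X (sub_M par M K (restrict w PK))"
proof -
  have fcpP: "full_cond_prob (PiE G X) P" using irr_fcp[OF P] .
  have fcpR: "full_cond_prob (PiE K X) (Rof P w)"
    unfolding Rof_def by (rule cond_fcp[OF neX fcpP NG KG _ w]) (use KN in auto)
  define C0 where "C0 = cyl G X N w"
  have loc: "(\<lambda>v. if v \<in> X k then Rof P w {z\<in>PiE K X. z k = v} {z\<in>PiE K X. restrict z (nondesc K (sub_pa par K) k) = xk} else 0)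
      \<in> sub_M par M K (restrict w PK) k (restrict xk (sub_pa par K k))"
    if k: "k \<in> K" and xk: "xk \<in> PiE (nondesc K (sub_pa par K) k) X" for k xk
  proof -
    define Kn where "Kn = nondesc K (sub_pa par K) k"
    have Kn: "Kn = nondesc G par k \<inter> K" unfolding Kn_def by (rule sub_nondesc[OF closedK k])
    have kG: "k \<in> G" using k KG by auto
    define mw where "mw = (\<lambda>t. if t \<in> K then xk t else w t)"
    define C where "C = Kn \<union> N"
    have CNd: "C \<subseteq> nondesc G par k" unfolding C_def using Kn N_nondesc_K[OF k] by auto
    have park: "par k \<subseteq> C" unfolding C_def using Kn par_nondesc[OF kG] par_K[OF k] PK_N by auto
    have KnK: "Kn \<subseteq> K" using Kn by auto
    have xkX: "\<forall>t\<in>Kn. xk t \<in> X t" using xk unfolding Kn_def by auto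
    have mwX: "\<forall>t\<in>C. mw t \<in> X t" unfolding C_def mw_def using xkX w KnK KN by (auto simp: PiE_def Pi_def)
    have xpP: "restrict mw (par k) \<in> PiE (par k) X" using mwX park by (auto simp: PiE_def Pi_def)
    have cvx: "convex_fun_set (M k (restrict mw (par k)))" using Mprops[OF kG xpP] by auto
    have co: "(\<lambda>v. if v \<in> X k then P {z\<in>PiE G X. z k = v} (cyl G X C mw) else 0) \<in> M k (restrict mw (par k))"
    proof (rule coarsen[OF finG finX neX fcpP, of "nondesc G par k" C mw k "\<lambda>xN'. M k (restrict xN' (par k))"])
      show "nondesc G par k \<subseteq> G" by (rule nondesc_sub)
      show "C \<subseteq> nondesc G par k" by (rule CNd)
      show "\<forall>t\<in>C. mw t \<in> X t" by (rule mwX)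
      show "\<forall>xN'\<in>PiE (nondesc G par k) X. (\<lambda>v. if v \<in> X k then P {z\<in>PiE G X. z k = v} {z\<in>PiE G X. restrict z (nondesc G par k) = xN'} else 0) \<in> M k (restrict xN' (par k))"
        using irr_loc[OF P kG] by auto
      show "\<forall>xN'\<in>PiE (nondesc G par k) X. (\<forall>t\<in>C. xN' t = mw t) \<longrightarrow> M k (restrict xN' (par k)) = M k (restrict mw (par k))"
      proof (intro ballI impI)
        fix xN' assume "\<forall>t\<in>C. xN' t = mw t"
        hence "restrict xN' (par k) = restrict mw (par k)" using park by (intro restrict_ext) auto
        thus "M k (restrict xN' (par k)) = M k (restrict mw (par k))" by simp
      qed
      show "convex_fun_set (M k (restrict mw (par k)))" by (rule cvx)
    qed
    have cylC: "cyl G X Kn xk \<inter> C0 = cyl G X C mw"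
      unfolding C0_def C_def mw_def cyl_def using KN KnK by auto
    have Rv: "Rof P w {z\<in>PiE K X. z k = v} {z\<in>PiE K X. restrict z Kn = xk} = P {z\<in>PiE G X. z k = v} (cyl G X C mw)" for v
    proof -
      have "Rof P w {z\<in>PiE K X. z k = v} {z\<in>PiE K X. restrict z Kn = xk}
          = P ({z\<in>PiE G X. z k = v} \<inter> C0) (cyl G X Kn xk \<inter> C0)"
        unfolding Rof_def C0_def using pre_point[OF k KG] pre_restr[OF KnK KG] xk unfolding Kn_def by auto
      also have "\<dots> = P {z\<in>PiE G X. z k = v} (cyl G X Kn xk \<inter> C0)"
      proof (rule fcp_cond_sub[OF fcpP])
        show "cyl G X Kn xk \<inter> C0 \<noteq> {}" unfolding cylC C_def
          by (rule cyl_ne[OF neX]) (use mwX KnK KG NG in \<open>auto simp: C_def\<close>)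
      qed (auto simp: C0_def cyl_def)
      finally show ?thesis using cylC by simp
    qed
    have e1: "sub_M par M K (restrict w PK) k (restrict xk (sub_pa par K k)) = M k (restrict mw (par k))"
    proof -
      have "restrict (\<lambda>t. if t \<in> K then restrict xk (sub_pa par K k) t else restrict w PK t) (par k) = restrict mw (par k)"
        using par_K[OF k] unfolding mw_def sub_pa_def by (auto simp: restrict_def fun_eq_iff)
      thus ?thesis unfolding sub_M_def by simp
    qed
    have eqf: "(\<lambda>v. if v \<in> X k then Rof P w {z\<in>PiE K X. z k = v} {z\<in>PiE K X. restrict z Kn = xk} else 0)
       = (\<lambda>v. if v \<in> X k then P {z\<in>PiE G X. z k = v} (cyl G X C mw) else 0)"
      by (rule ext) (simp only: Rv)
    show ?thesis unfolding Kn_def[symmetric] eqf e1 by (rule co)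
  qed
  show ?thesis unfolding irr_ext_def using fcpR loc by auto
qed

end


lemma restrict_PiE_sub: "z \<in> PiE G X \<Longrightarrow> T \<subseteq> G \<Longrightarrow> restrict z T \<in> PiE T X"
  by (auto simp: PiE_def Pi_def)

context cnet
begin

lemma decomp:
  assumes P: "P \<in> irr_ext G par X M"
  shows "(\<Sum>z\<in>PiE G X. F (restrict z N) * f (restrict z K) * P {z} (PiE G X))
       = (\<Sum>w\<in>PiE N X. F w * Qof P {w} (PiE N X) * (\<Sum>u\<in>PiE K X. f u * Rof P w {u} (PiE K X)))"
proof -
  define Om where "Om = PiE G X"
  have fcpP: "full_cond_prob Om P" using irr_fcp[OF P] unfolding Om_def .
  have finOm: "finite Om" unfolding Om_def by (rule finO)
  have OmNe: "Om \<noteq> {}" unfolding Om_def using neOT[of G] by auto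
  have img1: "(\<lambda>z. restrict z N) ` Om \<subseteq> PiE N X" unfolding Om_def image_subset_iff
    using restrict_PiE_sub[OF _ NG] by (intro ballI)
  have img2: "(\<lambda>z. restrict z K) ` A \<subseteq> PiE K X" if "A \<subseteq> Om" for A unfolding image_subset_iff
  proof
    fix z assume "z \<in> A"
    hence "z \<in> PiE G X" using that unfolding Om_def by auto
    thus "restrict z K \<in> PiE K X" by (rule restrict_PiE_sub[OF _ KG])
  qed
  define H where "H z = F (restrict z N) * f (restrict z K) * P {z} Om" for z
  have "(\<Sum>z\<in>Om. H z) = (\<Sum>w\<in>PiE N X. \<Sum>z\<in>{z\<in>Om. restrict z N = w}. H z)"
    by (rule sum.group[symmetric, OF finOm finOT[OF NG] img1])
  also have "\<dots> = (\<Sum>w\<in>PiE N X. F w * Qof P {w} (PiE N X) * (\<Sum>u\<in>PiE K X. f u * Rof P w {u} (PiE K X)))"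
  proof (rule sum.cong[OF refl])
    fix w assume w: "w \<in> PiE N X"
    define Cw where "Cw = {z\<in>Om. restrict z N = w}"
    have Cw: "Cw = cyl G X N w" unfolding Cw_def Om_def by (rule restr_cyl[OF w])
    have CwO: "Cw \<subseteq> Om" unfolding Cw_def by auto
    have Cwne: "Cw \<noteq> {}" unfolding Cw by (rule cyl_ne[OF neX]) (use w NG in auto)
    have finCw: "finite Cw" using CwO finOm finite_subset by auto
    have "(\<Sum>z\<in>Cw. H z) = (\<Sum>u\<in>PiE K X. \<Sum>z\<in>{z\<in>Cw. restrict z K = u}. H z)"
      by (rule sum.group[symmetric, OF finCw finOT[OF KG] img2[OF CwO]])
    also have "\<dots> = (\<Sum>u\<in>PiE K X. F w * Qof P {w} (PiE N X) * (f u * Rof P w {u} (PiE K X)))"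
    proof (rule sum.cong[OF refl])
      fix u assume u: "u \<in> PiE K X"
      define Cwu where "Cwu = {z\<in>Cw. restrict z K = u}"
      have CwuO: "Cwu \<subseteq> Om" using CwO unfolding Cwu_def by auto
      have s1: "(\<Sum>z\<in>Cwu. H z) = (\<Sum>z\<in>Cwu. F w * f u * P {z} Om)"
        unfolding H_def Cwu_def Cw_def by (rule sum.cong) auto
      also have "\<dots> = F w * f u * P Cwu Om"
        by (simp add: sum_distrib_left fcp_sum[OF fcpP _ OmNe _ CwuO] finite_subset[OF CwuO finOm])
      finally have s1: "(\<Sum>z\<in>Cwu. H z) = F w * f u * P Cwu Om" .
      have "Cwu = pre G X K {u} \<inter> Cw" unfolding Cwu_def pre_def using CwO unfolding Om_def by blast
      hence "P Cwu Om = P (pre G X K {u} \<inter> Cw) Om" by simp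
      also have "P (pre G X K {u} \<inter> Cw) Om = P (pre G X K {u}) (Cw \<inter> Om) * P Cw Om"
        by (rule fcp_F2[OF fcpP]) (use pre_sub[of G X K "{u}"] CwO OmNe Cwne in \<open>auto simp: Om_def\<close>)
      also have "Cw \<inter> Om = Cw" using CwO by auto
      also have "P (pre G X K {u}) Cw = Rof P w {u} (PiE K X)"
      proof -
        have "Rof P w {u} (PiE K X) = P (pre G X K {u} \<inter> Cw) Cw"
        proof -
          have "PiE G X \<inter> Cw = Cw" using CwO unfolding Om_def by auto
          thus ?thesis unfolding Rof_def Cw[symmetric] using pre_all[OF KG, of X] by simp
        qed
        also have "\<dots> = P (pre G X K {u}) Cw"
          by (rule fcp_inter[OF fcpP, symmetric]) (use pre_sub[of G X K "{u}"] CwO Cwne in \<open>auto simp: Om_def\<close>)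
        finally show ?thesis by simp
      qed
      also have "P Cw Om = Qof P {w} (PiE N X)"
      proof -
        have "pre G X N {w} = Cw" unfolding pre_def Cw_def Om_def by auto
        thus ?thesis unfolding Qof_def using pre_all[OF NG, of X] unfolding Om_def by simp
      qed
      finally show "(\<Sum>z\<in>Cwu. H z) = F w * Qof P {w} (PiE N X) * (f u * Rof P w {u} (PiE K X))"
        using s1 by (simp add: algebra_simps)
    qed
    also have "\<dots> = F w * Qof P {w} (PiE N X) * (\<Sum>u\<in>PiE K X. f u * Rof P w {u} (PiE K X))"
      by (simp add: sum_distrib_left)
    finally show "(\<Sum>z\<in>{z\<in>Om. restrict z N = w}. H z) = F w * Qof P {w} (PiE N X) * (\<Sum>u\<in>PiE K X. f u * Rof P w {u} (PiE K X))"
      unfolding Cw_def .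
  qed
  finally show ?thesis unfolding H_def Om_def .
qed

lemma lower_bound:
  assumes P: "P \<in> irr_ext G par X M" and xP: "xP \<in> PiE PK X"
    and Fnn: "\<forall>w\<in>PiE N X. F w \<ge> 0" and Find: "\<forall>w\<in>PiE N X. F w \<noteq> 0 \<longrightarrow> restrict w PK = xP"
  shows "lowE_sub K par X M xP f * (\<Sum>w\<in>PiE N X. F w * Qof P {w} (PiE N X))
         \<le> (\<Sum>z\<in>PiE G X. F (restrict z N) * f (restrict z K) * P {z} (PiE G X))"
proof -
  define a where "a = lowE_sub K par X M xP f"
  have fcpQ: "full_cond_prob (PiE N X) (Qof P)" using irr_fcp[OF Q_irr[OF P]] .
  have "a * (\<Sum>w\<in>PiE N X. F w * Qof P {w} (PiE N X)) = (\<Sum>w\<in>PiE N X. F w * Qof P {w} (PiE N X) * a)"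
    by (simp add: sum_distrib_left algebra_simps)
  also have "\<dots> \<le> (\<Sum>w\<in>PiE N X. F w * Qof P {w} (PiE N X) * (\<Sum>u\<in>PiE K X. f u * Rof P w {u} (PiE K X)))"
  proof (rule sum_mono)
    fix w assume w: "w \<in> PiE N X"
    show "F w * Qof P {w} (PiE N X) * a \<le> F w * Qof P {w} (PiE N X) * (\<Sum>u\<in>PiE K X. f u * Rof P w {u} (PiE K X))"
    proof (cases "F w = 0")
      case True thus ?thesis by simp
    next
      case False
      hence rw: "restrict w PK = xP" using Find w by auto
      have Rirr: "Rof P w \<in> irr_ext K (sub_pa par K) X (sub_M par M K xP)" using R_irr[OF P w] rw by simp
      have "a \<le> (\<Sum>u\<in>PiE K X. f u * Rof P w {u} (PiE K X))"
        unfolding a_def lowE_sub_def lowE_irr_def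
      proof (rule cInf_lower)
        show "(\<Sum>u\<in>PiE K X. f u * Rof P w {u} (PiE K X)) \<in> {\<Sum>z\<in>PiE K X. f z * P {z} (PiE K X) |P. P \<in> irr_ext K (sub_pa par K) X (sub_M par M K xP)}"
          using Rirr by blast
        show "bdd_below {\<Sum>z\<in>PiE K X. f z * P {z} (PiE K X) |P. P \<in> irr_ext K (sub_pa par K) X (sub_M par M K xP)}"
          by (rule bdd_below_expect) (use irr_fcp[of _ K "sub_pa par K" X "sub_M par M K xP"] neOT[OF KG] finOT[OF KG] in auto)
      qed
      moreover have "F w * Qof P {w} (PiE N X) \<ge> 0"
        using Fnn w fcp_single_bounds(1)[OF fcpQ neOT[OF NG] w] by auto
      ultimately show ?thesis by (simp add: mult_left_mono)
    qed
  qed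
  also have "\<dots> = (\<Sum>z\<in>PiE G X. F (restrict z N) * f (restrict z K) * P {z} (PiE G X))"
    by (rule decomp[OF P, symmetric])
  finally show ?thesis unfolding a_def .
qed

end


lemma diag_subseq:
  fixes x :: "nat \<Rightarrow> 'i \<Rightarrow> real"
  assumes "finite I" "\<forall>n. \<forall>i\<in>I. \<bar>x n i\<bar> \<le> Bd"
  shows "\<exists>\<sigma>. strict_mono \<sigma> \<and> (\<forall>i\<in>I. convergent (\<lambda>n. x (\<sigma> n) i))"
  using assms
proof (induction I rule: finite_induct)
  case empty
  show ?case by (rule exI[of _ id]) (auto simp: strict_mono_def)
next
  case (insert i I)
  then obtain \<sigma> where \<sigma>: "strict_mono \<sigma>" "\<forall>j\<in>I. convergent (\<lambda>n. x (\<sigma> n) j)" by auto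
  define y where "y n = x (\<sigma> n) i" for n
  have "bounded (range y)" unfolding bounded_iff y_def using insert.prems by auto
  then obtain l r where r: "strict_mono (r::nat\<Rightarrow>nat)" "(y \<circ> r) \<longlonglongrightarrow> l"
    using bounded_imp_convergent_subsequence by blast
  show ?case
  proof (rule exI[of _ "\<sigma> \<circ> r"], intro conjI ballI)
    show "strict_mono (\<sigma> \<circ> r)" by (rule strict_mono_o[OF \<sigma>(1) r(1)])
    fix j assume j: "j \<in> insert i I"
    show "convergent (\<lambda>n. x ((\<sigma> \<circ> r) n) j)"
    proof (cases "j = i")
      case True thus ?thesis using r(2) unfolding y_def convergent_def comp_def by auto
    next
      case False
      hence "j \<in> I" using j by auto
      then obtain L where "(\<lambda>n. x (\<sigma> n) j) \<longlonglongrightarrow> L" using \<sigma>(2) unfolding convergent_def by auto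
      hence "((\<lambda>n. x (\<sigma> n) j) \<circ> r) \<longlonglongrightarrow> L" by (rule LIMSEQ_subseq_LIMSEQ[OF _ r(1)])
      thus ?thesis unfolding convergent_def comp_def by auto
    qed
  qed
qed

definition ratio :: "('a \<Rightarrow> real) \<Rightarrow> 'a set \<Rightarrow> 'a set \<Rightarrow> real" where
  "ratio p A B = sum p (A \<inter> B) / sum p B"

lemma ratio_facts:
  fixes p :: "'a \<Rightarrow> real"
  assumes fin: "finite Om" and pos: "\<forall>z\<in>Om. p z > 0" and B: "B \<subseteq> Om" "B \<noteq> {}"
  shows "sum p B > 0"
    and "A \<subseteq> Om \<Longrightarrow> 0 \<le> ratio p A B" and "A \<subseteq> Om \<Longrightarrow> ratio p A B \<le> 1"
    and "ratio p Om B = 1" and "ratio p B B = 1"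
    and "A \<inter> C = {} \<Longrightarrow> ratio p (A \<union> C) B = ratio p A B + ratio p C B"
    and "C \<subseteq> Om \<Longrightarrow> C \<inter> B \<noteq> {} \<Longrightarrow> ratio p (A \<inter> C) B = ratio p A (C \<inter> B) * ratio p C B"
proof -
  have finB: "finite B" using B fin finite_subset by auto
  show sB: "sum p B > 0" using sum_pos[OF finB B(2)] pos B by auto
  have nn: "0 \<le> sum p (A \<inter> B)" for A
  proof (intro sum_nonneg)
    fix x assume "x \<in> A \<inter> B"
    hence "x \<in> Om" using B by auto
    thus "0 \<le> p x" using pos by (simp add: less_imp_le)
  qed
  show "0 \<le> ratio p A B" if "A \<subseteq> Om" unfolding ratio_def using nn sB by auto
  show "ratio p A B \<le> 1" if "A \<subseteq> Om"
  proof -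
    have pB: "\<forall>z\<in>B. 0 \<le> p z" using pos B by (auto simp: less_imp_le subset_iff)
    have "sum p (A \<inter> B) \<le> sum p B" using pB finB by (intro sum_mono2) auto
    thus ?thesis unfolding ratio_def using sB by auto
  qed
  show "ratio p Om B = 1" unfolding ratio_def using B sB by (simp add: Int_absorb1)
  show "ratio p B B = 1" unfolding ratio_def using sB by simp
  show "ratio p (A \<union> C) B = ratio p A B + ratio p C B" if "A \<inter> C = {}"
  proof -
    have "(A \<union> C) \<inter> B = (A \<inter> B) \<union> (C \<inter> B)" by auto
    hence "sum p ((A \<union> C) \<inter> B) = sum p (A \<inter> B) + sum p (C \<inter> B)"
      using that finB by (simp add: sum.union_disjoint disjoint_iff)
    thus ?thesis unfolding ratio_def by (simp add: add_divide_distrib)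
  qed
  show "ratio p (A \<inter> C) B = ratio p A (C \<inter> B) * ratio p C B" if "C \<subseteq> Om" "C \<inter> B \<noteq> {}"
  proof -
    have "finite (C \<inter> B)" using finB by auto
    hence "sum p (C \<inter> B) > 0" using sum_pos[of "C \<inter> B" p] that pos B by auto
    moreover have "A \<inter> C \<inter> B = A \<inter> (C \<inter> B)" "C \<inter> B \<inter> B = C \<inter> B" by auto
    ultimately show ?thesis unfolding ratio_def by (simp add: Int_assoc)
  qed
qed

lemma ratio_limit:
  fixes p :: "nat \<Rightarrow> 'a \<Rightarrow> real"
  assumes fin: "finite Om" and pos: "\<forall>n. \<forall>z\<in>Om. p n z > 0"
  shows "\<exists>\<sigma> P. strict_mono \<sigma> \<and> full_cond_prob Om P \<and>
     (\<forall>A B. A \<subseteq> Om \<longrightarrow> B \<subseteq> Om \<longrightarrow> B \<noteq> {} \<longrightarrow> (\<lambda>n. ratio (p (\<sigma> n)) A B) \<longlonglongrightarrow> P A B)"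
proof -
  define I where "I = Pow Om \<times> {B. B \<subseteq> Om \<and> B \<noteq> {}}"
  define x where "x n i = ratio (p n) (fst i) (snd i)" for n i
  have finI: "finite I" unfolding I_def using fin by auto
  have bd: "\<forall>n. \<forall>i\<in>I. \<bar>x n i\<bar> \<le> 1"
  proof (intro allI ballI)
    fix n i assume i: "i \<in> I"
    obtain A B where AB: "i = (A, B)" "A \<subseteq> Om" "B \<subseteq> Om" "B \<noteq> {}" using i unfolding I_def by auto
    have pn: "\<forall>z\<in>Om. p n z > 0" using pos by auto
    have "0 \<le> ratio (p n) A B" "ratio (p n) A B \<le> 1"
      using ratio_facts(2,3)[OF fin pn AB(3,4) AB(2)] by auto
    thus "\<bar>x n i\<bar> \<le> 1" unfolding x_def AB(1) by auto
  qed
  obtain \<sigma> where \<sigma>: "strict_mono \<sigma>" "\<forall>i\<in>I. convergent (\<lambda>n. x (\<sigma> n) i)"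
    using diag_subseq[OF finI bd] by blast
  define P where "P A B = lim (\<lambda>n. ratio (p (\<sigma> n)) A B)" for A B
  have lim: "(\<lambda>n. ratio (p (\<sigma> n)) A B) \<longlonglongrightarrow> P A B" if "A \<subseteq> Om" "B \<subseteq> Om" "B \<noteq> {}" for A B
  proof -
    have "(A, B) \<in> I" unfolding I_def using that by auto
    hence "convergent (\<lambda>n. ratio (p (\<sigma> n)) A B)" using \<sigma>(2) unfolding x_def by auto
    thus ?thesis unfolding P_def by (simp add: convergent_LIMSEQ_iff)
  qed
  have fcp: "full_cond_prob Om P"
    unfolding full_cond_prob_def
  proof (intro conjI allI impI)
    fix B assume B: "B \<subseteq> Om \<and> B \<noteq> {}"
    note rf = ratio_facts[OF fin _ conjunct1[OF B] conjunct2[OF B]]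
    show "0 \<le> P A B" if "A \<subseteq> Om" for A
      using LIMSEQ_le_const[OF lim[OF that conjunct1[OF B] conjunct2[OF B]]] rf(2)[OF _ that] pos by blast
    show "P Om B = 1"
      using LIMSEQ_unique[OF lim[OF _ conjunct1[OF B] conjunct2[OF B], of Om]] rf(4) pos by auto
    show "P B B = 1"
      using LIMSEQ_unique[OF lim[OF conjunct1[OF B] conjunct1[OF B] conjunct2[OF B]]] rf(5) pos by auto
    show "P (A \<union> C) B = P A B + P C B" if "A \<subseteq> Om \<and> C \<subseteq> Om \<and> A \<inter> C = {}" for A C
    proof -
      have "(\<lambda>n. ratio (p (\<sigma> n)) (A \<union> C) B) = (\<lambda>n. ratio (p (\<sigma> n)) A B + ratio (p (\<sigma> n)) C B)"
        using rf(6) that pos by auto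
      moreover have "(\<lambda>n. ratio (p (\<sigma> n)) A B + ratio (p (\<sigma> n)) C B) \<longlonglongrightarrow> P A B + P C B"
        by (intro tendsto_add lim) (use that B in auto)
      moreover have "(\<lambda>n. ratio (p (\<sigma> n)) (A \<union> C) B) \<longlonglongrightarrow> P (A \<union> C) B"
        by (rule lim) (use that B in auto)
      ultimately show ?thesis using LIMSEQ_unique by metis
    qed
  next
    fix A B C assume a: "A \<subseteq> Om \<and> B \<subseteq> Om \<and> C \<subseteq> Om \<and> B \<noteq> {} \<and> C \<inter> B \<noteq> {}"
    have e: "(\<lambda>n. ratio (p (\<sigma> n)) (A \<inter> C) B) = (\<lambda>n. ratio (p (\<sigma> n)) A (C \<inter> B) * ratio (p (\<sigma> n)) C B)"
      using ratio_facts(7)[OF fin _ _ _ ] a pos by auto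
    have "(\<lambda>n. ratio (p (\<sigma> n)) A (C \<inter> B) * ratio (p (\<sigma> n)) C B) \<longlonglongrightarrow> P A (C \<inter> B) * P C B"
      by (intro tendsto_mult lim) (use a in auto)
    moreover have "(\<lambda>n. ratio (p (\<sigma> n)) (A \<inter> C) B) \<longlonglongrightarrow> P (A \<inter> C) B"
      by (rule lim) (use a in auto)
    ultimately show "P (A \<inter> C) B = P A (C \<inter> B) * P C B" using e LIMSEQ_unique by metis
  qed
  show ?thesis using \<sigma>(1) fcp lim by blast
qed


lemma approx:
  fixes P :: "'a set \<Rightarrow> 'a set \<Rightarrow> real"
  assumes fin: "finite Om" and ne: "Om \<noteq> {}" and fcp: "full_cond_prob Om P"
  shows "\<exists>p. (\<forall>n. \<forall>z\<in>Om. p n z > 0) \<and> (\<forall>n. sum (p n) Om = 1) \<and>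
     (\<forall>A B. A \<subseteq> Om \<longrightarrow> B \<subseteq> Om \<longrightarrow> B \<noteq> {} \<longrightarrow> (\<lambda>n. ratio (p n) A B) \<longlonglongrightarrow> P A B)"
proof -
  define step where "step B = B - {w\<in>B. P {w} B > 0}" for B
  define Bs where "Bs i = (step ^^ i) Om" for i
  have Bs0: "Bs 0 = Om" unfolding Bs_def by simp
  have BsS: "Bs (Suc i) = step (Bs i)" for i unfolding Bs_def by simp
  have BsSsub: "Bs (Suc i) \<subseteq> Bs i" for i unfolding BsS step_def by auto
  have Bsle: "i \<le> j \<Longrightarrow> Bs j \<subseteq> Bs i" for i j
    by (induction j rule: dec_induct) (use BsSsub in auto)
  have BsO: "Bs i \<subseteq> Om" for i using Bsle[of 0 i] Bs0 by auto
  have finBs: "finite (Bs i)" for i using finite_subset[OF BsO fin] .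
  have posex: "Bs i \<noteq> {} \<Longrightarrow> \<exists>w\<in>Bs i. P {w} (Bs i) > 0" for i
  proof (rule ccontr)
    assume a: "Bs i \<noteq> {}" "\<not> (\<exists>w\<in>Bs i. P {w} (Bs i) > 0)"
    have "(\<Sum>w\<in>Bs i. P {w} (Bs i)) \<le> 0" using a by (intro sum_nonpos) auto
    thus False using fcp_sum_one[OF fcp BsO a(1) fin] by simp
  qed
  have cardb: "Bs i = {} \<or> card (Bs i) + i \<le> card Om" for i
  proof (induction i)
    case 0 thus ?case using Bs0 by simp
  next
    case (Suc i)
    show ?case
    proof (cases "Bs (Suc i) = {}")
      case False
      hence ne_i: "Bs i \<noteq> {}" using BsSsub[of i] by auto
      then obtain w where w: "w \<in> Bs i" "P {w} (Bs i) > 0" using posex by auto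
      hence "w \<notin> Bs (Suc i)" unfolding BsS step_def by auto
      hence "Bs (Suc i) \<subset> Bs i" using BsSsub w by auto
      hence "card (Bs (Suc i)) < card (Bs i)" using psubset_card_mono finBs by auto
      thus ?thesis using Suc ne_i by auto
    qed simp
  qed
  have empty: "Bs (Suc (card Om)) = {}" using cardb[of "Suc (card Om)"] by auto
  define lev where "lev w = (LEAST i. w \<notin> Bs (Suc i))" for w
  have levP: "w \<notin> Bs (Suc (lev w))" for w unfolding lev_def by (rule LeastI[of _ "card Om"]) (use empty in auto)
  have mem_iff: "w \<in> Om \<Longrightarrow> (w \<in> Bs i \<longleftrightarrow> i \<le> lev w)" for w i
  proof
    assume w: "w \<in> Om" "w \<in> Bs i"
    show "i \<le> lev w"
    proof (rule ccontr)
      assume "\<not> i \<le> lev w"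
      hence "Bs i \<subseteq> Bs (Suc (lev w))" using Bsle by auto
      thus False using w levP by auto
    qed
  next
    assume w: "w \<in> Om" "i \<le> lev w"
    show "w \<in> Bs i"
    proof (cases i)
      case 0 thus ?thesis using w Bs0 by simp
    next
      case (Suc j)
      hence "j < lev w" using w by auto
      thus ?thesis using not_less_Least[of j "\<lambda>i. w \<notin> Bs (Suc i)"] Suc unfolding lev_def by auto
    qed
  qed
  define wt where "wt w = P {w} (Bs (lev w))" for w
  have wpos: "w \<in> Om \<Longrightarrow> wt w > 0" for w
  proof -
    assume w: "w \<in> Om"
    have "w \<in> Bs (lev w)" using mem_iff[OF w] by auto
    moreover have "w \<notin> step (Bs (lev w))" using levP BsS by metis
    ultimately show "wt w > 0" unfolding wt_def step_def by auto
  qed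
  have zero: "w \<in> Bs (Suc j) \<Longrightarrow> P {w} (Bs j) = 0" for w j
  proof -
    assume w: "w \<in> Bs (Suc j)"
    hence wj: "w \<in> Bs j" using BsSsub by auto
    have "\<not> P {w} (Bs j) > 0" using w unfolding BsS step_def by auto
    moreover have "P {w} (Bs j) \<ge> 0"
    proof (rule fcp_F1(1)[OF fcp BsO])
      show "Bs j \<noteq> {}" using wj by auto
      show "{w} \<subseteq> Om" using wj BsO by auto
    qed
    ultimately show ?thesis by auto
  qed
  define e where "e n = inverse (real (Suc (Suc n)))" for n
  have epos: "e n > 0" for n unfolding e_def by auto
  have elim: "e \<longlonglongrightarrow> 0"
    unfolding e_def using LIMSEQ_Suc[OF LIMSEQ_inverse_real_of_nat] by simp
  define p0 where "p0 n w = wt w * e n ^ lev w" for n w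
  define p where "p n w = p0 n w / sum (p0 n) Om" for n w
  have p0pos: "w \<in> Om \<Longrightarrow> p0 n w > 0" for n w unfolding p0_def using wpos epos by auto
  have S0pos: "sum (p0 n) Om > 0" for n using sum_pos[OF fin ne] p0pos by auto
  have ppos: "\<forall>n. \<forall>z\<in>Om. p n z > 0" unfolding p_def using p0pos S0pos by auto
  have psum: "\<forall>n. sum (p n) Om = 1"
  proof
    fix n show "sum (p n) Om = 1" unfolding p_def using S0pos[of n] by (simp add: sum_divide_distrib[symmetric])
  qed
  have pratio: "ratio (p n) A B = ratio (p0 n) A B" for n A B
    unfolding ratio_def p_def using S0pos[of n] by (simp add: sum_divide_distrib[symmetric])
  have conv: "(\<lambda>n. ratio (p n) A B) \<longlonglongrightarrow> P A B" if A: "A \<subseteq> Om" and B: "B \<subseteq> Om" "B \<noteq> {}" for A B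
  proof -
    have finB: "finite B" using B fin finite_subset by auto
    define j where "j = Min (lev ` B)"
    have jle: "w \<in> B \<Longrightarrow> j \<le> lev w" for w unfolding j_def using finB by auto
    have "j \<in> lev ` B" unfolding j_def by (rule Min_in) (use finB B in auto)
    then obtain w0 where w0: "w0 \<in> B" "lev w0 = j" by auto
    have BBj: "B \<subseteq> Bs j" using mem_iff jle B by auto
    have Bjne: "Bs j \<noteq> {}" using BBj B by auto
    define g where "g w = (if lev w = j then wt w else 0)" for w
    have Pj: "P {w} (Bs j) = g w" if "w \<in> B" for w
    proof (cases "lev w = j")
      case True thus ?thesis unfolding g_def wt_def by simp
    next
      case False
      hence "Suc j \<le> lev w" using jle[OF that] by auto
      hence "w \<in> Bs (Suc j)" using mem_iff that B by auto
      thus ?thesis using zero False unfolding g_def by auto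
    qed
    have Pw: "P {w} (Bs j) = P {w} B * P B (Bs j)" if "w \<in> B" for w
    proof -
      have "P ({w} \<inter> B) (Bs j) = P {w} (B \<inter> Bs j) * P B (Bs j)"
        by (rule fcp_F2[OF fcp]) (use that B BsO Bjne BBj in auto)
      moreover have "{w} \<inter> B = {w}" "B \<inter> Bs j = B" using that BBj by auto
      ultimately show ?thesis by simp
    qed
    define W where "W = (\<Sum>w\<in>B. g w)"
    have PBj: "P B (Bs j) = W"
      unfolding W_def using fcp_sum[OF fcp BsO Bjne finB B(1)] Pj by simp
    have Wpos: "W > 0"
    proof -
      have "g w0 > 0" using w0 wpos B unfolding g_def by auto
      moreover have "\<forall>w\<in>B. g w \<ge> 0" using wpos B unfolding g_def by (auto simp: less_imp_le subset_iff)
      ultimately show ?thesis unfolding W_def using finB w0 by (metis sum_pos2)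
    qed
    have PAB: "P A B = (\<Sum>w\<in>A \<inter> B. g w) / W"
    proof -
      have "P A B = P (A \<inter> B) B" by (rule fcp_inter[OF fcp A B])
      also have "\<dots> = (\<Sum>w\<in>A \<inter> B. P {w} B)" by (rule fcp_sum[OF fcp B]) (use finB A in auto)
      also have "\<dots> = (\<Sum>w\<in>A \<inter> B. g w / W)"
        by (rule sum.cong[OF refl]) (use Pw Pj PBj Wpos in \<open>auto simp: field_simps\<close>)
      finally show ?thesis by (simp add: sum_divide_distrib)
    qed
    define h where "h n w = wt w * e n ^ (lev w - j)" for n w
    have p0h: "p0 n w = e n ^ j * h n w" if "w \<in> B" for n w
    proof -
      have "lev w = j + (lev w - j)" using jle[OF that] by auto
      hence "e n ^ lev w = e n ^ j * e n ^ (lev w - j)" by (metis power_add)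
      thus ?thesis unfolding p0_def h_def by simp
    qed
    have rat: "ratio (p0 n) A B = (\<Sum>w\<in>A \<inter> B. h n w) / (\<Sum>w\<in>B. h n w)" for n
    proof -
      have "sum (p0 n) (A \<inter> B) = e n ^ j * (\<Sum>w\<in>A \<inter> B. h n w)"
        by (simp add: sum_distrib_left p0h)
      moreover have "sum (p0 n) B = e n ^ j * (\<Sum>w\<in>B. h n w)"
        by (simp add: sum_distrib_left p0h)
      moreover have "e n ^ j > 0" using epos by auto
      ultimately show ?thesis unfolding ratio_def using epos[of n] by simp
    qed
    have hlim: "(\<lambda>n. h n w) \<longlonglongrightarrow> g w" if "w \<in> B" for w
    proof -
      have "(\<lambda>n. wt w * e n ^ (lev w - j)) \<longlonglongrightarrow> wt w * 0 ^ (lev w - j)"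
        by (intro tendsto_intros elim)
      moreover have "wt w * 0 ^ (lev w - j) = g w" using jle[OF that] unfolding g_def by auto
      ultimately show ?thesis unfolding h_def by simp
    qed
    have "(\<lambda>n. (\<Sum>w\<in>A \<inter> B. h n w) / (\<Sum>w\<in>B. h n w)) \<longlonglongrightarrow> (\<Sum>w\<in>A \<inter> B. g w) / W"
      unfolding W_def
      by (intro tendsto_divide tendsto_sum) (use hlim Wpos W_def in auto)
    thus ?thesis unfolding pratio rat PAB .
  qed
  show ?thesis using ppos psum conv by blast
qed


definition cm :: "('n \<Rightarrow> 'v set) \<Rightarrow> 'n set \<Rightarrow> (('n \<Rightarrow> 'v) \<Rightarrow> real) \<Rightarrow> 'n set \<Rightarrow> ('n \<Rightarrow> 'v) \<Rightarrow> real" where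
  "cm X T h C z = (\<Sum>u\<in>PiE T X. if \<forall>t\<in>C. u t = z t then h u else 0)"

context cnet
begin

lemma fib_restrict_bij:
  assumes T: "T \<subseteq> G" and y: "y \<in> PiE G X"
  shows "bij_betw (\<lambda>y'. restrict y' T) (fib G X T y) (PiE T X)"
proof (rule bij_betwI')
  fix a b assume a: "a \<in> fib G X T y" and b: "b \<in> fib G X T y"
  show "(restrict a T = restrict b T) = (a = b)"
  proof
    assume e: "restrict a T = restrict b T"
    show "a = b"
    proof
      fix t show "a t = b t"
      proof (cases "t \<in> T")
        case True thus ?thesis using e by (metis restrict_apply')
      next
        case False
        show ?thesis
        proof (cases "t \<in> G")
          case True thus ?thesis using a b False unfolding fib_def by auto
        next
          case False thus ?thesis using a b unfolding fib_def by (auto simp: PiE_def extensional_def)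
        qed
      qed
    qed
  qed simp
next
  fix a assume "a \<in> fib G X T y"
  thus "restrict a T \<in> PiE T X" using T unfolding fib_def by (auto simp: PiE_def Pi_def)
next
  fix u assume u: "u \<in> PiE T X"
  define a where "a = (\<lambda>t. if t \<in> T then u t else y t)"
  have "a \<in> PiE G X" using u y T unfolding a_def by (auto simp: PiE_def Pi_def extensional_def)
  hence "a \<in> fib G X T y" unfolding fib_def a_def by auto
  moreover have "u = restrict a T" using u unfolding a_def by (auto simp: PiE_def extensional_def fun_eq_iff)
  ultimately show "\<exists>a\<in>fib G X T y. u = restrict a T" by blast
qed

lemma fib_restrict_sum:
  assumes "T \<subseteq> G" "y \<in> PiE G X"
  shows "(\<Sum>y'\<in>fib G X T y. F (restrict y' T)) = (\<Sum>u\<in>PiE T X. F u)"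
  by (rule sum.reindex_bij_betw[OF fib_restrict_bij[OF assms]])

lemma cm_cyl: "T \<subseteq> G \<Longrightarrow> cm X T h C z = sum h (cyl T X C z)"
  unfolding cm_def cyl_def by (rule sum.inter_filter[symmetric]) (rule finOT)

lemma count1:
  assumes T: "T \<subseteq> G" and V: "V \<subseteq> C" "V \<subseteq> T" and y: "y \<in> PiE G X" and u: "u \<in> PiE T X"
  shows "(\<Sum>y1\<in>fib G X V y. if \<forall>t\<in>C. u t = y1 t then (1::real) else 0) = (if \<forall>t\<in>C - V. u t = y t then 1 else 0)"
proof -
  have agree: "y1 t = y t" if "y1 \<in> fib G X V y" "t \<notin> V" for y1 t
  proof (cases "t \<in> G")
    case True thus ?thesis using that unfolding fib_def by auto
  next
    case False thus ?thesis using that y unfolding fib_def by (auto simp: PiE_def extensional_def)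
  qed
  have finF: "finite (fib G X V y)" using finite_fib finG finX by blast
  have eq: "(\<Sum>y1\<in>fib G X V y. if \<forall>t\<in>C. u t = y1 t then (1::real) else 0) = real (card {y1\<in>fib G X V y. \<forall>t\<in>C. u t = y1 t})"
    using sum.inter_filter[OF finF, of "\<lambda>_. (1::real)" "\<lambda>y1. \<forall>t\<in>C. u t = y1 t"] by simp
  show ?thesis
  proof (cases "\<forall>t\<in>C - V. u t = y t")
    case True
    define ys where "ys = (\<lambda>t. if t \<in> V then u t else y t)"
    have ysF: "ys \<in> fib G X V y"
    proof -
      have "ys \<in> PiE G X" using u y V T unfolding ys_def by (auto simp: PiE_def Pi_def extensional_def)
      thus ?thesis unfolding fib_def ys_def by auto
    qed
    have "{y1\<in>fib G X V y. \<forall>t\<in>C. u t = y1 t} = {ys}"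
    proof
      show "{ys} \<subseteq> {y1\<in>fib G X V y. \<forall>t\<in>C. u t = y1 t}" using ysF True unfolding ys_def by auto
      show "{y1\<in>fib G X V y. \<forall>t\<in>C. u t = y1 t} \<subseteq> {ys}"
      proof
        fix y1 assume y1: "y1 \<in> {y1\<in>fib G X V y. \<forall>t\<in>C. u t = y1 t}"
        have "y1 = ys"
        proof
          fix t show "y1 t = ys t"
            using y1 agree[of y1 t] V unfolding ys_def by auto
        qed
        thus "y1 \<in> {ys}" by simp
      qed
    qed
    thus ?thesis using eq True by simp
  next
    case False
    then obtain t where t: "t \<in> C - V" "u t \<noteq> y t" by auto
    have e0: "{y1\<in>fib G X V y. \<forall>t\<in>C. u t = y1 t} = {}"
      using agree t by force
    have "card {y1\<in>fib G X V y. \<forall>t\<in>C. u t = y1 t} = 0" unfolding e0 by simp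
    thus ?thesis using eq False by simp
  qed
qed

lemma cm_marg:
  assumes T: "T \<subseteq> G" and V: "V \<subseteq> C" "V \<subseteq> T" and y: "y \<in> PiE G X"
  shows "(\<Sum>y1\<in>fib G X V y. cm X T h C y1) = cm X T h (C - V) y"
proof -
  have "(\<Sum>y1\<in>fib G X V y. cm X T h C y1) = (\<Sum>y1\<in>fib G X V y. \<Sum>u\<in>PiE T X. h u * (if \<forall>t\<in>C. u t = y1 t then 1 else 0))"
    unfolding cm_def by (intro sum.cong refl) auto
  also have "\<dots> = (\<Sum>u\<in>PiE T X. \<Sum>y1\<in>fib G X V y. h u * (if \<forall>t\<in>C. u t = y1 t then 1 else 0))"
    by (rule sum.swap)
  also have "\<dots> = (\<Sum>u\<in>PiE T X. h u * (if \<forall>t\<in>C - V. u t = y t then 1 else 0))"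
    by (intro sum.cong refl) (simp add: sum_distrib_left[symmetric] count1[OF T V y])
  also have "\<dots> = cm X T h (C - V) y" unfolding cm_def by (intro sum.cong refl) auto
  finally show ?thesis .
qed

lemma cm_full:
  assumes T: "T \<subseteq> G" and z: "z \<in> PiE G X"
  shows "cm X T h T z = h (restrict z T)"
proof -
  have "cyl T X T z = {restrict z T}"
    using z T unfolding cyl_def by (auto simp: PiE_def Pi_def extensional_def fun_eq_iff)
  thus ?thesis using cm_cyl[OF T] by simp
qed

lemma cm_empty: "T \<subseteq> G \<Longrightarrow> cm X T h {} z = sum h (PiE T X)"
  unfolding cm_def by simp

lemma cm_local:
  assumes "\<forall>t\<in>C. z t = z' t"
  shows "cm X T h C z = cm X T h C z'"
  unfolding cm_def using assms by simp

lemma node_sets: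
  assumes s: "s \<in> G" and z0: "z0 \<in> PiE G X"
  shows "{z\<in>PiE G X. z s = z0 s} \<inter> cyl G X (nondesc G par s) z0 = fib G X (desc G par s) z0"
    and "cyl G X (nondesc G par s) z0 = fib G X ({s} \<union> desc G par s) z0"
proof -
  have G1: "G - desc G par s = {s} \<union> nondesc G par s" using partition_s[OF s] desc_nondesc_disj s_notin_desc nondesc_iff by auto
  have G2: "G - ({s} \<union> desc G par s) = nondesc G par s" using partition_s[OF s] desc_nondesc_disj s_notin_desc nondesc_iff by auto
  show "{z\<in>PiE G X. z s = z0 s} \<inter> cyl G X (nondesc G par s) z0 = fib G X (desc G par s) z0"
    unfolding fib_def cyl_def G1 by auto
  show "cyl G X (nondesc G par s) z0 = fib G X ({s} \<union> desc G par s) z0"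
    unfolding fib_def cyl_def G2 by auto
qed

lemma node_ratio:
  fixes p :: "('a \<Rightarrow> 'v) \<Rightarrow> real"
  assumes s: "s \<in> G" and z0: "z0 \<in> PiE G X"
    and num: "\<forall>v\<in>X s. sum p (fib G X (desc G par s) (z0(s:=v))) = Fac * \<gamma> v" and Fac: "Fac \<noteq> 0"
  shows "ratio p {z\<in>PiE G X. z s = z0 s} (cyl G X (nondesc G par s) z0) = \<gamma> (z0 s) / (\<Sum>v\<in>X s. \<gamma> v)"
proof -
  have z0s: "z0 s \<in> X s" using z0 s by auto
  have up: "z0(s := z0 s) = z0" by simp
  have "sum p (cyl G X (nondesc G par s) z0) = (\<Sum>v\<in>X s. sum p (fib G X (desc G par s) (z0(s:=v))))"
  proof -
    have "sum p (cyl G X (nondesc G par s) z0) = (\<Sum>y1\<in>fib G X {s} z0. sum p (fib G X (desc G par s) y1))"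
      unfolding node_sets(2)[OF s z0] by (rule fib_split[OF finG finX _ z0]) (use s_notin_desc in auto)
    also have "\<dots> = (\<Sum>v\<in>X s. sum p (fib G X (desc G par s) (z0(s:=v))))"
      by (rule sum_fib_single[OF s z0])
    finally show ?thesis .
  qed
  also have "\<dots> = Fac * (\<Sum>v\<in>X s. \<gamma> v)" using num by (simp add: sum_distrib_left)
  finally have den: "sum p (cyl G X (nondesc G par s) z0) = Fac * (\<Sum>v\<in>X s. \<gamma> v)" .
  have "sum p ({z\<in>PiE G X. z s = z0 s} \<inter> cyl G X (nondesc G par s) z0) = Fac * \<gamma> (z0 s)"
    using num z0s up unfolding node_sets(1)[OF s z0] by metis
  thus ?thesis unfolding ratio_def den using Fac by simp
qed

end


context cnet
begin

definition ch :: "'a \<Rightarrow> ('a \<Rightarrow> 'v) \<Rightarrow> 'v \<Rightarrow> real" where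
  "ch t y = (SOME p. p \<in> M t y)"

definition ee :: "nat \<Rightarrow> real" where
  "ee n = inverse (real (Suc (Suc n)))"

definition cc :: "nat \<Rightarrow> 'a \<Rightarrow> ('a \<Rightarrow> 'v) \<Rightarrow> real" where
  "cc n t z = (1 - ee n) * ch t (restrict z (par t)) (z t) + ee n / real (card (X t))"

lemma ee_bounds: "0 < ee n" "ee n < 1" unfolding ee_def by (auto simp: field_simps)

lemma ee_lim: "ee \<longlonglongrightarrow> 0"
  unfolding ee_def using LIMSEQ_Suc[OF LIMSEQ_inverse_real_of_nat] by simp

lemma restr_par_PiE: "t \<in> G \<Longrightarrow> z \<in> PiE G X \<Longrightarrow> restrict z (par t) \<in> PiE (par t) X"
  using pa_sub by (auto simp: PiE_def Pi_def)

lemma ch_in: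
  assumes "t \<in> G" "y \<in> PiE (par t) X"
  shows "ch t y \<in> M t y" "is_pmf_on (X t) (ch t y)"
proof -
  have "M t y \<noteq> {}" using Mprops[OF assms] by auto
  thus "ch t y \<in> M t y" unfolding ch_def by (simp add: some_in_eq)
  thus "is_pmf_on (X t) (ch t y)" using Mprops[OF assms] by auto
qed

lemma cc_pos:
  assumes t: "t \<in> G" and z: "z \<in> PiE G X"
  shows "cc n t z > 0"
proof -
  have pmf: "is_pmf_on (X t) (ch t (restrict z (par t)))" using ch_in(2)[OF t restr_par_PiE[OF t z]] .
  have "z t \<in> X t" using z t by auto
  hence "ch t (restrict z (par t)) (z t) \<ge> 0" using pmf unfolding is_pmf_on_def by auto
  moreover have "card (X t) > 0" using finX neX t by (simp add: card_gt_0_iff)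
  ultimately show ?thesis unfolding cc_def using ee_bounds[of n] by (simp add: add_nonneg_pos)
qed

lemma cc_loc:
  assumes "z t = z' t" "\<forall>u\<in>par t. z u = z' u"
  shows "cc n t z = cc n t z'"
proof -
  have "restrict z (par t) = restrict z' (par t)" using assms by (intro restrict_ext) auto
  thus ?thesis unfolding cc_def using assms by simp
qed

lemma t_notin_par: "t \<in> G \<Longrightarrow> t \<notin> par t"
proof
  assume "t \<in> G" "t \<in> par t"
  hence "t \<in> nondesc G par t" using par_nondesc by auto
  thus False unfolding nondesc_iff by auto
qed

lemma cc_norm:
  assumes t: "t \<in> G" and z: "z \<in> PiE G X"
  shows "(\<Sum>v\<in>X t. cc n t (z(t:=v))) = 1"
proof -
  define y where "y = restrict z (par t)"
  have ry: "restrict (z(t:=v)) (par t) = y" for v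
    unfolding y_def using t_notin_par[OF t] by (intro restrict_ext) auto
  have pmf: "is_pmf_on (X t) (ch t y)" unfolding y_def using ch_in(2)[OF t restr_par_PiE[OF t z]] .
  have c0: "card (X t) > 0" using finX neX t by (simp add: card_gt_0_iff)
  hence c0': "real (card (X t)) \<noteq> 0" by simp
  have "(\<Sum>v\<in>X t. cc n t (z(t:=v))) = (\<Sum>v\<in>X t. (1 - ee n) * ch t y v + ee n / real (card (X t)))"
    unfolding cc_def ry by simp
  also have "\<dots> = (1 - ee n) * (\<Sum>v\<in>X t. ch t y v) + ee n"
    using c0' by (simp add: sum.distrib sum_distrib_left)
  also have "\<dots> = 1" using pmf unfolding is_pmf_on_def by simp
  finally show ?thesis .
qed

lemma cc_lim: "(\<lambda>n. cc n t z) \<longlonglongrightarrow> ch t (restrict z (par t)) (z t)"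
proof -
  have A: "(\<lambda>n. (1 - ee n) * ch t (restrict z (par t)) (z t)) \<longlonglongrightarrow> (1 - 0) * ch t (restrict z (par t)) (z t)"
    by (intro tendsto_intros ee_lim)
  have B: "(\<lambda>n. ee n / real (card (X t))) \<longlonglongrightarrow> 0" by (rule tendsto_divide_zero[OF ee_lim])
  show ?thesis unfolding cc_def using tendsto_add[OF A B] by simp
qed

lemma gml_cc:
  assumes W: "W \<subseteq> G" and z: "z \<in> PiE G X"
  shows "(\<Sum>y\<in>fib G X W z. \<Prod>w\<in>W. cc n w y) = 1"
proof (rule gml[OF finG finX dag_sink[OF dag W] W _ _ z])
  show "\<forall>w\<in>W. \<forall>y\<in>PiE G X. \<forall>y'\<in>PiE G X. y w = y' w \<and> (\<forall>t\<in>par w. y t = y' t) \<longrightarrow> cc n w y = cc n w y'"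
    using cc_loc by blast
  show "\<forall>w\<in>W. \<forall>y\<in>PiE G X. (\<Sum>v\<in>X w. cc n w (y(w:=v))) = 1"
    using cc_norm W by blast
qed

lemma fib_agree:
  assumes "y \<in> fib G X W z" "z \<in> PiE G X" "t \<notin> W"
  shows "y t = z t"
proof (cases "t \<in> G")
  case True thus ?thesis using assms unfolding fib_def by auto
next
  case False thus ?thesis using assms unfolding fib_def by (auto simp: PiE_def extensional_def)
qed

lemma prod_fib_const:
  assumes "\<forall>u\<in>U. u \<notin> W \<and> par u \<inter> W = {}" "y \<in> fib G X W z" "z \<in> PiE G X"
  shows "(\<Prod>u\<in>U. cc n u y) = (\<Prod>u\<in>U. cc n u z)"
proof (rule prod.cong[OF refl])
  fix u assume u: "u \<in> U"
  show "cc n u y = cc n u z"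
    by (rule cc_loc) (use assms u fib_agree in blast)+
qed

lemma upd_fib: "z \<in> PiE G X \<Longrightarrow> s \<in> G \<Longrightarrow> v \<in> X s \<Longrightarrow> y \<in> fib G X W (z(s:=v)) \<Longrightarrow> s \<notin> W \<Longrightarrow> y \<in> fib G X (insert s W) z"
  unfolding fib_def by auto

definition z0of :: "'a \<Rightarrow> ('a \<Rightarrow> 'v) \<Rightarrow> 'v \<Rightarrow> ('a \<Rightarrow> 'v)" where
  "z0of s xN v = (ext G X (nondesc G par s) xN)(s := v)"

lemma z0of:
  assumes s: "s \<in> G" and xN: "xN \<in> PiE (nondesc G par s) X" and v: "v \<in> X s"
  shows "z0of s xN v \<in> PiE G X" "z0of s xN v s = v"
    "{z\<in>PiE G X. restrict z (nondesc G par s) = xN} = cyl G X (nondesc G par s) (z0of s xN v)"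
    "{z\<in>PiE G X. z s = v} = {z\<in>PiE G X. z s = z0of s xN v s}"
    "restrict (z0of s xN v) (par s) = restrict xN (par s)"
proof -
  have e: "ext G X (nondesc G par s) xN \<in> PiE G X" "\<forall>t\<in>nondesc G par s \<inter> G. ext G X (nondesc G par s) xN t = xN t"
    using ext_in[OF neX, of "nondesc G par s" xN] xN by auto
  show "z0of s xN v \<in> PiE G X" unfolding z0of_def by (rule upd_PiE[OF e(1) s v])
  show "z0of s xN v s = v" unfolding z0of_def by simp
  have ag: "\<forall>t\<in>nondesc G par s. z0of s xN v t = xN t"
  proof
    fix t assume t: "t \<in> nondesc G par s"
    hence "t \<noteq> s" "t \<in> G" unfolding nondesc_iff by auto
    thus "z0of s xN v t = xN t" using e(2) t unfolding z0of_def by auto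
  qed
  show "{z\<in>PiE G X. restrict z (nondesc G par s) = xN} = cyl G X (nondesc G par s) (z0of s xN v)"
    using restr_cyl[OF xN, of G] ag unfolding cyl_def by auto
  show "{z\<in>PiE G X. z s = v} = {z\<in>PiE G X. z s = z0of s xN v s}" unfolding z0of_def by simp
  show "restrict (z0of s xN v) (par s) = restrict xN (par s)"
    using ag par_nondesc[OF s] by (intro restrict_ext) auto
qed

theorem exists_irr: "irr_ext G par X M \<noteq> {}"
proof -
  define p where "p n z = (\<Prod>t\<in>G. cc n t z)" for n z
  have ppos: "\<forall>n. \<forall>z\<in>PiE G X. p n z > 0" unfolding p_def using cc_pos by (auto intro: prod_pos)
  obtain \<sigma> P where sP: "strict_mono \<sigma>" "full_cond_prob (PiE G X) P"
    "\<forall>A B. A \<subseteq> PiE G X \<longrightarrow> B \<subseteq> PiE G X \<longrightarrow> B \<noteq> {} \<longrightarrow> (\<lambda>n. ratio (p (\<sigma> n)) A B) \<longlonglongrightarrow> P A B"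
    using ratio_limit[OF finO ppos] by blast
  have loc: "(\<lambda>v. if v \<in> X s then P {z\<in>PiE G X. z s = v} {z\<in>PiE G X. restrict z (nondesc G par s) = xN} else 0)
      \<in> M s (restrict xN (par s))" if s: "s \<in> G" and xN: "xN \<in> PiE (nondesc G par s) X" for s xN
  proof -
    have xpP: "restrict xN (par s) \<in> PiE (par s) X" using xN par_nondesc[OF s] by (auto simp: PiE_def Pi_def)
    have "(\<lambda>v. if v \<in> X s then P {z\<in>PiE G X. z s = v} {z\<in>PiE G X. restrict z (nondesc G par s) = xN} else 0)
        = ch s (restrict xN (par s))"
    proof
      fix v
      show "(if v \<in> X s then P {z\<in>PiE G X. z s = v} {z\<in>PiE G X. restrict z (nondesc G par s) = xN} else 0) = ch s (restrict xN (par s)) v"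
      proof (cases "v \<in> X s")
        case False thus ?thesis using ch_in(2)[OF s xpP] unfolding is_pmf_on_def by auto
      next
        case v: True
        define z0 where "z0 = z0of s xN v"
        note zz = z0of[OF s xN v, folded z0_def]
        define Fac where "Fac n = (\<Prod>t\<in>nondesc G par s. cc n t z0)" for n
        have num: "\<forall>v'\<in>X s. sum (p n) (fib G X (desc G par s) (z0(s:=v'))) = Fac n * cc n s (z0(s:=v'))" for n
        proof
          fix v' assume v': "v' \<in> X s"
          define z1 where "z1 = z0(s:=v')"
          have z1P: "z1 \<in> PiE G X" unfolding z1_def by (rule upd_PiE[OF zz(1) s v'])
          have split: "p n y = (\<Prod>t\<in>nondesc G par s. cc n t y) * cc n s y * (\<Prod>t\<in>desc G par s. cc n t y)" for y
          proof -
            have "G = nondesc G par s \<union> ({s} \<union> desc G par s)" using partition_s[OF s] by auto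
            moreover have "nondesc G par s \<inter> ({s} \<union> desc G par s) = {}" using desc_nondesc_disj nondesc_iff by auto
            moreover have "finite (nondesc G par s)" "finite ({s} \<union> desc G par s)"
              using finite_subset[OF nondesc_sub finG] finite_subset[OF desc_sub finG] by auto
            ultimately have "p n y = (\<Prod>t\<in>nondesc G par s. cc n t y) * (\<Prod>t\<in>{s} \<union> desc G par s. cc n t y)"
              unfolding p_def by (metis prod.union_disjoint)
            moreover have "(\<Prod>t\<in>{s} \<union> desc G par s. cc n t y) = cc n s y * (\<Prod>t\<in>desc G par s. cc n t y)"
              using prod.insert[OF finite_subset[OF desc_sub finG] s_notin_desc] by simp
            ultimately show ?thesis by simp
          qed
          have "sum (p n) (fib G X (desc G par s) z1) = (\<Sum>y\<in>fib G X (desc G par s) z1. Fac n * cc n s z1 * (\<Prod>t\<in>desc G par s. cc n t y))"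
          proof (rule sum.cong[OF refl])
            fix y assume y: "y \<in> fib G X (desc G par s) z1"
            have y0: "y \<in> fib G X (insert s (desc G par s)) z0" using upd_fib[OF zz(1) s v'] y s_notin_desc unfolding z1_def by auto
            have "(\<Prod>t\<in>nondesc G par s. cc n t y) = Fac n"
              unfolding Fac_def
            proof (rule prod_fib_const[OF _ y0 zz(1)])
              show "\<forall>u\<in>nondesc G par s. u \<notin> insert s (desc G par s) \<and> par u \<inter> insert s (desc G par s) = {}"
                using par_of_nondesc[OF s] nondesc_iff desc_nondesc_disj by blast
            qed
            moreover have "cc n s y = cc n s z1"
              by (rule cc_loc) (use fib_agree[OF y z1P] s_notin_desc par_nondesc[OF s] desc_nondesc_disj in blast)+
            ultimately show "p n y = Fac n * cc n s z1 * (\<Prod>t\<in>desc G par s. cc n t y)" using split by simp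
          qed
          also have "\<dots> = Fac n * cc n s z1" using gml_cc[OF desc_sub z1P] by (simp add: sum_distrib_left[symmetric])
          finally show "sum (p n) (fib G X (desc G par s) (z0(s:=v'))) = Fac n * cc n s (z0(s:=v'))" unfolding z1_def .
        qed
        have Facpos: "Fac n > 0" for n unfolding Fac_def by (rule prod_pos) (use cc_pos zz(1) nondesc_sub in blast)
        have rat: "ratio (p n) {z\<in>PiE G X. z s = z0 s} (cyl G X (nondesc G par s) z0) = cc n s z0" for n
        proof -
          have "ratio (p n) {z\<in>PiE G X. z s = z0 s} (cyl G X (nondesc G par s) z0)
              = cc n s (z0(s := z0 s)) / (\<Sum>v'\<in>X s. cc n s (z0(s:=v')))"
            by (rule node_ratio[OF s zz(1) num]) (use Facpos[of n] in auto)
          thus ?thesis using cc_norm[OF s zz(1)] by simp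
        qed
        have l1: "(\<lambda>n. ratio (p (\<sigma> n)) {z\<in>PiE G X. z s = z0 s} (cyl G X (nondesc G par s) z0))
            \<longlonglongrightarrow> P {z\<in>PiE G X. z s = z0 s} (cyl G X (nondesc G par s) z0)"
        proof -
          have "cyl G X (nondesc G par s) z0 \<noteq> {}"
            by (rule cyl_ne[OF neX]) (use zz(1) nondesc_sub in \<open>auto simp: PiE_def Pi_def\<close>)
          moreover have "{z\<in>PiE G X. z s = z0 s} \<subseteq> PiE G X" by auto
          ultimately show ?thesis using sP(3) cyl_sub[of G X "nondesc G par s" z0] by blast
        qed
        have l2: "(\<lambda>n. ratio (p (\<sigma> n)) {z\<in>PiE G X. z s = z0 s} (cyl G X (nondesc G par s) z0))
            \<longlonglongrightarrow> ch s (restrict z0 (par s)) (z0 s)"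
          unfolding rat using LIMSEQ_subseq_LIMSEQ[OF cc_lim sP(1)] by (simp add: comp_def)
        have F: "P {z\<in>PiE G X. z s = z0 s} (cyl G X (nondesc G par s) z0) = ch s (restrict z0 (par s)) (z0 s)"
          using LIMSEQ_unique[OF l1 l2] .
        have "P {z\<in>PiE G X. z s = v} {z\<in>PiE G X. restrict z (nondesc G par s) = xN} = ch s (restrict xN (par s)) v"
          using F unfolding zz(2) zz(5) zz(3)[symmetric] .
        thus ?thesis using v by simp
      qed
    qed
    thus ?thesis using ch_in(1)[OF s xpP] by simp
  qed
  have "P \<in> irr_ext G par X M" unfolding irr_ext_def using sP(2) loc by blast
  thus ?thesis by auto
qed

end


lemma fib_all: "fib S X S z = PiE S X" unfolding fib_def by auto

lemma fib_trans: "y1 \<in> fib S X W1 z \<Longrightarrow> y \<in> fib S X W2 y1 \<Longrightarrow> y \<in> fib S X (W1 \<union> W2) z"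
  unfolding fib_def by auto

lemma fib_mono: "y \<in> fib S X W z \<Longrightarrow> W \<subseteq> W' \<Longrightarrow> y \<in> fib S X W' z"
  unfolding fib_def by auto

locale comp = cnet +
  fixes xP Q R q r
  assumes xP: "xP \<in> PiE PK X"
    and Qirr: "Q \<in> irr_ext N (sub_pa par N) X (\<lambda>s z. M s (restrict z (par s)))"
    and Rirr: "R \<in> irr_ext K (sub_pa par K) X (sub_M par M K xP)"
    and qpos: "\<forall>n. \<forall>w\<in>PiE N X. q n w > 0" and qsum: "\<forall>n. sum (q n) (PiE N X) = 1"
    and qlim: "\<forall>A B. A \<subseteq> PiE N X \<longrightarrow> B \<subseteq> PiE N X \<longrightarrow> B \<noteq> {} \<longrightarrow> (\<lambda>n. ratio (q n) A B) \<longlonglongrightarrow> Q A B"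
    and rpos: "\<forall>n. \<forall>w\<in>PiE K X. r n w > 0" and rsum: "\<forall>n. sum (r n) (PiE K X) = 1"
    and rlim: "\<forall>A B. A \<subseteq> PiE K X \<longrightarrow> B \<subseteq> PiE K X \<longrightarrow> B \<noteq> {} \<longrightarrow> (\<lambda>n. ratio (r n) A B) \<longlonglongrightarrow> R A B"
begin

definition Tz where "Tz z = {t \<in> PK. z t \<noteq> xP t}"
definition Ax where "Ax z = {k \<in> K. \<forall>t\<in>Tz z. \<not> pl t k}"
definition rho where
  "rho n z = cm X K (r n) (Ax z) z * (\<Prod>k\<in>K - Ax z. cc n k z)"
definition pp where
  "pp n z = q n (restrict z N) * rho n z * (\<Prod>d\<in>D. cc n d z)"

lemma Ax_sub: "Ax z \<subseteq> K" unfolding Ax_def by auto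

lemma Ax_anc: "k \<in> Ax z \<Longrightarrow> t \<in> par k \<Longrightarrow> t \<in> K \<Longrightarrow> t \<in> Ax z"
  unfolding Ax_def using pl_trans pl_edge KG by blast

lemma Ax_par: "k \<in> Ax z \<Longrightarrow> t \<in> par k \<Longrightarrow> t \<notin> K \<Longrightarrow> z t = xP t"
proof (rule ccontr)
  assume a: "k \<in> Ax z" "t \<in> par k" "t \<notin> K" "z t \<noteq> xP t"
  have "t \<in> PK" using a unfolding PK_iff Ax_def by auto
  hence "t \<in> Tz z" using a unfolding Tz_def by auto
  moreover have "pl t k" using pl_edge a KG unfolding Ax_def by auto
  ultimately show False using a unfolding Ax_def by auto
qed

lemma Tz_dep: "\<forall>t\<in>PK. z t = z' t \<Longrightarrow> Tz z = Tz z'" unfolding Tz_def by auto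
lemma Ax_dep: "\<forall>t\<in>PK. z t = z' t \<Longrightarrow> Ax z = Ax z'"
proof -
  assume "\<forall>t\<in>PK. z t = z' t"
  hence "Tz z = Tz z'" by (rule Tz_dep)
  thus ?thesis unfolding Ax_def by simp
qed

lemma notAx_child: "k \<in> K - Ax z \<Longrightarrow> u \<in> K \<Longrightarrow> k \<in> par u \<Longrightarrow> u \<in> K - Ax z"
  using Ax_anc by blast

lemma K_PK: "K \<inter> PK = {}" unfolding parK_def by auto

lemma cm_pos:
  assumes z: "z \<in> PiE G X" and C: "C \<subseteq> K"
  shows "cm X K (r n) C z > 0"
proof -
  have "restrict z K \<in> cyl K X C z" using z KG C unfolding cyl_def by (auto simp: PiE_def Pi_def)
  moreover have "finite (cyl K X C z)" using finite_cyl[of K X] finG KG finX finite_subset by blast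
  moreover have "\<forall>u\<in>cyl K X C z. r n u > 0" using rpos cyl_sub by blast
  ultimately show ?thesis unfolding cm_cyl[OF KG] by (metis empty_iff sum_pos)
qed

lemma rho_pos: "z \<in> PiE G X \<Longrightarrow> rho n z > 0"
  unfolding rho_def using cm_pos Ax_sub cc_pos KG by (auto intro!: mult_pos_pos prod_pos)

lemma pp_pos: "z \<in> PiE G X \<Longrightarrow> pp n z > 0"
proof -
  assume z: "z \<in> PiE G X"
  have "restrict z N \<in> PiE N X" using z NG by (auto simp: PiE_def Pi_def)
  hence "q n (restrict z N) > 0" using qpos by auto
  moreover have "(\<Prod>d\<in>D. cc n d z) > 0" by (rule prod_pos) (use cc_pos z DG in blast)
  ultimately show ?thesis unfolding pp_def using rho_pos[OF z] by auto
qed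

lemma rho_local:
  assumes "\<forall>t\<in>K \<union> PK. z t = z' t"
  shows "rho n z = rho n z'"
proof -
  have A: "Ax z = Ax z'" using Ax_dep assms by auto
  have "cm X K (r n) (Ax z) z = cm X K (r n) (Ax z) z'" by (rule cm_local) (use assms Ax_sub in blast)
  moreover have "(\<Prod>k\<in>K - Ax z. cc n k z) = (\<Prod>k\<in>K - Ax z. cc n k z')"
  proof (rule prod.cong[OF refl])
    fix k assume "k \<in> K - Ax z"
    thus "cc n k z = cc n k z'" by (intro cc_loc) (use assms par_K in blast)+
  qed
  ultimately show ?thesis unfolding rho_def A by simp
qed

lemma marg_rho:
  assumes W: "W \<subseteq> K" and dc: "\<forall>u\<in>K. \<forall>t\<in>W. t \<in> par u \<longrightarrow> u \<in> W" and y: "y \<in> PiE G X"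
  shows "(\<Sum>y'\<in>fib G X W y. rho n y') = cm X K (r n) (Ax y - W) y * (\<Prod>k\<in>K - Ax y - W. cc n k y)"
proof -
  define A where "A = Ax y"
  have AK: "A \<subseteq> K" unfolding A_def by (rule Ax_sub)
  have WG: "W \<subseteq> G" using W KG by auto
  have Aeq: "Ax y' = A" if "y' \<in> fib G X W y" for y'
    unfolding A_def by (rule Ax_dep) (use fib_agree[OF that y] W K_PK in blast)
  have "(\<Sum>y'\<in>fib G X W y. rho n y') = (\<Sum>y'\<in>fib G X ((W \<inter> A) \<union> (W - A)) y. rho n y')"
    by (metis Int_Diff_Un)
  also have "\<dots> = (\<Sum>y1\<in>fib G X (W \<inter> A) y. \<Sum>y'\<in>fib G X (W - A) y1. rho n y')"
    by (rule fib_split[OF finG finX _ y]) auto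
  also have "\<dots> = (\<Sum>y1\<in>fib G X (W \<inter> A) y. cm X K (r n) A y1 * (\<Prod>k\<in>K - A - W. cc n k y))"
  proof (rule sum.cong[OF refl])
    fix y1 assume y1: "y1 \<in> fib G X (W \<inter> A) y"
    have y1P: "y1 \<in> PiE G X" using y1 fib_sub by blast
    have "(\<Sum>y'\<in>fib G X (W - A) y1. rho n y') = (\<Sum>y'\<in>fib G X (W - A) y1. cm X K (r n) A y1 * (\<Prod>k\<in>K - A - W. cc n k y) * (\<Prod>k\<in>W - A. cc n k y'))"
    proof (rule sum.cong[OF refl])
      fix y' assume y': "y' \<in> fib G X (W - A) y1"
      have y'W: "y' \<in> fib G X W y" using fib_trans[OF y1 y'] fib_mono by blast
      have "cm X K (r n) (Ax y') y' = cm X K (r n) A y1"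
        unfolding Aeq[OF y'W] by (rule cm_local) (use fib_agree[OF y' y1P] in blast)
      moreover have "(\<Prod>k\<in>K - Ax y'. cc n k y') = (\<Prod>k\<in>K - A - W. cc n k y') * (\<Prod>k\<in>W - A. cc n k y')"
      proof -
        have e: "K - A = (K - A - W) \<union> (W - A)" using W by auto
        have fK: "finite K" using finite_subset[OF KG finG] .
        have f1: "finite (K - A - W)" "finite (W - A)" using fK W by (auto intro: finite_subset)
        have "(\<Prod>k\<in>K - A. cc n k y') = (\<Prod>k\<in>(K - A - W) \<union> (W - A). cc n k y')" using e by simp
        also have "\<dots> = (\<Prod>k\<in>K - A - W. cc n k y') * (\<Prod>k\<in>W - A. cc n k y')"
          by (rule prod.union_disjoint[OF f1]) auto
        finally show ?thesis unfolding Aeq[OF y'W] .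
      qed
      moreover have "(\<Prod>k\<in>K - A - W. cc n k y') = (\<Prod>k\<in>K - A - W. cc n k y)"
        by (rule prod_fib_const[OF _ y'W y]) (use dc in blast)
      ultimately show "rho n y' = cm X K (r n) A y1 * (\<Prod>k\<in>K - A - W. cc n k y) * (\<Prod>k\<in>W - A. cc n k y')"
        unfolding rho_def by simp
    qed
    also have "\<dots> = cm X K (r n) A y1 * (\<Prod>k\<in>K - A - W. cc n k y)"
    proof -
      have g: "(\<Sum>y'\<in>fib G X (W - A) y1. \<Prod>k\<in>W - A. cc n k y') = 1" using gml_cc[of "W - A" y1 n] WG y1P by auto
      show ?thesis by (simp add: sum_distrib_left[symmetric] g)
    qed
    finally show "(\<Sum>y'\<in>fib G X (W - A) y1. rho n y') = cm X K (r n) A y1 * (\<Prod>k\<in>K - A - W. cc n k y)" .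
  qed
  also have "\<dots> = (\<Sum>y1\<in>fib G X (W \<inter> A) y. cm X K (r n) A y1) * (\<Prod>k\<in>K - A - W. cc n k y)"
    by (simp add: sum_distrib_right)
  also have "(\<Sum>y1\<in>fib G X (W \<inter> A) y. cm X K (r n) A y1) = cm X K (r n) (A - (W \<inter> A)) y"
    by (rule cm_marg[OF KG _ _ y]) (use AK in auto)
  also have "A - (W \<inter> A) = A - W" by auto
  finally show ?thesis unfolding A_def .
qed

end


context comp
begin

lemma sum_Om_split:
  assumes zs: "zs \<in> PiE G X"
  shows "(\<Sum>z\<in>PiE G X. F z) = (\<Sum>y1\<in>fib G X N zs. \<Sum>y2\<in>fib G X K y1. \<Sum>y3\<in>fib G X D y2. F y3)"
proof -
  have "PiE G X = fib G X (N \<union> (K \<union> D)) zs" using fib_all[of G X zs] GKDN by (metis Un_commute Un_left_commute)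
  hence "(\<Sum>z\<in>PiE G X. F z) = (\<Sum>y1\<in>fib G X N zs. \<Sum>y\<in>fib G X (K \<union> D) y1. F y)"
  proof -
    have "N \<inter> (K \<union> D) = {}" using KN DN by auto
    thus ?thesis using fib_split[OF finG finX _ zs, of N "K \<union> D" F] \<open>PiE G X = _\<close> by simp
  qed
  also have "\<dots> = (\<Sum>y1\<in>fib G X N zs. \<Sum>y2\<in>fib G X K y1. \<Sum>y3\<in>fib G X D y2. F y3)"
  proof (rule sum.cong[OF refl])
    fix y1 assume "y1 \<in> fib G X N zs"
    hence y1: "y1 \<in> PiE G X" using fib_sub by blast
    show "(\<Sum>y\<in>fib G X (K \<union> D) y1. F y) = (\<Sum>y2\<in>fib G X K y1. \<Sum>y3\<in>fib G X D y2. F y3)"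
      by (rule fib_split[OF finG finX _ y1]) (use KD in auto)
  qed
  finally show ?thesis .
qed

lemma inner_D:
  assumes y2: "y2 \<in> PiE G X" and H: "\<forall>y3\<in>fib G X D y2. H y3 = H y2"
  shows "(\<Sum>y3\<in>fib G X D y2. pp n y3 * H y3) = q n (restrict y2 N) * rho n y2 * H y2"
proof -
  have "(\<Sum>y3\<in>fib G X D y2. pp n y3 * H y3) = (\<Sum>y3\<in>fib G X D y2. (q n (restrict y2 N) * rho n y2 * H y2) * (\<Prod>d\<in>D. cc n d y3))"
  proof (rule sum.cong[OF refl])
    fix y3 assume y3: "y3 \<in> fib G X D y2"
    have ag: "\<forall>t. t \<notin> D \<longrightarrow> y3 t = y2 t" using fib_agree[OF y3 y2] by blast
    have "restrict y3 N = restrict y2 N" using ag DN by (intro restrict_ext) auto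
    moreover have "rho n y3 = rho n y2" by (rule rho_local) (use ag KD PK_N DN in blast)
    ultimately show "pp n y3 * H y3 = (q n (restrict y2 N) * rho n y2 * H y2) * (\<Prod>d\<in>D. cc n d y3)"
      unfolding pp_def using H y3 by simp
  qed
  also have "\<dots> = q n (restrict y2 N) * rho n y2 * H y2"
    using gml_cc[OF DG y2, of n] by (simp add: sum_distrib_left[symmetric])
  finally show ?thesis .
qed

lemma fibK_agree:
  assumes "y2 \<in> fib G X K y1" "y1 \<in> PiE G X"
  shows "restrict y2 N = restrict y1 N" "\<forall>t\<in>PK. y2 t = y1 t"
proof -
  have ag: "\<forall>t. t \<notin> K \<longrightarrow> y2 t = y1 t" using fib_agree[OF assms] by blast
  show "restrict y2 N = restrict y1 N" using ag KN by (intro restrict_ext) auto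
  show "\<forall>t\<in>PK. y2 t = y1 t" using ag K_PK by auto
qed

lemma pp_total: "sum (pp n) (PiE G X) = 1"
proof -
  obtain zs where zs: "zs \<in> PiE G X" using neOT[of G] by auto
  have "sum (pp n) (PiE G X) = (\<Sum>y1\<in>fib G X N zs. \<Sum>y2\<in>fib G X K y1. \<Sum>y3\<in>fib G X D y2. pp n y3 * 1)"
    using sum_Om_split[OF zs, of "pp n"] by simp
  also have "\<dots> = (\<Sum>y1\<in>fib G X N zs. q n (restrict y1 N))"
  proof (rule sum.cong[OF refl])
    fix y1 assume "y1 \<in> fib G X N zs"
    hence y1: "y1 \<in> PiE G X" using fib_sub by blast
    have "(\<Sum>y2\<in>fib G X K y1. \<Sum>y3\<in>fib G X D y2. pp n y3 * 1) = (\<Sum>y2\<in>fib G X K y1. q n (restrict y1 N) * rho n y2)"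
    proof (rule sum.cong[OF refl])
      fix y2 assume y2f: "y2 \<in> fib G X K y1"
      hence y2: "y2 \<in> PiE G X" using fib_sub by blast
      show "(\<Sum>y3\<in>fib G X D y2. pp n y3 * 1) = q n (restrict y1 N) * rho n y2"
        using inner_D[OF y2, of "\<lambda>_. 1"] fibK_agree[OF y2f y1] by simp
    qed
    also have "\<dots> = q n (restrict y1 N) * (\<Sum>y2\<in>fib G X K y1. rho n y2)" by (simp add: sum_distrib_left)
    also have "(\<Sum>y2\<in>fib G X K y1. rho n y2) = cm X K (r n) (Ax y1 - K) y1 * (\<Prod>k\<in>K - Ax y1 - K. cc n k y1)"
      by (rule marg_rho[OF _ _ y1]) auto
    also have "\<dots> = 1"
    proof -
      have e1: "Ax y1 - K = {}" using Ax_sub by auto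
      have e2: "K - Ax y1 - K = {}" by auto
      show ?thesis unfolding e1 e2 using cm_empty[OF KG] rsum by simp
    qed
    finally show "(\<Sum>y2\<in>fib G X K y1. \<Sum>y3\<in>fib G X D y2. pp n y3 * 1) = q n (restrict y1 N)" by (simp add: restrict_def)
  qed
  also have "\<dots> = sum (q n) (PiE N X)" by (rule fib_restrict_sum[OF NG zs])
  also have "\<dots> = 1" using qsum by simp
  finally show ?thesis .
qed

lemma pp_expect:
  assumes Find: "\<forall>w\<in>PiE N X. F w \<noteq> 0 \<longrightarrow> restrict w PK = xP"
  shows "(\<Sum>z\<in>PiE G X. F (restrict z N) * f (restrict z K) * pp n z)
       = (\<Sum>w\<in>PiE N X. F w * q n w) * (\<Sum>u\<in>PiE K X. f u * r n u)"
proof -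
  obtain zs where zs: "zs \<in> PiE G X" using neOT[of G] by auto
  define S where "S = (\<Sum>u\<in>PiE K X. f u * r n u)"
  define H where "H z = F (restrict z N) * f (restrict z K)" for z
  have "(\<Sum>z\<in>PiE G X. F (restrict z N) * f (restrict z K) * pp n z) = (\<Sum>y1\<in>fib G X N zs. \<Sum>y2\<in>fib G X K y1. \<Sum>y3\<in>fib G X D y2. pp n y3 * H y3)"
    using sum_Om_split[OF zs, of "\<lambda>z. pp n z * H z"] unfolding H_def by (simp add: algebra_simps)
  also have "\<dots> = (\<Sum>y1\<in>fib G X N zs. F (restrict y1 N) * q n (restrict y1 N) * S)"
  proof (rule sum.cong[OF refl])
    fix y1 assume "y1 \<in> fib G X N zs"
    hence y1: "y1 \<in> PiE G X" using fib_sub by blast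
    have "(\<Sum>y2\<in>fib G X K y1. \<Sum>y3\<in>fib G X D y2. pp n y3 * H y3) = (\<Sum>y2\<in>fib G X K y1. q n (restrict y1 N) * rho n y2 * H y2)"
    proof (rule sum.cong[OF refl])
      fix y2 assume y2f: "y2 \<in> fib G X K y1"
      hence y2: "y2 \<in> PiE G X" using fib_sub by blast
      have "\<forall>y3\<in>fib G X D y2. H y3 = H y2"
      proof
        fix y3 assume y3: "y3 \<in> fib G X D y2"
        have ag: "\<forall>t. t \<notin> D \<longrightarrow> y3 t = y2 t" using fib_agree[OF y3 y2] by blast
        have "restrict y3 N = restrict y2 N" using ag DN by (intro restrict_ext) auto
        moreover have "restrict y3 K = restrict y2 K" using ag KD by (intro restrict_ext) auto
        ultimately show "H y3 = H y2" unfolding H_def by simp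
      qed
      thus "(\<Sum>y3\<in>fib G X D y2. pp n y3 * H y3) = q n (restrict y1 N) * rho n y2 * H y2"
        using inner_D[OF y2] fibK_agree[OF y2f y1] by simp
    qed
    also have "\<dots> = F (restrict y1 N) * q n (restrict y1 N) * S"
    proof (cases "F (restrict y1 N) = 0")
      case True
      have "\<forall>y2\<in>fib G X K y1. H y2 = 0" unfolding H_def using fibK_agree[OF _ y1] True by auto
      thus ?thesis using True by simp
    next
      case False
      have rN: "restrict y1 N \<in> PiE N X" using restrict_PiE_sub[OF y1 NG] .
      hence rPK: "restrict (restrict y1 N) PK = xP" using Find False by blast
      have y1PK: "\<forall>t\<in>PK. y1 t = xP t"
      proof
        fix t assume t: "t \<in> PK"
        hence "t \<in> N" using PK_N by auto
        thus "y1 t = xP t" using fun_cong[OF rPK, of t] t by simp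
      qed
      have "(\<Sum>y2\<in>fib G X K y1. q n (restrict y1 N) * rho n y2 * H y2)
          = (\<Sum>y2\<in>fib G X K y1. F (restrict y1 N) * q n (restrict y1 N) * (f (restrict y2 K) * r n (restrict y2 K)))"
      proof (rule sum.cong[OF refl])
        fix y2 assume y2f: "y2 \<in> fib G X K y1"
        hence y2: "y2 \<in> PiE G X" using fib_sub by blast
        have "Tz y2 = {}" unfolding Tz_def using fibK_agree(2)[OF y2f y1] y1PK by auto
        hence A: "Ax y2 = K" unfolding Ax_def by auto
        have "rho n y2 = r n (restrict y2 K)" unfolding rho_def A using cm_full[OF KG y2] by simp
        thus "q n (restrict y1 N) * rho n y2 * H y2 = F (restrict y1 N) * q n (restrict y1 N) * (f (restrict y2 K) * r n (restrict y2 K))"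
          unfolding H_def using fibK_agree(1)[OF y2f y1] by simp
      qed
      also have "\<dots> = F (restrict y1 N) * q n (restrict y1 N) * (\<Sum>y2\<in>fib G X K y1. f (restrict y2 K) * r n (restrict y2 K))"
        by (simp add: sum_distrib_left)
      also have "(\<Sum>y2\<in>fib G X K y1. f (restrict y2 K) * r n (restrict y2 K)) = S"
        unfolding S_def by (rule fib_restrict_sum[OF KG y1])
      finally show ?thesis .
    qed
    finally show "(\<Sum>y2\<in>fib G X K y1. \<Sum>y3\<in>fib G X D y2. pp n y3 * H y3) = F (restrict y1 N) * q n (restrict y1 N) * S" .
  qed
  also have "\<dots> = (\<Sum>w\<in>PiE N X. F w * q n w * S)"
    by (rule fib_restrict_sum[OF NG zs])
  also have "\<dots> = (\<Sum>w\<in>PiE N X. F w * q n w) * S" by (simp add: sum_distrib_right)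
  finally show ?thesis unfolding S_def .
qed

end


context comp
begin

lemma W_par_disj:
  assumes s: "s \<in> G" and u: "u \<in> G" "u \<notin> insert s (desc G par s)"
  shows "par u \<inter> insert s (desc G par s) = {}"
proof (rule ccontr)
  assume "par u \<inter> insert s (desc G par s) \<noteq> {}"
  then obtain t where t: "t \<in> par u" "t = s \<or> t \<in> desc G par s" by auto
  have "pl s t" using t pl_refl unfolding desc_iff by auto
  hence "u \<in> desc G par s" using child_desc[OF u(1) t(1)] by auto
  thus False using u by auto
qed

lemma agree_W:
  assumes "y \<in> fib G X (insert s (desc G par s)) z0" "z0 \<in> PiE G X" "t \<notin> insert s (desc G par s)"
  shows "y t = z0 t"
  using fib_agree[OF assms] .

lemma innerKN:
  assumes s: "s \<in> G" "s \<notin> D" and z0: "z0 \<in> PiE G X" and y2: "y2 \<in> fib G X (insert s (desc G par s)) z0"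
  shows "(\<Sum>y\<in>fib G X (desc G par s \<inter> D) y2. pp n y) = q n (restrict y2 N) * rho n y2 * (\<Prod>d\<in>D - desc G par s. cc n d z0)"
proof -
  have y2P: "y2 \<in> PiE G X" using y2 fib_sub by blast
  have "(\<Sum>y\<in>fib G X (desc G par s \<inter> D) y2. pp n y)
      = (\<Sum>y\<in>fib G X (desc G par s \<inter> D) y2. (q n (restrict y2 N) * rho n y2 * (\<Prod>d\<in>D - desc G par s. cc n d z0)) * (\<Prod>d\<in>desc G par s \<inter> D. cc n d y))"
  proof (rule sum.cong[OF refl])
    fix y assume y: "y \<in> fib G X (desc G par s \<inter> D) y2"
    have ag: "\<forall>t. t \<notin> D \<longrightarrow> y t = y2 t" using fib_agree[OF y y2P] by blast
    have yW: "y \<in> fib G X (insert s (desc G par s)) z0" using fib_trans[OF y2 y] fib_mono by blast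
    have "restrict y N = restrict y2 N" using ag DN by (intro restrict_ext) auto
    moreover have "rho n y = rho n y2" by (rule rho_local) (use ag KD PK_N DN in blast)
    moreover have "(\<Prod>d\<in>D. cc n d y) = (\<Prod>d\<in>D - desc G par s. cc n d y) * (\<Prod>d\<in>desc G par s \<inter> D. cc n d y)"
    proof -
      have fD: "finite D" using finite_subset[OF DG finG] .
      have "D = (D - desc G par s) \<union> (desc G par s \<inter> D)" by auto
      hence "(\<Prod>d\<in>D. cc n d y) = (\<Prod>d\<in>(D - desc G par s) \<union> (desc G par s \<inter> D). cc n d y)" by simp
      also have "\<dots> = (\<Prod>d\<in>D - desc G par s. cc n d y) * (\<Prod>d\<in>desc G par s \<inter> D. cc n d y)"
        by (rule prod.union_disjoint) (use fD in auto)
      finally show ?thesis .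
    qed
    moreover have "(\<Prod>d\<in>D - desc G par s. cc n d y) = (\<Prod>d\<in>D - desc G par s. cc n d z0)"
    proof (rule prod_fib_const[OF _ yW z0])
      show "\<forall>u\<in>D - desc G par s. u \<notin> insert s (desc G par s) \<and> par u \<inter> insert s (desc G par s) = {}"
        using W_par_disj[OF s(1)] s(2) DG by blast
    qed
    ultimately show "pp n y = (q n (restrict y2 N) * rho n y2 * (\<Prod>d\<in>D - desc G par s. cc n d z0)) * (\<Prod>d\<in>desc G par s \<inter> D. cc n d y)"
      unfolding pp_def by simp
  qed
  also have "\<dots> = q n (restrict y2 N) * rho n y2 * (\<Prod>d\<in>D - desc G par s. cc n d z0)"
  proof -
    have "(\<Sum>y\<in>fib G X (desc G par s \<inter> D) y2. \<Prod>d\<in>desc G par s \<inter> D. cc n d y) = 1"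
      by (rule gml_cc[OF _ y2P]) (use DG in auto)
    thus ?thesis by (simp add: sum_distrib_left[symmetric])
  qed
  finally show ?thesis .
qed

lemma upd_W: "z0 \<in> PiE G X \<Longrightarrow> s \<in> G \<Longrightarrow> v \<in> X s \<Longrightarrow> y \<in> fib G X W (z0(s:=v)) \<Longrightarrow> W \<subseteq> desc G par s \<Longrightarrow> y \<in> fib G X (insert s (desc G par s)) z0"
  using upd_fib[of z0 s v y W] s_notin_desc fib_mono by blast

lemma CDpos: "z0 \<in> PiE G X \<Longrightarrow> (\<Prod>d\<in>U. cc n d z0) > 0" if "U \<subseteq> G" for U
  using that by (intro prod_pos) (use cc_pos in blast)

lemma ratio_D:
  assumes d: "d \<in> D" and z0: "z0 \<in> PiE G X"
  shows "ratio (pp n) {z\<in>PiE G X. z d = z0 d} (cyl G X (nondesc G par d) z0) = cc n d z0"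
proof -
  have dG: "d \<in> G" using d DG by auto
  define W where "W = insert d (desc G par d)"
  define Fac where "Fac = q n (restrict z0 N) * rho n z0 * (\<Prod>t\<in>D - W. cc n t z0)"
  have WD: "W \<subseteq> D" unfolding W_def using d desc_D[OF d] by auto
  have num: "\<forall>v'\<in>X d. sum (pp n) (fib G X (desc G par d) (z0(d:=v'))) = Fac * cc n d (z0(d:=v'))"
  proof
    fix v' assume v': "v' \<in> X d"
    define z1 where "z1 = z0(d:=v')"
    have z1P: "z1 \<in> PiE G X" unfolding z1_def by (rule upd_PiE[OF z0 dG v'])
    have "sum (pp n) (fib G X (desc G par d) z1) = (\<Sum>y\<in>fib G X (desc G par d) z1. Fac * cc n d z1 * (\<Prod>t\<in>desc G par d. cc n t y))"
    proof (rule sum.cong[OF refl])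
      fix y assume y: "y \<in> fib G X (desc G par d) z1"
      have yW: "y \<in> fib G X W z0" unfolding W_def using upd_W[OF z0 dG v'] y unfolding z1_def by blast
      have ag: "\<forall>t. t \<notin> W \<longrightarrow> y t = z0 t" using fib_agree[OF yW z0] by blast
      have "restrict y N = restrict z0 N" using ag WD DN by (intro restrict_ext) auto
      moreover have "rho n y = rho n z0" by (rule rho_local) (use ag WD KD PK_N DN in blast)
      moreover have "(\<Prod>t\<in>D. cc n t y) = (\<Prod>t\<in>D - W. cc n t y) * cc n d y * (\<Prod>t\<in>desc G par d. cc n t y)"
      proof -
        have fD: "finite D" using finite_subset[OF DG finG] .
        have e: "D = (D - W) \<union> W" using WD by auto
        have "(\<Prod>t\<in>D. cc n t y) = (\<Prod>t\<in>D - W. cc n t y) * (\<Prod>t\<in>W. cc n t y)"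
          by (subst e, rule prod.union_disjoint) (use fD WD in \<open>auto intro: finite_subset\<close>)
        moreover have "(\<Prod>t\<in>W. cc n t y) = cc n d y * (\<Prod>t\<in>desc G par d. cc n t y)"
          unfolding W_def by (rule prod.insert) (use finite_subset[OF desc_sub finG] s_notin_desc in auto)
        ultimately show ?thesis by simp
      qed
      moreover have "(\<Prod>t\<in>D - W. cc n t y) = (\<Prod>t\<in>D - W. cc n t z0)"
        by (rule prod_fib_const[OF _ yW z0]) (use W_par_disj[OF dG] DG in \<open>auto simp: W_def\<close>)
      moreover have "cc n d y = cc n d z1"
        by (rule cc_loc) (use fib_agree[OF y z1P] s_notin_desc par_nondesc[OF dG] desc_nondesc_disj in blast)+
      ultimately show "pp n y = Fac * cc n d z1 * (\<Prod>t\<in>desc G par d. cc n t y)"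
        unfolding pp_def Fac_def by simp
    qed
    also have "\<dots> = Fac * cc n d z1" using gml_cc[OF desc_sub z1P] by (simp add: sum_distrib_left[symmetric])
    finally show "sum (pp n) (fib G X (desc G par d) (z0(d:=v'))) = Fac * cc n d (z0(d:=v'))" unfolding z1_def .
  qed
  have c1: "(\<Prod>t\<in>D - W. cc n t z0) > 0" by (rule CDpos) (use DG z0 in auto)
  have c2: "q n (restrict z0 N) > 0" using qpos restrict_PiE_sub[OF z0 NG] by auto
  have Fpos: "Fac > 0" unfolding Fac_def using c1 c2 rho_pos[OF z0] by auto
  have "ratio (pp n) {z\<in>PiE G X. z d = z0 d} (cyl G X (nondesc G par d) z0) = cc n d (z0(d := z0 d)) / (\<Sum>v'\<in>X d. cc n d (z0(d:=v')))"
    by (rule node_ratio[OF dG z0 num]) (use Fpos in auto)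
  thus ?thesis using cc_norm[OF dG z0] by simp
qed

end


context comp
begin

lemma dc_desc: "u \<in> G \<Longrightarrow> t \<in> desc G par k \<Longrightarrow> t \<in> par u \<Longrightarrow> u \<in> desc G par k"
  using child_desc[of u t k] unfolding desc_iff by blast

lemma desc_K_split: "k \<in> K \<Longrightarrow> desc G par k = (desc G par k \<inter> K) \<union> (desc G par k \<inter> D)"
  using desc_K by auto

lemma numK:
  assumes k: "k \<in> K" and z0: "z0 \<in> PiE G X" and v': "v' \<in> X k"
  shows "sum (pp n) (fib G X (desc G par k) (z0(k:=v'))) = q n (restrict z0 N) * (\<Prod>d\<in>D - desc G par k. cc n d z0)
          * (cm X K (r n) (Ax z0 - desc G par k) (z0(k:=v')) * (\<Prod>j\<in>K - Ax z0 - desc G par k. cc n j (z0(k:=v'))))"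
proof -
  have kG: "k \<in> G" using k KG by auto
  have kD: "k \<notin> D" using k KD by auto
  define z1 where "z1 = z0(k:=v')"
  have z1P: "z1 \<in> PiE G X" unfolding z1_def by (rule upd_PiE[OF z0 kG v'])
  define CD where "CD = (\<Prod>d\<in>D - desc G par k. cc n d z0)"
  have "sum (pp n) (fib G X (desc G par k) z1) = (\<Sum>y2\<in>fib G X (desc G par k \<inter> K) z1. \<Sum>y\<in>fib G X (desc G par k \<inter> D) y2. pp n y)"
    using fib_split[OF finG finX _ z1P, of "desc G par k \<inter> K" "desc G par k \<inter> D" "pp n"] desc_K_split[OF k] KD by auto
  also have "\<dots> = (\<Sum>y2\<in>fib G X (desc G par k \<inter> K) z1. q n (restrict z0 N) * CD * rho n y2)"
  proof (rule sum.cong[OF refl])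
    fix y2 assume y2: "y2 \<in> fib G X (desc G par k \<inter> K) z1"
    have y2W: "y2 \<in> fib G X (insert k (desc G par k)) z0" using upd_W[OF z0 kG v'] y2 unfolding z1_def by blast
    have "\<forall>t\<in>N. y2 t = z0 t"
    proof
      fix t assume t: "t \<in> N"
      hence "t \<notin> insert k (desc G par k)" using k KN DN desc_K[OF k] by auto
      thus "y2 t = z0 t" using agree_W[OF y2W z0] by auto
    qed
    hence "restrict y2 N = restrict z0 N" by (intro restrict_ext) auto
    thus "(\<Sum>y\<in>fib G X (desc G par k \<inter> D) y2. pp n y) = q n (restrict z0 N) * CD * rho n y2"
      using innerKN[OF kG kD z0 y2W] unfolding CD_def by simp
  qed
  also have "\<dots> = q n (restrict z0 N) * CD * (\<Sum>y2\<in>fib G X (desc G par k \<inter> K) z1. rho n y2)"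
    by (simp add: sum_distrib_left)
  also have "(\<Sum>y2\<in>fib G X (desc G par k \<inter> K) z1. rho n y2)
      = cm X K (r n) (Ax z1 - desc G par k \<inter> K) z1 * (\<Prod>j\<in>K - Ax z1 - desc G par k \<inter> K. cc n j z1)"
  proof (rule marg_rho[OF _ _ z1P])
    show "\<forall>u\<in>K. \<forall>t\<in>desc G par k \<inter> K. t \<in> par u \<longrightarrow> u \<in> desc G par k \<inter> K"
    proof (intro ballI impI)
      fix u t assume "u \<in> K" "t \<in> desc G par k \<inter> K" "t \<in> par u"
      thus "u \<in> desc G par k \<inter> K" using dc_desc[of u t k] KG by auto
    qed
  qed auto
  also have "Ax z1 = Ax z0" by (rule Ax_dep) (use k K_PK in \<open>auto simp: z1_def\<close>)
  also have "Ax z0 - desc G par k \<inter> K = Ax z0 - desc G par k" using Ax_sub by auto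
  also have "K - Ax z0 - desc G par k \<inter> K = K - Ax z0 - desc G par k" by auto
  finally show ?thesis unfolding z1_def CD_def .
qed

lemma AxK_pos: "z \<in> PiE G X \<Longrightarrow> A \<subseteq> K \<Longrightarrow> (\<Prod>j\<in>A. cc n j z) > 0"
  by (rule prod_pos) (use cc_pos KG in blast)

lemma ratio_K1:
  assumes k: "k \<in> K" and z0: "z0 \<in> PiE G X" and kA: "k \<notin> Ax z0"
  shows "ratio (pp n) {z\<in>PiE G X. z k = z0 k} (cyl G X (nondesc G par k) z0) = cc n k z0"
proof -
  have kG: "k \<in> G" using k KG by auto
  define A where "A = Ax z0 - desc G par k"
  define U where "U = K - Ax z0 - desc G par k - {k}"
  define Fac where "Fac = q n (restrict z0 N) * (\<Prod>d\<in>D - desc G par k. cc n d z0) * (cm X K (r n) A z0 * (\<Prod>j\<in>U. cc n j z0))"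
  have num: "\<forall>v'\<in>X k. sum (pp n) (fib G X (desc G par k) (z0(k:=v'))) = Fac * cc n k (z0(k:=v'))"
  proof
    fix v' assume v': "v' \<in> X k"
    have e1: "cm X K (r n) A (z0(k:=v')) = cm X K (r n) A z0" by (rule cm_local) (use kA in \<open>auto simp: A_def\<close>)
    have kin: "k \<in> K - Ax z0 - desc G par k" using k kA s_notin_desc by auto
    have fK: "finite (K - Ax z0 - desc G par k)" using finite_subset[OF KG finG] by auto
    have e2: "(\<Prod>j\<in>K - Ax z0 - desc G par k. cc n j (z0(k:=v'))) = cc n k (z0(k:=v')) * (\<Prod>j\<in>U. cc n j (z0(k:=v')))"
      unfolding U_def using prod.remove[OF fK kin] by simp
    have e3: "(\<Prod>j\<in>U. cc n j (z0(k:=v'))) = (\<Prod>j\<in>U. cc n j z0)"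
    proof (rule prod.cong[OF refl])
      fix j assume j: "j \<in> U"
      have "k \<notin> par j"
      proof
        assume "k \<in> par j"
        hence "j \<in> desc G par k" using child_desc[of j k k] j KG pl_refl unfolding U_def by auto
        thus False using j unfolding U_def by auto
      qed
      thus "cc n j (z0(k:=v')) = cc n j z0" by (intro cc_loc) (use j U_def in auto)
    qed
    show "sum (pp n) (fib G X (desc G par k) (z0(k:=v'))) = Fac * cc n k (z0(k:=v'))"
      unfolding numK[OF k z0 v'] Fac_def A_def[symmetric] e1 e2 e3 by simp
  qed
  have Fpos: "Fac > 0"
  proof -
    have "q n (restrict z0 N) > 0" using qpos restrict_PiE_sub[OF z0 NG] by auto
    moreover have "(\<Prod>d\<in>D - desc G par k. cc n d z0) > 0" by (rule CDpos) (use DG z0 in auto)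
    moreover have "cm X K (r n) A z0 > 0" by (rule cm_pos[OF z0]) (use Ax_sub in \<open>auto simp: A_def\<close>)
    moreover have "(\<Prod>j\<in>U. cc n j z0) > 0" by (rule AxK_pos[OF z0]) (auto simp: U_def)
    ultimately show ?thesis unfolding Fac_def by auto
  qed
  have "ratio (pp n) {z\<in>PiE G X. z k = z0 k} (cyl G X (nondesc G par k) z0) = cc n k (z0(k := z0 k)) / (\<Sum>v'\<in>X k. cc n k (z0(k:=v')))"
    by (rule node_ratio[OF kG z0 num]) (use Fpos in auto)
  thus ?thesis using cc_norm[OF kG z0] by simp
qed

lemma ratio_K2:
  assumes k: "k \<in> K" and z0: "z0 \<in> PiE G X" and kA: "k \<in> Ax z0"
  shows "ratio (pp n) {z\<in>PiE G X. z k = z0 k} (cyl G X (nondesc G par k) z0)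
       = ratio (r n) {u\<in>PiE K X. u k = z0 k} (cyl K X (Ax z0 - desc G par k - {k}) z0)"
proof -
  have kG: "k \<in> G" using k KG by auto
  define A where "A = Ax z0 - desc G par k"
  define U where "U = K - Ax z0 - desc G par k"
  define Fac where "Fac = q n (restrict z0 N) * (\<Prod>d\<in>D - desc G par k. cc n d z0) * (\<Prod>j\<in>U. cc n j z0)"
  have num: "\<forall>v'\<in>X k. sum (pp n) (fib G X (desc G par k) (z0(k:=v'))) = Fac * cm X K (r n) A (z0(k:=v'))"
  proof
    fix v' assume v': "v' \<in> X k"
    have e3: "(\<Prod>j\<in>U. cc n j (z0(k:=v'))) = (\<Prod>j\<in>U. cc n j z0)"
    proof (rule prod.cong[OF refl])
      fix j assume j: "j \<in> U"
      have "k \<notin> par j"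
      proof
        assume "k \<in> par j"
        hence "j \<in> desc G par k" using child_desc[of j k k] j KG pl_refl unfolding U_def by auto
        thus False using j unfolding U_def by auto
      qed
      moreover have "j \<noteq> k" using j kA unfolding U_def by auto
      ultimately show "cc n j (z0(k:=v')) = cc n j z0" by (intro cc_loc) auto
    qed
    show "sum (pp n) (fib G X (desc G par k) (z0(k:=v'))) = Fac * cm X K (r n) A (z0(k:=v'))"
      unfolding numK[OF k z0 v'] Fac_def A_def[symmetric] U_def[symmetric] e3 by simp
  qed
  have Fpos: "Fac > 0"
  proof -
    have "q n (restrict z0 N) > 0" using qpos restrict_PiE_sub[OF z0 NG] by auto
    moreover have "(\<Prod>d\<in>D - desc G par k. cc n d z0) > 0" by (rule CDpos) (use DG z0 in auto)
    moreover have "(\<Prod>j\<in>U. cc n j z0) > 0" by (rule AxK_pos[OF z0]) (auto simp: U_def)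
    ultimately show ?thesis unfolding Fac_def by auto
  qed
  have kA': "k \<in> A" using kA s_notin_desc unfolding A_def by auto
  have AK: "A \<subseteq> K" using Ax_sub unfolding A_def by auto
  have "ratio (pp n) {z\<in>PiE G X. z k = z0 k} (cyl G X (nondesc G par k) z0)
      = cm X K (r n) A (z0(k := z0 k)) / (\<Sum>v'\<in>X k. cm X K (r n) A (z0(k:=v')))"
    by (rule node_ratio[OF kG z0 num]) (use Fpos in auto)
  also have "(\<Sum>v'\<in>X k. cm X K (r n) A (z0(k:=v'))) = cm X K (r n) (A - {k}) z0"
  proof -
    have "(\<Sum>v'\<in>X k. cm X K (r n) A (z0(k:=v'))) = (\<Sum>y1\<in>fib G X {k} z0. cm X K (r n) A y1)"
      by (rule sum_fib_single[OF kG z0, symmetric])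
    also have "\<dots> = cm X K (r n) (A - {k}) z0" by (rule cm_marg[OF KG _ _ z0]) (use kA' k in auto)
    finally show ?thesis .
  qed
  also have "cm X K (r n) A (z0(k := z0 k)) = sum (r n) ({u\<in>PiE K X. u k = z0 k} \<inter> cyl K X (A - {k}) z0)"
  proof -
    have "{u\<in>PiE K X. u k = z0 k} \<inter> cyl K X (A - {k}) z0 = cyl K X A z0" unfolding cyl_def using kA' by auto
    thus ?thesis using cm_cyl[OF KG] by simp
  qed
  also have "cm X K (r n) (A - {k}) z0 = sum (r n) (cyl K X (A - {k}) z0)" by (rule cm_cyl[OF KG])
  finally show ?thesis unfolding ratio_def A_def by simp
qed

lemma Ax_out:
  assumes s: "s \<in> G" "s \<notin> K" and z0: "z0 \<in> PiE G X" and y: "y \<in> fib G X (insert s (desc G par s)) z0"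
  shows "Ax y - desc G par s = Ax z0 - desc G par s"
proof -
  have "k \<in> Ax y \<longleftrightarrow> k \<in> Ax z0" if k: "k \<in> K" "k \<notin> desc G par s" for k
  proof -
    have noW: "\<not> pl t k" if "t \<in> insert s (desc G par s)" for t
    proof
      assume p: "pl t k"
      have "pl s t" using that pl_refl desc_iff by auto
      hence "pl s k" using pl_trans p by blast
      moreover have "s \<noteq> k" using s k by auto
      ultimately have "k \<in> desc G par s" using k KG unfolding desc_iff by auto
      thus False using k by auto
    qed
    have ag: "y t = z0 t" if "pl t k" for t
    proof -
      have "t \<notin> insert s (desc G par s)" using noW that by blast
      thus ?thesis using agree_W[OF y z0] by blast
    qed
    have "(\<forall>t\<in>Tz y. \<not> pl t k) \<longleftrightarrow> (\<forall>t\<in>Tz z0. \<not> pl t k)"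
      unfolding Tz_def using ag by auto
    thus ?thesis unfolding Ax_def using k by auto
  qed
  thus ?thesis using Ax_sub by blast
qed

lemma ratio_N:
  assumes s: "s \<in> N" and z0: "z0 \<in> PiE G X"
  shows "ratio (pp n) {z\<in>PiE G X. z s = z0 s} (cyl G X (nondesc G par s) z0)
       = ratio (q n) {w\<in>PiE N X. w s = z0 s} (cyl N X (N \<inter> nondesc G par s) z0)"
proof -
  have sG: "s \<in> G" using s NG by auto
  have sK: "s \<notin> K" "s \<notin> D" using s KN DN by auto
  define Ns where "Ns = desc G par s \<inter> N"
  define Ks where "Ks = desc G par s \<inter> K"
  define Ds where "Ds = desc G par s \<inter> D"
  define A where "A = Ax z0 - desc G par s"
  define U where "U = K - A - desc G par s"
  define CD where "CD = (\<Prod>d\<in>D - desc G par s. cc n d z0)"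
  define m0 where "m0 = cm X K (r n) A z0 * (\<Prod>j\<in>U. cc n j z0)"
  have dsplit: "desc G par s = Ns \<union> (Ks \<union> Ds)" unfolding Ns_def Ks_def Ds_def using GKDN desc_sub by auto
  have num: "\<forall>v'\<in>X s. sum (pp n) (fib G X (desc G par s) (z0(s:=v'))) = (CD * m0) * cm X N (q n) (N - Ns) (z0(s:=v'))"
  proof
    fix v' assume v': "v' \<in> X s"
    define z1 where "z1 = z0(s:=v')"
    have z1P: "z1 \<in> PiE G X" unfolding z1_def by (rule upd_PiE[OF z0 sG v'])
    have "sum (pp n) (fib G X (desc G par s) z1) = (\<Sum>y1\<in>fib G X Ns z1. \<Sum>y\<in>fib G X (Ks \<union> Ds) y1. pp n y)"
      unfolding dsplit by (rule fib_split[OF finG finX _ z1P]) (use KN DN in \<open>auto simp: Ns_def Ks_def Ds_def\<close>)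
    also have "\<dots> = (\<Sum>y1\<in>fib G X Ns z1. q n (restrict y1 N) * CD * m0)"
    proof (rule sum.cong[OF refl])
      fix y1 assume y1: "y1 \<in> fib G X Ns z1"
      have y1P: "y1 \<in> PiE G X" using y1 fib_sub by blast
      have y1W: "y1 \<in> fib G X (insert s (desc G par s)) z0" using upd_W[OF z0 sG v'] y1 unfolding z1_def Ns_def by blast
      have "(\<Sum>y\<in>fib G X (Ks \<union> Ds) y1. pp n y) = (\<Sum>y2\<in>fib G X Ks y1. \<Sum>y\<in>fib G X Ds y2. pp n y)"
        by (rule fib_split[OF finG finX _ y1P]) (use KD in \<open>auto simp: Ks_def Ds_def\<close>)
      also have "\<dots> = (\<Sum>y2\<in>fib G X Ks y1. q n (restrict y1 N) * CD * rho n y2)"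
      proof (rule sum.cong[OF refl])
        fix y2 assume y2: "y2 \<in> fib G X Ks y1"
        have y2W: "y2 \<in> fib G X (insert s (desc G par s)) z0"
          using fib_trans[OF y1W y2] fib_mono[of y2 G X _ z0 "insert s (desc G par s)"] unfolding Ks_def by blast
        have "restrict y2 N = restrict y1 N"
          by (rule restrict_ext) (use fib_agree[OF y2 y1P] KN in \<open>auto simp: Ks_def\<close>)
        thus "(\<Sum>y\<in>fib G X Ds y2. pp n y) = q n (restrict y1 N) * CD * rho n y2"
          using innerKN[OF sG sK(2) z0 y2W] unfolding CD_def Ds_def by simp
      qed
      also have "\<dots> = q n (restrict y1 N) * CD * (\<Sum>y2\<in>fib G X Ks y1. rho n y2)" by (simp add: sum_distrib_left)
      also have "(\<Sum>y2\<in>fib G X Ks y1. rho n y2) = cm X K (r n) (Ax y1 - Ks) y1 * (\<Prod>j\<in>K - Ax y1 - Ks. cc n j y1)"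
      proof (rule marg_rho[OF _ _ y1P])
        show "\<forall>u\<in>K. \<forall>t\<in>Ks. t \<in> par u \<longrightarrow> u \<in> Ks"
        proof (intro ballI impI)
          fix u t assume "u \<in> K" "t \<in> Ks" "t \<in> par u"
          thus "u \<in> Ks" using dc_desc[of u t s] KG unfolding Ks_def by auto
        qed
      qed (auto simp: Ks_def)
      also have "\<dots> = m0"
      proof -
        have a1: "Ax y1 - Ks = A" unfolding A_def Ks_def using Ax_out[OF sG sK(1) z0 y1W] Ax_sub by blast
        have a2: "K - Ax y1 - Ks = U" unfolding U_def A_def Ks_def using Ax_out[OF sG sK(1) z0 y1W] Ax_sub by blast
        have "cm X K (r n) A y1 = cm X K (r n) A z0"
        proof (rule cm_local)
          show "\<forall>t\<in>A. y1 t = z0 t"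
          proof
            fix t assume "t \<in> A"
            hence "t \<in> K" "t \<notin> desc G par s" using Ax_sub unfolding A_def by auto
            hence "t \<notin> insert s (desc G par s)" using sK by auto
            thus "y1 t = z0 t" using agree_W[OF y1W z0] by blast
          qed
        qed
        moreover have "(\<Prod>j\<in>U. cc n j y1) = (\<Prod>j\<in>U. cc n j z0)"
          by (rule prod_fib_const[OF _ y1W z0]) (use W_par_disj[OF sG] KG sK in \<open>auto simp: U_def\<close>)
        ultimately show ?thesis unfolding a1 a2 m0_def by simp
      qed
      finally show "(\<Sum>y\<in>fib G X (Ks \<union> Ds) y1. pp n y) = q n (restrict y1 N) * CD * m0" .
    qed
    also have "\<dots> = (CD * m0) * (\<Sum>y1\<in>fib G X Ns z1. cm X N (q n) N y1)"
      by (simp add: sum_distrib_left cm_full[OF NG] fib_sub[THEN subsetD] algebra_simps)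
    also have "(\<Sum>y1\<in>fib G X Ns z1. cm X N (q n) N y1) = cm X N (q n) (N - Ns) z1"
      by (rule cm_marg[OF NG _ _ z1P]) (auto simp: Ns_def)
    finally show "sum (pp n) (fib G X (desc G par s) (z0(s:=v'))) = (CD * m0) * cm X N (q n) (N - Ns) (z0(s:=v'))"
      unfolding z1_def .
  qed
  have Fpos: "CD * m0 > 0"
  proof -
    have "CD > 0" unfolding CD_def by (rule CDpos) (use DG z0 in auto)
    moreover have "cm X K (r n) A z0 > 0" by (rule cm_pos[OF z0]) (use Ax_sub in \<open>auto simp: A_def\<close>)
    moreover have "(\<Prod>j\<in>U. cc n j z0) > 0" by (rule AxK_pos[OF z0]) (auto simp: U_def)
    ultimately show ?thesis unfolding m0_def by auto
  qed
  have sNs: "s \<in> N - Ns" using s s_notin_desc unfolding Ns_def by auto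
  have "ratio (pp n) {z\<in>PiE G X. z s = z0 s} (cyl G X (nondesc G par s) z0)
      = cm X N (q n) (N - Ns) (z0(s := z0 s)) / (\<Sum>v'\<in>X s. cm X N (q n) (N - Ns) (z0(s:=v')))"
    by (rule node_ratio[OF sG z0 num]) (use Fpos in auto)
  also have "(\<Sum>v'\<in>X s. cm X N (q n) (N - Ns) (z0(s:=v'))) = cm X N (q n) (N - Ns - {s}) z0"
  proof -
    have "(\<Sum>v'\<in>X s. cm X N (q n) (N - Ns) (z0(s:=v'))) = (\<Sum>y1\<in>fib G X {s} z0. cm X N (q n) (N - Ns) y1)"
      by (rule sum_fib_single[OF sG z0, symmetric])
    also have "\<dots> = cm X N (q n) (N - Ns - {s}) z0" by (rule cm_marg[OF NG _ _ z0]) (use sNs s in auto)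
    finally show ?thesis .
  qed
  also have "N - Ns - {s} = N \<inter> nondesc G par s" unfolding Ns_def nondesc_def using NG by auto
  also have "cm X N (q n) (N - Ns) (z0(s := z0 s)) = sum (q n) ({w\<in>PiE N X. w s = z0 s} \<inter> cyl N X (N \<inter> nondesc G par s) z0)"
  proof -
    have "{w\<in>PiE N X. w s = z0 s} \<inter> cyl N X (N \<inter> nondesc G par s) z0 = cyl N X (N - Ns) z0"
      unfolding cyl_def Ns_def nondesc_def using s NG s_notin_desc[of s] by auto
    thus ?thesis using cm_cyl[OF NG] by simp
  qed
  also have "cm X N (q n) (N \<inter> nondesc G par s) z0 = sum (q n) (cyl N X (N \<inter> nondesc G par s) z0)" by (rule cm_cyl[OF NG])
  finally show ?thesis unfolding ratio_def by simp
qed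

end


context comp
begin

lemma z0of_agree:
  assumes s: "s \<in> G" and xN: "xN \<in> PiE (nondesc G par s) X" and t: "t \<in> nondesc G par s"
  shows "z0of s xN v t = xN t"
proof -
  have ex: "\<forall>t\<in>nondesc G par s \<inter> G. ext G X (nondesc G par s) xN t = xN t"
    by (rule ext_in(2)[OF neX]) (use xN in auto)
  have "t \<noteq> s" "t \<in> G" using t unfolding nondesc_iff by auto
  thus ?thesis using ex t unfolding z0of_def by auto
qed

lemma K2_mem:
  assumes k: "k \<in> K" and xN: "xN \<in> PiE (nondesc G par k) X" and kA: "k \<in> Ax xN"
  shows "(\<lambda>v. if v \<in> X k then R {u\<in>PiE K X. u k = v} (cyl K X (Ax xN - desc G par k - {k}) xN) else 0) \<in> M k (restrict xN (par k))"
proof -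
  have kG: "k \<in> G" using k KG by auto
  define Nd where "Nd = nondesc K (sub_pa par K) k"
  have Nd: "Nd = nondesc G par k \<inter> K" unfolding Nd_def by (rule sub_nondesc[OF closedK k])
  define C where "C = Ax xN - desc G par k - {k}"
  have CNd: "C \<subseteq> Nd"
  proof
    fix t assume t: "t \<in> C"
    hence tK: "t \<in> K" and tG: "t \<in> G" and td: "t \<notin> desc G par k" and tk: "t \<noteq> k"
      using Ax_sub KG unfolding C_def by auto
    have "\<not> pl k t"
    proof
      assume "pl k t"
      hence "t \<in> desc G par k" using tG tk unfolding desc_iff by auto
      thus False using td by auto
    qed
    hence "t \<in> nondesc G par k" using tG tk unfolding nondesc_iff by auto
    thus "t \<in> Nd" using Nd tK by auto
  qed
  have fcpR: "full_cond_prob (PiE K X) R" using irr_fcp[OF Rirr] .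
  have xpP: "restrict xN (par k) \<in> PiE (par k) X" using xN par_nondesc[OF kG] by (auto simp: PiE_def Pi_def)
  show ?thesis unfolding C_def[symmetric]
  proof (rule coarsen[OF finite_subset[OF KG finG] _ _ fcpR, of Nd C xN k "\<lambda>xN'. sub_M par M K xP k (restrict xN' (sub_pa par K k))"])
    show "\<forall>t\<in>K. finite (X t)" using finX KG by auto
    show "\<forall>t\<in>K. X t \<noteq> {}" using neX KG by auto
    show "Nd \<subseteq> K" using Nd by auto
    show "C \<subseteq> Nd" by (rule CNd)
    show "\<forall>t\<in>C. xN t \<in> X t" using CNd Nd xN by auto
    show "\<forall>xN'\<in>PiE Nd X. (\<lambda>v. if v \<in> X k then R {z \<in> PiE K X. z k = v} {z \<in> PiE K X. restrict z Nd = xN'} else 0)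
        \<in> sub_M par M K xP k (restrict xN' (sub_pa par K k))"
      unfolding Nd_def using irr_loc[OF Rirr k] by blast
    show "\<forall>xN'\<in>PiE Nd X. (\<forall>t\<in>C. xN' t = xN t) \<longrightarrow> sub_M par M K xP k (restrict xN' (sub_pa par K k)) = M k (restrict xN (par k))"
    proof (intro ballI impI)
      fix xN' assume ag: "\<forall>t\<in>C. xN' t = xN t"
      have "restrict (\<lambda>t. if t \<in> K then restrict xN' (sub_pa par K k) t else xP t) (par k) = restrict xN (par k)"
      proof (rule restrict_ext)
        fix t assume t: "t \<in> par k"
        show "(if t \<in> K then restrict xN' (sub_pa par K k) t else xP t) = xN t"
        proof (cases "t \<in> K")
          case True
          have "t \<in> Ax xN" using Ax_anc[OF kA t True] .
          moreover have "t \<in> nondesc G par k" using par_nondesc[OF kG] t by auto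
          ultimately have "t \<notin> desc G par k" "t \<noteq> k" using desc_nondesc_disj nondesc_iff by auto
          hence "t \<in> C" unfolding C_def using \<open>t \<in> Ax xN\<close> by auto
          thus ?thesis using True t ag unfolding sub_pa_def by auto
        next
          case False
          thus ?thesis using Ax_par[OF kA t False] by simp
        qed
      qed
      thus "sub_M par M K xP k (restrict xN' (sub_pa par K k)) = M k (restrict xN (par k))"
        unfolding sub_M_def by simp
    qed
    show "convex_fun_set (M k (restrict xN (par k)))" using Mprops[OF kG xpP] by auto
  qed
qed

theorem comp_main:
  "\<exists>P\<in>irr_ext G par X M. \<forall>F f. (\<forall>w\<in>PiE N X. F w \<noteq> 0 \<longrightarrow> restrict w PK = xP) \<longrightarrow>
     (\<Sum>z\<in>PiE G X. F (restrict z N) * f (restrict z K) * P {z} (PiE G X))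
     = (\<Sum>w\<in>PiE N X. F w * Q {w} (PiE N X)) * (\<Sum>u\<in>PiE K X. f u * R {u} (PiE K X))"
proof -
  have ppos: "\<forall>n. \<forall>z\<in>PiE G X. pp n z > 0" using pp_pos by auto
  obtain \<sigma> P where sP: "strict_mono \<sigma>" "full_cond_prob (PiE G X) P"
    and L: "\<forall>A B. A \<subseteq> PiE G X \<longrightarrow> B \<subseteq> PiE G X \<longrightarrow> B \<noteq> {} \<longrightarrow> (\<lambda>n. ratio (pp (\<sigma> n)) A B) \<longlonglongrightarrow> P A B"
    using ratio_limit[OF finO ppos] by blast
  have loc: "(\<lambda>v. if v \<in> X s then P {z\<in>PiE G X. z s = v} {z\<in>PiE G X. restrict z (nondesc G par s) = xN} else 0)
      \<in> M s (restrict xN (par s))" if s: "s \<in> G" and xN: "xN \<in> PiE (nondesc G par s) X" for s xN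
  proof -
    have xpP: "restrict xN (par s) \<in> PiE (par s) X" using xN par_nondesc[OF s] by (auto simp: PiE_def Pi_def)
    define tgt where "tgt v = P {z\<in>PiE G X. z s = v} {z\<in>PiE G X. restrict z (nondesc G par s) = xN}" for v
    have Pval: "(\<lambda>n. ratio (pp (\<sigma> n)) {z\<in>PiE G X. z s = z0of s xN v s} (cyl G X (nondesc G par s) (z0of s xN v))) \<longlonglongrightarrow> tgt v"
      if v: "v \<in> X s" for v
    proof -
      note zz = z0of[OF s xN v]
      have "cyl G X (nondesc G par s) (z0of s xN v) \<noteq> {}"
        by (rule cyl_ne[OF neX]) (use zz(1) nondesc_sub in \<open>auto simp: PiE_def Pi_def\<close>)
      hence "(\<lambda>n. ratio (pp (\<sigma> n)) {z\<in>PiE G X. z s = z0of s xN v s} (cyl G X (nondesc G par s) (z0of s xN v)))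
          \<longlonglongrightarrow> P {z\<in>PiE G X. z s = z0of s xN v s} (cyl G X (nondesc G par s) (z0of s xN v))"
        by (intro L[rule_format] cyl_sub) auto
      thus ?thesis unfolding tgt_def zz(3) zz(4) .
    qed
    have chcase: "(\<lambda>v. if v \<in> X s then tgt v else 0) \<in> M s (restrict xN (par s))"
      if cc_case: "\<forall>v\<in>X s. \<forall>n. ratio (pp n) {z\<in>PiE G X. z s = z0of s xN v s} (cyl G X (nondesc G par s) (z0of s xN v)) = cc n s (z0of s xN v)"
    proof -
      have "(\<lambda>v. if v \<in> X s then tgt v else 0) = ch s (restrict xN (par s))"
      proof
        fix v show "(if v \<in> X s then tgt v else 0) = ch s (restrict xN (par s)) v"
        proof (cases "v \<in> X s")
          case False thus ?thesis using ch_in(2)[OF s xpP] unfolding is_pmf_on_def by auto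
        next
          case v: True
          note zz = z0of[OF s xN v]
          have "(\<lambda>n. cc (\<sigma> n) s (z0of s xN v)) \<longlonglongrightarrow> ch s (restrict (z0of s xN v) (par s)) (z0of s xN v s)"
            using LIMSEQ_subseq_LIMSEQ[OF cc_lim[of s "z0of s xN v"] sP(1), unfolded o_def] .
          moreover have "(\<lambda>n. cc (\<sigma> n) s (z0of s xN v)) \<longlonglongrightarrow> tgt v" using Pval[OF v] cc_case v by simp
          ultimately have "tgt v = ch s (restrict (z0of s xN v) (par s)) (z0of s xN v s)" using LIMSEQ_unique by blast
          thus ?thesis using v zz(2) zz(5) by simp
        qed
      qed
      thus ?thesis using ch_in(1)[OF s xpP] by simp
    qed
    have main: "(\<lambda>v. if v \<in> X s then tgt v else 0) \<in> M s (restrict xN (par s))"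
    proof -
      have "s \<in> D \<or> s \<in> K \<or> s \<in> N" using s GKDN by auto
      moreover
      { assume d: "s \<in> D"
        have ?thesis by (rule chcase) (use ratio_D[OF d] z0of(1)[OF s xN] in auto) }
      moreover
      { assume k: "s \<in> K"
        have Aeq: "Ax (z0of s xN v) = Ax xN" if v: "v \<in> X s" for v
        proof (rule Ax_dep, rule ballI)
          fix t assume t: "t \<in> PK"
          hence "t \<in> nondesc G par s" using PK_N N_nondesc_K[OF k] by auto
          thus "z0of s xN v t = xN t" by (rule z0of_agree[OF s xN])
        qed
        have ?thesis
        proof (cases "s \<in> Ax xN")
          case False
          show ?thesis by (rule chcase) (use ratio_K1[OF k] z0of(1)[OF s xN] Aeq False in auto)
        next
          case True
          define C where "C = Ax xN - desc G par s - {s}"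
          have CN: "C \<subseteq> nondesc G par s"
          proof
            fix t assume t: "t \<in> C"
            hence "t \<in> G" "t \<noteq> s" "t \<notin> desc G par s" using Ax_sub KG unfolding C_def by auto
            thus "t \<in> nondesc G par s" using desc_iff nondesc_iff by auto
          qed
          have "(\<lambda>v. if v \<in> X s then tgt v else 0) = (\<lambda>v. if v \<in> X s then R {u\<in>PiE K X. u s = v} (cyl K X C xN) else 0)"
          proof
            fix v show "(if v \<in> X s then tgt v else 0) = (if v \<in> X s then R {u\<in>PiE K X. u s = v} (cyl K X C xN) else 0)"
            proof (cases "v \<in> X s")
              case v: True
              note zz = z0of[OF s xN v]
              have cyleq: "cyl K X C (z0of s xN v) = cyl K X C xN"
              proof -
                have "\<forall>t\<in>C. z0of s xN v t = xN t"
                proof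
                  fix t assume t: "t \<in> C"
                  hence "t \<in> G" "t \<noteq> s" "t \<notin> desc G par s" using Ax_sub KG unfolding C_def by auto
                  hence "t \<in> nondesc G par s" using desc_iff nondesc_iff by auto
                  thus "z0of s xN v t = xN t" by (rule z0of_agree[OF s xN])
                qed
                thus ?thesis unfolding cyl_def by auto
              qed
              have r1: "(\<lambda>n. ratio (pp (\<sigma> n)) {z\<in>PiE G X. z s = z0of s xN v s} (cyl G X (nondesc G par s) (z0of s xN v)))
                  = (\<lambda>n. ratio (r (\<sigma> n)) {u\<in>PiE K X. u s = v} (cyl K X C xN))"
                using ratio_K2[OF k zz(1)] Aeq[OF v] True zz(2) cyleq unfolding C_def by auto
              have "cyl K X C xN \<noteq> {}"
                by (rule cyl_ne) (use neX KG xN CN Ax_sub[of xN] in \<open>auto simp: C_def\<close>)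
              hence lR0: "(\<lambda>n. ratio (r n) {u\<in>PiE K X. u s = v} (cyl K X C xN)) \<longlonglongrightarrow> R {u\<in>PiE K X. u s = v} (cyl K X C xN)"
                by (intro rlim[rule_format] cyl_sub) auto
              have lR: "(\<lambda>n. ratio (r (\<sigma> n)) {u\<in>PiE K X. u s = v} (cyl K X C xN)) \<longlonglongrightarrow> R {u\<in>PiE K X. u s = v} (cyl K X C xN)"
                using LIMSEQ_subseq_LIMSEQ[OF lR0 sP(1)] unfolding o_def .
              have "tgt v = R {u\<in>PiE K X. u s = v} (cyl K X C xN)" by (rule LIMSEQ_unique[OF Pval[OF v, unfolded r1] lR])
              thus ?thesis using v by simp
            qed simp
          qed
          thus ?thesis using K2_mem[OF k xN True] unfolding C_def by simp
        qed }
      moreover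
      { assume sN: "s \<in> N"
        define Nn where "Nn = N \<inter> nondesc G par s"
        have Nn': "nondesc N (sub_pa par N) s = Nn" unfolding Nn_def using sub_nondesc[OF closed_N sN] by auto
        define xn where "xn = restrict xN Nn"
        have xn: "xn \<in> PiE (nondesc N (sub_pa par N) s) X" unfolding Nn' xn_def Nn_def using xN by (auto simp: PiE_def Pi_def)
        have QM: "(\<lambda>v. if v \<in> X s then Q {z\<in>PiE N X. z s = v} {z\<in>PiE N X. restrict z Nn = xn} else 0)
            \<in> M s (restrict (restrict xn (sub_pa par N s)) (par s))"
          using irr_loc[OF Qirr sN xn] unfolding Nn' by simp
        have parsNn: "par s \<subseteq> Nn" unfolding Nn_def using par_N[OF sN] par_nondesc[OF s] by auto
        have e1: "restrict (restrict xn (sub_pa par N s)) (par s) = restrict xN (par s)"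
          unfolding xn_def sub_pa_def using parsNn by (auto simp: restrict_def fun_eq_iff Nn_def)
        have "(\<lambda>v. if v \<in> X s then tgt v else 0) = (\<lambda>v. if v \<in> X s then Q {z\<in>PiE N X. z s = v} {z\<in>PiE N X. restrict z Nn = xn} else 0)"
        proof
          fix v show "(if v \<in> X s then tgt v else 0) = (if v \<in> X s then Q {z\<in>PiE N X. z s = v} {z\<in>PiE N X. restrict z Nn = xn} else 0)"
          proof (cases "v \<in> X s")
            case v: True
            note zz = z0of[OF s xN v]
            have xnP: "xn \<in> PiE Nn X" using xn Nn' by simp
            have cyleq: "{z\<in>PiE N X. restrict z Nn = xn} = cyl N X Nn (z0of s xN v)"
            proof -
              have "\<forall>t\<in>Nn. z0of s xN v t = xn t"
                unfolding xn_def Nn_def using z0of_agree[OF s xN] by auto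
              thus ?thesis using restr_cyl[OF xnP, of N] unfolding cyl_def by auto
            qed
            have r1: "(\<lambda>n. ratio (pp (\<sigma> n)) {z\<in>PiE G X. z s = z0of s xN v s} (cyl G X (nondesc G par s) (z0of s xN v)))
                = (\<lambda>n. ratio (q (\<sigma> n)) {w\<in>PiE N X. w s = v} {z\<in>PiE N X. restrict z Nn = xn})"
              using ratio_N[OF sN zz(1)] zz(2) cyleq unfolding Nn_def by auto
            have "{z\<in>PiE N X. restrict z Nn = xn} \<noteq> {}" unfolding cyleq
              by (rule cyl_ne) (use neX NG zz(1) in \<open>auto simp: Nn_def PiE_def Pi_def\<close>)
            hence lQ0: "(\<lambda>n. ratio (q n) {w\<in>PiE N X. w s = v} {z\<in>PiE N X. restrict z Nn = xn}) \<longlonglongrightarrow> Q {w\<in>PiE N X. w s = v} {z\<in>PiE N X. restrict z Nn = xn}"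
              by (intro qlim[rule_format]) (auto simp: cyl_sub)
            have lQ: "(\<lambda>n. ratio (q (\<sigma> n)) {w\<in>PiE N X. w s = v} {z\<in>PiE N X. restrict z Nn = xn}) \<longlonglongrightarrow> Q {w\<in>PiE N X. w s = v} {z\<in>PiE N X. restrict z Nn = xn}"
              using LIMSEQ_subseq_LIMSEQ[OF lQ0 sP(1)] unfolding o_def .
            have "tgt v = Q {w\<in>PiE N X. w s = v} {z\<in>PiE N X. restrict z Nn = xn}" by (rule LIMSEQ_unique[OF Pval[OF v, unfolded r1] lQ])
            thus ?thesis using v by simp
          qed simp
        qed
        hence ?thesis using QM e1 by simp }
      ultimately show ?thesis by blast
    qed
    show ?thesis using main unfolding tgt_def .
  qed
  have Pirr: "P \<in> irr_ext G par X M" unfolding irr_ext_def using sP(2) loc by blast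
  have expect: "(\<Sum>z\<in>PiE G X. F (restrict z N) * f (restrict z K) * P {z} (PiE G X))
     = (\<Sum>w\<in>PiE N X. F w * Q {w} (PiE N X)) * (\<Sum>u\<in>PiE K X. f u * R {u} (PiE K X))"
    if Find: "\<forall>w\<in>PiE N X. F w \<noteq> 0 \<longrightarrow> restrict w PK = xP" for F f
  proof -
    have single: "(\<lambda>n. h (\<sigma> n) w) \<longlonglongrightarrow> P' {w} Om'"
      if "\<forall>n. sum (h n) Om' = 1" "\<forall>A B. A \<subseteq> Om' \<longrightarrow> B \<subseteq> Om' \<longrightarrow> B \<noteq> {} \<longrightarrow> (\<lambda>n. ratio (h (\<sigma> n)) A B) \<longlonglongrightarrow> P' A B" "w \<in> Om'"
      for h :: "nat \<Rightarrow> ('a \<Rightarrow> 'b) \<Rightarrow> real" and Om' P' w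
    proof -
      have "(\<lambda>n. ratio (h (\<sigma> n)) {w} Om') \<longlonglongrightarrow> P' {w} Om'" using that by auto
      moreover have "ratio (h (\<sigma> n)) {w} Om' = h (\<sigma> n) w" for n unfolding ratio_def using that by auto
      ultimately show ?thesis by simp
    qed
    have qs: "(\<lambda>n. q (\<sigma> n) w) \<longlonglongrightarrow> Q {w} (PiE N X)" if "w \<in> PiE N X" for w
    proof -
      have "\<forall>A B. A \<subseteq> PiE N X \<longrightarrow> B \<subseteq> PiE N X \<longrightarrow> B \<noteq> {} \<longrightarrow> (\<lambda>n. ratio (q (\<sigma> n)) A B) \<longlonglongrightarrow> Q A B"
        using qlim LIMSEQ_subseq_LIMSEQ[OF _ sP(1)] by (auto simp: o_def)
      thus ?thesis using single[of q "PiE N X" Q w] qsum that by auto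
    qed
    have rs: "(\<lambda>n. r (\<sigma> n) u) \<longlonglongrightarrow> R {u} (PiE K X)" if "u \<in> PiE K X" for u
    proof -
      have "\<forall>A B. A \<subseteq> PiE K X \<longrightarrow> B \<subseteq> PiE K X \<longrightarrow> B \<noteq> {} \<longrightarrow> (\<lambda>n. ratio (r (\<sigma> n)) A B) \<longlonglongrightarrow> R A B"
        using rlim LIMSEQ_subseq_LIMSEQ[OF _ sP(1)] by (auto simp: o_def)
      thus ?thesis using single[of r "PiE K X" R u] rsum that by auto
    qed
    have ps: "(\<lambda>n. pp (\<sigma> n) z) \<longlonglongrightarrow> P {z} (PiE G X)" if "z \<in> PiE G X" for z
      using single[of pp "PiE G X" P z] pp_total L that by auto
    have l1: "(\<lambda>n. \<Sum>z\<in>PiE G X. F (restrict z N) * f (restrict z K) * pp (\<sigma> n) z)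
        \<longlonglongrightarrow> (\<Sum>z\<in>PiE G X. F (restrict z N) * f (restrict z K) * P {z} (PiE G X))"
      by (intro tendsto_sum tendsto_mult tendsto_const ps)
    have l2: "(\<lambda>n. (\<Sum>w\<in>PiE N X. F w * q (\<sigma> n) w) * (\<Sum>u\<in>PiE K X. f u * r (\<sigma> n) u))
        \<longlonglongrightarrow> (\<Sum>w\<in>PiE N X. F w * Q {w} (PiE N X)) * (\<Sum>u\<in>PiE K X. f u * R {u} (PiE K X))"
      by (intro tendsto_mult tendsto_sum tendsto_const qs rs)
    have e: "(\<lambda>n. \<Sum>z\<in>PiE G X. F (restrict z N) * f (restrict z K) * pp (\<sigma> n) z)
        = (\<lambda>n. (\<Sum>w\<in>PiE N X. F w * q (\<sigma> n) w) * (\<Sum>u\<in>PiE K X. f u * r (\<sigma> n) u))"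
      using pp_expect[OF Find] by simp
    show ?thesis using LIMSEQ_unique[OF l1[unfolded e] l2] .
  qed
  show ?thesis using Pirr expect by blast
qed

end


lemma final_real:
  fixes U V W :: "real set"
  assumes ne: "U \<noteq> {}" "V \<noteq> {}" "W \<noteq> {}"
    and bd: "bdd_below U" "bdd_above U" "bdd_below V" "bdd_below W"
    and Unn: "\<forall>u\<in>U. u \<ge> 0"
    and ge: "\<forall>w\<in>W. \<exists>u\<in>U. Inf V * u \<le> w"
    and le: "\<forall>u\<in>U. \<forall>v\<in>V. Inf W \<le> u * v"
  shows "(Inf V \<ge> 0 \<longrightarrow> Inf W = Inf V * Inf U) \<and> (Inf V \<le> 0 \<longrightarrow> Inf W = Inf V * Sup U)"
proof -
  define a where "a = Inf V"
  define L where "L = Inf W"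
  have Lau: "L \<le> a * u" if u: "u \<in> U" for u
  proof (cases "u = 0")
    case True
    obtain v where "v \<in> V" using ne by auto
    thus ?thesis using le u True unfolding L_def by fastforce
  next
    case False
    hence up: "u > 0" using Unn u by (simp add: less_le)
    have "L / u \<le> a" unfolding a_def
    proof (rule cInf_greatest[OF ne(2)])
      fix v assume "v \<in> V"
      hence "L \<le> u * v" using le u unfolding L_def by auto
      thus "L / u \<le> v" using up by (simp add: field_simps)
    qed
    thus ?thesis using up by (simp add: field_simps)
  qed
  have "a \<ge> 0 \<longrightarrow> L = a * Inf U"
  proof
    assume a0: "a \<ge> 0"
    have "a * Inf U \<le> L" unfolding L_def
    proof (rule cInf_greatest[OF ne(3)])
      fix w assume "w \<in> W"
      then obtain u where u: "u \<in> U" "a * u \<le> w" using ge unfolding a_def by auto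
      have "Inf U \<le> u" using cInf_lower[OF u(1) bd(1)] .
      hence "a * Inf U \<le> a * u" using a0 by (simp add: mult_left_mono)
      thus "a * Inf U \<le> w" using u by auto
    qed
    moreover have "L \<le> a * Inf U"
    proof (cases "a = 0")
      case True
      obtain u where "u \<in> U" using ne by auto
      thus ?thesis using Lau True by fastforce
    next
      case False
      hence ap: "a > 0" using a0 by simp
      have "L / a \<le> Inf U"
      proof (rule cInf_greatest[OF ne(1)])
        fix u assume "u \<in> U"
        hence "L \<le> a * u" using Lau by auto
        thus "L / a \<le> u" using ap by (simp add: field_simps mult.commute)
      qed
      thus ?thesis using ap by (simp add: field_simps)
    qed
    ultimately show "L = a * Inf U" by simp
  qed
  moreover have "a \<le> 0 \<longrightarrow> L = a * Sup U"
  proof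
    assume a0: "a \<le> 0"
    have "a * Sup U \<le> L" unfolding L_def
    proof (rule cInf_greatest[OF ne(3)])
      fix w assume "w \<in> W"
      then obtain u where u: "u \<in> U" "a * u \<le> w" using ge unfolding a_def by auto
      have "u \<le> Sup U" using cSup_upper[OF u(1) bd(2)] .
      hence "a * Sup U \<le> a * u" using a0 by (simp add: mult_left_mono_neg)
      thus "a * Sup U \<le> w" using u by auto
    qed
    moreover have "L \<le> a * Sup U"
    proof (cases "a = 0")
      case True
      obtain u where "u \<in> U" using ne by auto
      thus ?thesis using Lau True by fastforce
    next
      case False
      hence an: "a < 0" using a0 by simp
      have "Sup U \<le> L / a"
      proof (rule cSup_least[OF ne(1)])
        fix u assume "u \<in> U"
        hence "L \<le> a * u" using Lau by auto
        thus "u \<le> L / a" using an by (simp add: field_simps mult.commute)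
      qed
      thus ?thesis using an by (simp add: field_simps)
    qed
    ultimately show "L = a * Sup U" by simp
  qed
  ultimately show ?thesis unfolding a_def L_def by blast
qed


theorem corollary1:
  fixes G :: "'n set" and par :: "'n \<Rightarrow> 'n set" and X :: "'n \<Rightarrow> 'v set"
    and M :: "'n \<Rightarrow> ('n \<Rightarrow> 'v) \<Rightarrow> ('v \<Rightarrow> real) set"
    and K :: "'n set" and f :: "('n \<Rightarrow> 'v) \<Rightarrow> real" and xP :: "'n \<Rightarrow> 'v"
    and g :: "('n \<Rightarrow> 'v) \<Rightarrow> real"
  assumes net: "credal_network G par X M"
    and K_closed: "closed_set G par K"
    and xP: "xP \<in> PiE (parK G par K) X"
    and g_nonneg: "\<forall>y\<in>PiE (nondescK' G par K) X. g y \<ge> 0"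
  defines "a \<equiv> lowE_sub K par X M xP f"
    and "\<phi> \<equiv> (\<lambda>z. g (restrict z (nondescK' G par K)) *
                  (if restrict z (parK G par K) = xP then 1 else 0))"
  shows "(a \<ge> 0 \<longrightarrow> lowE_irr G par X M (\<lambda>z. \<phi> z * f (restrict z K))
                      = a * lowE_sub0 (nondescK G par K) par X M \<phi>)
       \<and> (a \<le> 0 \<longrightarrow> lowE_irr G par X M (\<lambda>z. \<phi> z * f (restrict z K))
                      = a * upE_sub0 (nondescK G par K) par X M \<phi>)"
proof -
  have cn: "cnet G par K X M"
    by unfold_locales (use net K_closed in \<open>auto simp: credal_network_def\<close>)
  interpret C: cnet G par K X M by (rule cn)
  define N where "N = nondescK G par K"
  define PK where "PK = parK G par K"
  define N' where "N' = nondescK' G par K"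
  have N'N: "N' \<subseteq> N" unfolding N'_def N_def nondescK'_def by auto
  have PKN: "PK \<subseteq> N" unfolding PK_def N_def by (rule C.PK_N)
  define irrN where "irrN = irr_ext N (sub_pa par N) X (\<lambda>s z. M s (restrict z (par s)))"
  define irrK where "irrK = irr_ext K (sub_pa par K) X (sub_M par M K xP)"
  define U where "U = {(\<Sum>z\<in>PiE N X. \<phi> z * Q {z} (PiE N X)) | Q. Q \<in> irrN}"
  define V where "V = {(\<Sum>z\<in>PiE K X. f z * R {z} (PiE K X)) | R. R \<in> irrK}"
  define W where "W = {(\<Sum>z\<in>PiE G X. (\<phi> z * f (restrict z K)) * P {z} (PiE G X)) | P. P \<in> irr_ext G par X M}"
  have aV: "a = Inf V" unfolding a_def V_def irrK_def lowE_sub_def lowE_irr_def by simp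
  have loU: "lowE_sub0 (nondescK G par K) par X M \<phi> = Inf U"
    unfolding U_def irrN_def N_def lowE_sub0_def lowE_irr_def by simp
  have upU: "upE_sub0 (nondescK G par K) par X M \<phi> = Sup U"
  proof -
    have "{(\<Sum>z\<in>PiE N X. (- \<phi> z) * Q {z} (PiE N X)) | Q. Q \<in> irrN} = uminus ` U"
      unfolding U_def by (auto simp: sum_negf image_iff)
    hence "upE_sub0 (nondescK G par K) par X M \<phi> = - Inf (uminus ` U)"
      unfolding upE_sub0_def lowE_sub0_def lowE_irr_def irrN_def N_def by simp
    also have "\<dots> = Sup U" unfolding Inf_real_def by (simp add: image_image)
    finally show ?thesis .
  qed
  have LW: "lowE_irr G par X M (\<lambda>z. \<phi> z * f (restrict z K)) = Inf W"
    unfolding W_def lowE_irr_def by simp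
  have phiN: "\<phi> z = \<phi> (restrict z N)" if "z \<in> PiE G X" for z
  proof -
    have "restrict (restrict z N) N' = restrict z N'" using N'N by (simp add: Int_absorb1)
    moreover have "restrict (restrict z N) PK = restrict z PK" using PKN by (simp add: Int_absorb1)
    ultimately show ?thesis unfolding \<phi>_def N'_def PK_def by simp
  qed
  have Fnn: "\<forall>w\<in>PiE N X. \<phi> w \<ge> 0"
  proof
    fix w assume w: "w \<in> PiE N X"
    have "restrict w N' \<in> PiE N' X" using w N'N by (auto simp: PiE_def Pi_def)
    hence "g (restrict w N') \<ge> 0" using g_nonneg unfolding N'_def by auto
    thus "\<phi> w \<ge> 0" unfolding \<phi>_def N'_def by simp
  qed
  have Find: "\<forall>w\<in>PiE N X. \<phi> w \<noteq> 0 \<longrightarrow> restrict w PK = xP"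
    unfolding \<phi>_def PK_def by auto
  have Wsum: "(\<Sum>z\<in>PiE G X. (\<phi> z * f (restrict z K)) * P {z} (PiE G X))
      = (\<Sum>z\<in>PiE G X. \<phi> (restrict z N) * f (restrict z K) * P {z} (PiE G X))" for P
    by (rule sum.cong[OF refl]) (simp add: phiN)
  obtain P0 where P0: "P0 \<in> irr_ext G par X M" using C.exists_irr by auto
  have Q0: "C.Qof P0 \<in> irrN" unfolding irrN_def N_def by (rule C.Q_irr[OF P0])
  define w0 where "w0 = ext N X PK xP"
  have w0: "w0 \<in> PiE N X" unfolding w0_def
    by (rule ext_in(1)) (use C.neX C.NG xP PKN in \<open>auto simp: N_def PK_def\<close>)
  have w0P: "restrict w0 PK = xP" unfolding w0_def
    by (rule restrict_ext_fun) (use C.neX C.NG xP PKN in \<open>auto simp: N_def PK_def\<close>)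
  have R0: "C.Rof P0 w0 \<in> irrK" unfolding irrK_def using C.R_irr[OF P0] w0 w0P unfolding N_def PK_def by auto
  have fcpN: "\<forall>Q\<in>irrN. full_cond_prob (PiE N X) Q" unfolding irrN_def using C.irr_fcp by blast
  have fcpK: "\<forall>R\<in>irrK. full_cond_prob (PiE K X) R" unfolding irrK_def using C.irr_fcp by blast
  have fcpG: "\<forall>P\<in>irr_ext G par X M. full_cond_prob (PiE G X) P" using C.irr_fcp by blast
  have finN: "finite (PiE N X)" "PiE N X \<noteq> {}" unfolding N_def using C.finOT[OF C.NG] C.neOT[OF C.NG] by auto
  have finK: "finite (PiE K X)" "PiE K X \<noteq> {}" using C.finOT[OF C.KG] C.neOT[OF C.KG] by auto
  have finG': "finite (PiE G X)" "PiE G X \<noteq> {}" using C.finO C.neOT[of G] by auto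
  have Une: "U \<noteq> {}" unfolding U_def using Q0 by auto
  have Vne: "V \<noteq> {}" unfolding V_def using R0 by auto
  have Wne: "W \<noteq> {}" unfolding W_def using P0 by auto
  have bdU: "bdd_below U" "bdd_above U" unfolding U_def
    using bdd_below_expect[OF fcpN finN(2,1)] bdd_above_expect[OF fcpN finN(2,1)] by auto
  have bdV: "bdd_below V" unfolding V_def using bdd_below_expect[OF fcpK finK(2,1)] by auto
  have bdW: "bdd_below W" unfolding W_def using bdd_below_expect[OF fcpG finG'(2,1)] by auto
  have Unn: "\<forall>u\<in>U. u \<ge> 0"
  proof
    fix u assume "u \<in> U"
    then obtain Q where Q: "Q \<in> irrN" "u = (\<Sum>z\<in>PiE N X. \<phi> z * Q {z} (PiE N X))" unfolding U_def by auto
    have "\<forall>z\<in>PiE N X. \<phi> z * Q {z} (PiE N X) \<ge> 0"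
      using Fnn fcp_single_bounds(1)[OF fcpN[rule_format, OF Q(1)] finN(2)] by auto
    thus "u \<ge> 0" using Q(2) by (simp add: sum_nonneg)
  qed
  have ge: "\<forall>w\<in>W. \<exists>u\<in>U. Inf V * u \<le> w"
  proof
    fix w assume "w \<in> W"
    then obtain P where P: "P \<in> irr_ext G par X M" "w = (\<Sum>z\<in>PiE G X. (\<phi> z * f (restrict z K)) * P {z} (PiE G X))"
      unfolding W_def by auto
    have "C.Qof P \<in> irrN" unfolding irrN_def N_def by (rule C.Q_irr[OF P(1)])
    hence "(\<Sum>z\<in>PiE N X. \<phi> z * C.Qof P {z} (PiE N X)) \<in> U" unfolding U_def by auto
    moreover have "Inf V * (\<Sum>z\<in>PiE N X. \<phi> z * C.Qof P {z} (PiE N X)) \<le> w"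
      using C.lower_bound[OF P(1) xP, of \<phi> f] Fnn Find P(2) Wsum aV unfolding a_def N_def PK_def by simp
    ultimately show "\<exists>u\<in>U. Inf V * u \<le> w" by blast
  qed
  have le: "\<forall>u\<in>U. \<forall>v\<in>V. Inf W \<le> u * v"
  proof (intro ballI)
    fix u v assume "u \<in> U" "v \<in> V"
    then obtain Q R where Q: "Q \<in> irrN" "u = (\<Sum>z\<in>PiE N X. \<phi> z * Q {z} (PiE N X))"
      and R: "R \<in> irrK" "v = (\<Sum>z\<in>PiE K X. f z * R {z} (PiE K X))" unfolding U_def V_def by auto
    obtain q where q: "(\<forall>n. \<forall>z\<in>PiE N X. q n z > 0)" "(\<forall>n. sum (q n) (PiE N X) = 1)"
      "(\<forall>A B. A \<subseteq> PiE N X \<longrightarrow> B \<subseteq> PiE N X \<longrightarrow> B \<noteq> {} \<longrightarrow> (\<lambda>n. ratio (q n) A B) \<longlonglongrightarrow> Q A B)"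
      using approx[OF finN(1) finN(2) fcpN[rule_format, OF Q(1)]] by blast
    obtain r where r: "(\<forall>n. \<forall>z\<in>PiE K X. r n z > 0)" "(\<forall>n. sum (r n) (PiE K X) = 1)"
      "(\<forall>A B. A \<subseteq> PiE K X \<longrightarrow> B \<subseteq> PiE K X \<longrightarrow> B \<noteq> {} \<longrightarrow> (\<lambda>n. ratio (r n) A B) \<longlonglongrightarrow> R A B)"
      using approx[OF finK(1) finK(2) fcpK[rule_format, OF R(1)]] by blast
    have cp: "comp G par K X M xP Q R q r"
    proof (rule comp.intro[OF cn comp_axioms.intro])
      show "xP \<in> PiE (parK G par K) X" by (rule xP)
      show "Q \<in> irr_ext (nondescK G par K) (sub_pa par (nondescK G par K)) X (\<lambda>s z. M s (restrict z (par s)))"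
        using Q(1) unfolding irrN_def N_def .
      show "R \<in> irr_ext K (sub_pa par K) X (sub_M par M K xP)" using R(1) unfolding irrK_def .
    qed (use q r in \<open>auto simp: N_def\<close>)
    obtain P where P: "P \<in> irr_ext G par X M"
      and E: "\<forall>F f. (\<forall>w\<in>PiE (nondescK G par K) X. F w \<noteq> 0 \<longrightarrow> restrict w (parK G par K) = xP) \<longrightarrow>
         (\<Sum>z\<in>PiE G X. F (restrict z (nondescK G par K)) * f (restrict z K) * P {z} (PiE G X))
         = (\<Sum>w\<in>PiE (nondescK G par K) X. F w * Q {w} (PiE (nondescK G par K) X)) * (\<Sum>u\<in>PiE K X. f u * R {u} (PiE K X))"
      using comp.comp_main[OF cp] by blast
    have "(\<Sum>z\<in>PiE G X. (\<phi> z * f (restrict z K)) * P {z} (PiE G X)) = u * v"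
      unfolding Wsum Q(2) R(2) using E[rule_format, of \<phi> f] Find unfolding N_def PK_def by simp
    moreover have "(\<Sum>z\<in>PiE G X. (\<phi> z * f (restrict z K)) * P {z} (PiE G X)) \<in> W" unfolding W_def using P by auto
    ultimately show "Inf W \<le> u * v" using cInf_lower[OF _ bdW] by metis
  qed
  have fr: "(Inf V \<ge> 0 \<longrightarrow> Inf W = Inf V * Inf U) \<and> (Inf V \<le> 0 \<longrightarrow> Inf W = Inf V * Sup U)"
    by (rule final_real[OF Une Vne Wne bdU bdV bdW Unn ge le])
  show ?thesis unfolding LW loU upU aV using fr .
qed


end
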